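(* For every alcove $A$ let $\zeta_A$ denote the unique point of $Z$ lying in $A$. If $A\xrightarrow{\alpha}B$ is a pair of adjacent alcoves, then $\zeta_B-\zeta_A=\alpha/h$. If moreover $\Phi$ is simply laced (type $A$, $D$ or $E$), then conversely, for alcoves $A,B$ and a root $\alpha$, $\zeta_B-\zeta_A=\alpha/h$ implies $A\xrightarrow{\alpha}B$.
   Context: $\Phi$ is an irreducible root system in $\mathfrak h_{\mathbb R}^*$ with positive roots $\Phi^+$, coroots $\alpha^\vee=2\alpha/(\alpha,\alpha)$, weight lattice $\Lambda$, $\rho$ the sum of fundamental weights, $\theta^\vee$ the highest coroot and $h=(\rho,\theta^\vee)+1$ the Coxeter number. Hyperplanes $H_{\alpha,k}=\{\lambda:(\lambda,\alpha^\vee)=k\}$, $\alpha\in\Phi$, $k\in\mathbb Z$; alcoves are the connected components of the complement of their union. Two alcoves are adjacent if they are distinct and share a common wall; write $A\xrightarrow{\alpha}B$ if the common wall lies in some $H_{\alpha,k}$ and $\alpha$ points from $A$ to $B$ (i.e. $(x,\alpha^\vee)<k$ on $A$ and $>k$ on $B$). $Z=\{\zeta\in\Lambda/h:(\zeta,\alpha^\vee)\notin\mathbb Z\ \forall\alpha\in\Phi\}$; each alcove contains exactly one point of $Z$ (Kostant). *)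

theory Defs
  imports "HOL-Analysis.Analysis"
begin

definition coroot :: "'a::euclidean_space \<Rightarrow> 'a" where
  "coroot \<alpha> = (2 / (\<alpha> \<bullet> \<alpha>)) *\<^sub>R \<alpha>"

definition refl :: "'a::euclidean_space \<Rightarrow> 'a \<Rightarrow> 'a" where
  "refl \<alpha> x = x - (x \<bullet> coroot \<alpha>) *\<^sub>R \<alpha>"

definition root_system :: "'a::euclidean_space set \<Rightarrow> bool" where
  "root_system \<Phi> \<longleftrightarrow> finite \<Phi> \<and> 0 \<notin> \<Phi> \<and> span \<Phi> = UNIV \<and>
     (\<forall>\<alpha>\<in>\<Phi>. \<forall>\<beta>\<in>\<Phi>. refl \<alpha> \<beta> \<in> \<Phi>) \<and>
     (\<forall>\<alpha>\<in>\<Phi>. \<forall>\<beta>\<in>\<Phi>. \<beta> \<bullet> coroot \<alpha> \<in> \<int>) \<and>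
     (\<forall>\<alpha>\<in>\<Phi>. \<forall>c::real. c *\<^sub>R \<alpha> \<in> \<Phi> \<longrightarrow> c = 1 \<or> c = -1)"

definition irreducible_root_system :: "'a::euclidean_space set \<Rightarrow> bool" where
  "irreducible_root_system \<Phi> \<longleftrightarrow> root_system \<Phi> \<and>
     \<not> (\<exists>\<Phi>1 \<Phi>2. \<Phi>1 \<noteq> {} \<and> \<Phi>2 \<noteq> {} \<and> \<Phi>1 \<union> \<Phi>2 = \<Phi> \<and>
          (\<forall>\<alpha>\<in>\<Phi>1. \<forall>\<beta>\<in>\<Phi>2. \<alpha> \<bullet> \<beta> = 0))"

definition simply_laced :: "'a::euclidean_space set \<Rightarrow> bool" where
  "simply_laced \<Phi> \<longleftrightarrow> (\<forall>\<alpha>\<in>\<Phi>. \<forall>\<beta>\<in>\<Phi>. norm \<alpha> = norm \<beta>)"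

definition positive_system :: "'a::euclidean_space set \<Rightarrow> 'a set \<Rightarrow> bool" where
  "positive_system \<Phi> P \<longleftrightarrow> (\<exists>v. (\<forall>\<alpha>\<in>\<Phi>. \<alpha> \<bullet> v \<noteq> 0) \<and> P = {\<alpha>\<in>\<Phi>. \<alpha> \<bullet> v > 0})"

definition simple_roots :: "'a::euclidean_space set \<Rightarrow> 'a set" where
  "simple_roots P = {\<alpha>\<in>P. \<not> (\<exists>\<beta>\<in>P. \<exists>\<gamma>\<in>P. \<alpha> = \<beta> + \<gamma>)}"

definition fund_weight :: "'a::euclidean_space set \<Rightarrow> 'a \<Rightarrow> 'a" where
  "fund_weight P \<alpha> = (THE w. \<forall>\<beta>\<in>simple_roots P. w \<bullet> coroot \<beta> = (if \<beta> = \<alpha> then 1 else 0))"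

definition rho :: "'a::euclidean_space set \<Rightarrow> 'a" where
  "rho P = (\<Sum>\<alpha>\<in>simple_roots P. fund_weight P \<alpha>)"

definition highest_coroot :: "'a::euclidean_space set \<Rightarrow> 'a set \<Rightarrow> 'a" where
  "highest_coroot \<Phi> P = (THE t. t \<in> coroot ` \<Phi> \<and>
     (\<forall>\<beta>\<in>P. \<exists>c::'a \<Rightarrow> nat. t - coroot \<beta> = (\<Sum>\<gamma>\<in>simple_roots P. real (c \<gamma>) *\<^sub>R coroot \<gamma>)))"

definition coxeter_number :: "'a::euclidean_space set \<Rightarrow> 'a set \<Rightarrow> real" where
  "coxeter_number \<Phi> P = rho P \<bullet> highest_coroot \<Phi> P + 1"

definition weight_lattice :: "'a::euclidean_space set \<Rightarrow> 'a set" where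
  "weight_lattice \<Phi> = {l. \<forall>\<alpha>\<in>\<Phi>. l \<bullet> coroot \<alpha> \<in> \<int>}"

definition Zset :: "'a::euclidean_space set \<Rightarrow> 'a set \<Rightarrow> 'a set" where
  "Zset \<Phi> P = {\<zeta>. (\<exists>l\<in>weight_lattice \<Phi>. \<zeta> = (1 / coxeter_number \<Phi> P) *\<^sub>R l) \<and>
                   (\<forall>\<alpha>\<in>\<Phi>. \<zeta> \<bullet> coroot \<alpha> \<notin> \<int>)}"

definition hyp :: "'a::euclidean_space \<Rightarrow> int \<Rightarrow> 'a set" where
  "hyp \<alpha> k = {x. x \<bullet> coroot \<alpha> = of_int k}"

definition alcoves :: "'a::euclidean_space set \<Rightarrow> 'a set set" where
  "alcoves \<Phi> = components (UNIV - \<Union>{hyp \<alpha> k | \<alpha> k. \<alpha> \<in> \<Phi>})"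

definition wall_in :: "'a::euclidean_space set \<Rightarrow> 'a set \<Rightarrow> 'a \<Rightarrow> int \<Rightarrow> 'a set \<Rightarrow> bool" where
  "wall_in \<Phi> A \<alpha> k W \<longleftrightarrow> \<alpha> \<in> \<Phi> \<and> W = closure A \<inter> hyp \<alpha> k \<and> aff_dim W = int DIM('a) - 1"

text \<open>A --alpha--> B: A, B distinct adjacent alcoves with common wall in H_{alpha,k},
  alpha pointing from A to B.\<close>
definition alcove_arrow :: "'a::euclidean_space set \<Rightarrow> 'a set \<Rightarrow> 'a \<Rightarrow> 'a set \<Rightarrow> bool" where
  "alcove_arrow \<Phi> A \<alpha> B \<longleftrightarrow> A \<in> alcoves \<Phi> \<and> B \<in> alcoves \<Phi> \<and> A \<noteq> B \<and> \<alpha> \<in> \<Phi> \<and>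
     (\<exists>k::int. \<exists>W. wall_in \<Phi> A \<alpha> k W \<and> wall_in \<Phi> B \<alpha> k W \<and>
        (\<forall>x\<in>A. x \<bullet> coroot \<alpha> < of_int k) \<and> (\<forall>x\<in>B. x \<bullet> coroot \<alpha> > of_int k))"

definition zeta :: "'a::euclidean_space set \<Rightarrow> 'a set \<Rightarrow> 'a set \<Rightarrow> 'a" where
  "zeta \<Phi> P A = (THE \<zeta>. \<zeta> \<in> Zset \<Phi> P \<and> \<zeta> \<in> A)"

end

theory Submission
  imports Defs
begin


section \<open>Basic facts on reflections and coroots\<close>

lemma coroot_inner: "x \<bullet> coroot \<alpha> = 2 * (x \<bullet> \<alpha>) / (\<alpha> \<bullet> \<alpha>)"
  by (simp add: coroot_def)

lemma coroot_inner_self: "\<alpha> \<noteq> 0 \<Longrightarrow> \<alpha> \<bullet> coroot \<alpha> = 2"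
  by (simp add: coroot_inner)

lemma coroot_inner_self': "\<alpha> \<noteq> 0 \<Longrightarrow> coroot \<alpha> \<bullet> \<alpha> = 2"
  using coroot_inner_self by (simp add: inner_commute)

lemma coroot_neg [simp]: "coroot (- \<alpha>) = - coroot \<alpha>"
  by (simp add: coroot_def)

lemma coroot_eq_0_iff [simp]: "coroot \<alpha> = 0 \<longleftrightarrow> \<alpha> = 0"
  by (simp add: coroot_def)

lemma coroot_coroot: "\<alpha> \<noteq> 0 \<Longrightarrow> coroot (coroot \<alpha>) = \<alpha>"
  by (simp add: coroot_def power2_eq_square field_simps)

lemma coroot_scale: "coroot \<alpha> = (2 / (\<alpha> \<bullet> \<alpha>)) *\<^sub>R \<alpha>"
  by (simp add: coroot_def)

lemma refl_alt: "refl \<alpha> x = x - (x \<bullet> coroot \<alpha>) *\<^sub>R \<alpha>"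
  by (simp add: refl_def)

lemma linear_refl: "linear (refl \<alpha>)"
  by (rule linearI) (simp_all add: refl_def inner_add_left algebra_simps)

lemma refl_self: "\<alpha> \<noteq> 0 \<Longrightarrow> refl \<alpha> \<alpha> = - \<alpha>"
  by (simp add: refl_def coroot_inner_self scaleR_2)

lemma refl_refl [simp]: "\<alpha> \<noteq> 0 \<Longrightarrow> refl \<alpha> (refl \<alpha> x) = x"
  by (simp add: refl_def inner_diff_left coroot_inner_self algebra_simps)

lemma refl_inner: "\<alpha> \<noteq> 0 \<Longrightarrow> refl \<alpha> x \<bullet> refl \<alpha> y = x \<bullet> y"
  by (simp add: refl_def coroot_inner inner_diff_left inner_diff_right field_simps inner_commute)

lemma refl_add: "refl \<alpha> (x + y) = refl \<alpha> x + refl \<alpha> y"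
  by (simp add: refl_def inner_add_left algebra_simps)

lemma refl_scaleR: "refl \<alpha> (c *\<^sub>R x) = c *\<^sub>R refl \<alpha> x"
  by (simp add: refl_def algebra_simps)

lemma refl_diff: "refl \<alpha> (x - y) = refl \<alpha> x - refl \<alpha> y"
  by (simp add: refl_def inner_diff_left algebra_simps)

lemma refl_neg: "refl \<alpha> (- x) = - refl \<alpha> x"
  by (simp add: refl_def algebra_simps)

lemma refl_zero [simp]: "refl \<alpha> 0 = 0"
  by (simp add: refl_def)

lemma coroot_orth:
  assumes "linear \<tau>" "\<And>x y. \<tau> x \<bullet> \<tau> y = x \<bullet> y"
  shows "coroot (\<tau> \<beta>) = \<tau> (coroot \<beta>)"
  using assms by (simp add: coroot_def linear_scale)

lemma coroot_refl: "\<alpha> \<noteq> 0 \<Longrightarrow> coroot (refl \<alpha> \<beta>) = refl \<alpha> (coroot \<beta>)"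
  by (rule coroot_orth[OF linear_refl refl_inner])

lemma refl_inner_coroot: "\<alpha> \<noteq> 0 \<Longrightarrow> refl \<alpha> x \<bullet> coroot (refl \<alpha> y) = x \<bullet> coroot y"
  by (simp add: coroot_refl refl_inner)

lemma refl_fix: "x \<bullet> \<alpha> = 0 \<Longrightarrow> refl \<alpha> x = x"
  by (simp add: refl_def coroot_inner)

locale rsys =
  fixes \<Phi> :: "'a::euclidean_space set" and P :: "'a set" and v :: 'a
  assumes rs: "root_system \<Phi>" and reg: "\<forall>\<alpha>\<in>\<Phi>. \<alpha> \<bullet> v \<noteq> 0"
    and Pdef: "P = {\<alpha>\<in>\<Phi>. \<alpha> \<bullet> v > 0}"
begin

lemma fin: "finite \<Phi>" using rs by (simp add: root_system_def)
lemma nz: "\<alpha> \<in> \<Phi> \<Longrightarrow> \<alpha> \<noteq> 0" using rs by (auto simp: root_system_def)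
lemma spanP: "span \<Phi> = UNIV" using rs by (simp add: root_system_def)
lemma refl_in: "\<alpha> \<in> \<Phi> \<Longrightarrow> \<beta> \<in> \<Phi> \<Longrightarrow> refl \<alpha> \<beta> \<in> \<Phi>" using rs by (simp add: root_system_def)
lemma integral: "\<alpha> \<in> \<Phi> \<Longrightarrow> \<beta> \<in> \<Phi> \<Longrightarrow> \<beta> \<bullet> coroot \<alpha> \<in> \<int>" using rs by (simp add: root_system_def)
lemma reduced: "\<alpha> \<in> \<Phi> \<Longrightarrow> c *\<^sub>R \<alpha> \<in> \<Phi> \<Longrightarrow> c = 1 \<or> c = -1" using rs by (simp add: root_system_def)

lemma neg_in: "\<alpha> \<in> \<Phi> \<Longrightarrow> - \<alpha> \<in> \<Phi>"
  using refl_in[of \<alpha> \<alpha>] refl_self[of \<alpha>] nz[of \<alpha>] by simp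

lemma finP: "finite P" using fin Pdef by auto
lemma P_sub: "P \<subseteq> \<Phi>" using Pdef by auto
lemma P_pos: "\<alpha> \<in> P \<Longrightarrow> \<alpha> \<bullet> v > 0" using Pdef by auto

lemma Phi_cases: "\<alpha> \<in> \<Phi> \<Longrightarrow> \<alpha> \<in> P \<or> - \<alpha> \<in> P"
  using reg neg_in Pdef by (auto simp: inner_minus_left)

lemma neg_notin_P: "\<alpha> \<in> P \<Longrightarrow> - \<alpha> \<notin> P"
  using Pdef by (auto simp: inner_minus_left)

lemma int_inner: "\<alpha> \<in> \<Phi> \<Longrightarrow> \<beta> \<in> \<Phi> \<Longrightarrow> \<exists>n::int. \<beta> \<bullet> coroot \<alpha> = of_int n"
  using integral by (meson Ints_cases)

end



lemma refl_inner_swap: "\<alpha> \<noteq> 0 \<Longrightarrow> refl \<alpha> x \<bullet> y = x \<bullet> refl \<alpha> y"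
  by (metis refl_inner refl_refl)

lemma sum_ind_scale_k:
  fixes f :: "'b \<Rightarrow> 'c::real_vector"
  assumes "finite S" "a \<in> S"
  shows "(\<Sum>\<gamma>\<in>S. real (if \<gamma> = a then k else 0) *\<^sub>R f \<gamma>) = real k *\<^sub>R f a"
proof -
  have "(\<Sum>\<gamma>\<in>S. real (if \<gamma> = a then k else 0) *\<^sub>R f \<gamma>) = (\<Sum>\<gamma>\<in>S. if \<gamma> = a then real k *\<^sub>R f \<gamma> else 0)"
    by (rule sum.cong) simp_all
  then show ?thesis using assms by simp
qed

lemma sum_ind_scale_k':
  fixes f :: "'b \<Rightarrow> 'c::real_vector"
  assumes "finite S" "a \<in> S"
  shows "(\<Sum>\<gamma>\<in>S. (if \<gamma> = a then k else 0) *\<^sub>R f \<gamma>) = k *\<^sub>R f a"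
proof -
  have "(\<Sum>\<gamma>\<in>S. (if \<gamma> = a then k else 0) *\<^sub>R f \<gamma>) = (\<Sum>\<gamma>\<in>S. if \<gamma> = a then k *\<^sub>R f \<gamma> else 0)"
    by (rule sum.cong) simp_all
  then show ?thesis using assms by simp
qed

lemma sum_ind_scale:
  fixes f :: "'b \<Rightarrow> 'c::real_vector"
  assumes "finite S" "a \<in> S"
  shows "(\<Sum>\<gamma>\<in>S. real (if \<gamma> = a then 1 else 0) *\<^sub>R f \<gamma>) = f a"
  using sum_ind_scale_k[OF assms, of 1 f] by simp

lemma sum_add_ind:
  fixes f :: "'b \<Rightarrow> 'c::real_vector"
  assumes "finite S" "a \<in> S"
  shows "(\<Sum>\<gamma>\<in>S. real (c \<gamma> + (if \<gamma> = a then k else 0)) *\<^sub>R f \<gamma>) = (\<Sum>\<gamma>\<in>S. real (c \<gamma>) *\<^sub>R f \<gamma>) + real k *\<^sub>R f a"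
proof -
  have "(\<Sum>\<gamma>\<in>S. real (c \<gamma> + (if \<gamma> = a then k else 0)) *\<^sub>R f \<gamma>) =
        (\<Sum>\<gamma>\<in>S. real (c \<gamma>) *\<^sub>R f \<gamma> + real (if \<gamma> = a then k else 0) *\<^sub>R f \<gamma>)"
    by (rule sum.cong) (simp_all only: of_nat_add scaleR_add_left)
  also have "\<dots> = (\<Sum>\<gamma>\<in>S. real (c \<gamma>) *\<^sub>R f \<gamma>) + real k *\<^sub>R f a"
    by (simp only: sum.distrib sum_ind_scale_k[OF assms])
  finally show ?thesis .
qed

context rsys begin

lemma strict_cs:
  assumes "\<alpha> \<in> \<Phi>" "\<beta> \<in> \<Phi>" "\<beta> \<noteq> \<alpha>" "\<beta> \<noteq> - \<alpha>"
  shows "(\<alpha> \<bullet> \<beta>)^2 < (\<alpha> \<bullet> \<alpha>) * (\<beta> \<bullet> \<beta>)"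
proof -
  have le: "\<bar>\<alpha> \<bullet> \<beta>\<bar> \<le> norm \<alpha> * norm \<beta>" by (rule Cauchy_Schwarz_ineq2)
  have na: "norm \<alpha> > 0" using nz[OF assms(1)] by simp
  have ne: "\<bar>\<alpha> \<bullet> \<beta>\<bar> \<noteq> norm \<alpha> * norm \<beta>"
  proof
    assume "\<bar>\<alpha> \<bullet> \<beta>\<bar> = norm \<alpha> * norm \<beta>"
    then have "norm \<alpha> *\<^sub>R \<beta> = norm \<beta> *\<^sub>R \<alpha> \<or> norm \<alpha> *\<^sub>R \<beta> = - norm \<beta> *\<^sub>R \<alpha>"
      by (simp add: norm_cauchy_schwarz_abs_eq)
    then obtain c where c: "\<beta> = c *\<^sub>R \<alpha>"
    proof
      assume eq: "norm \<alpha> *\<^sub>R \<beta> = norm \<beta> *\<^sub>R \<alpha>"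
      have "\<beta> = (1 / norm \<alpha>) *\<^sub>R (norm \<alpha> *\<^sub>R \<beta>)" using na by simp
      also have "\<dots> = (norm \<beta> / norm \<alpha>) *\<^sub>R \<alpha>" using eq by simp
      finally show ?thesis by (rule that)
    next
      assume eq: "norm \<alpha> *\<^sub>R \<beta> = - norm \<beta> *\<^sub>R \<alpha>"
      have "\<beta> = (1 / norm \<alpha>) *\<^sub>R (norm \<alpha> *\<^sub>R \<beta>)" using na by simp
      also have "\<dots> = (- norm \<beta> / norm \<alpha>) *\<^sub>R \<alpha>" using eq by simp
      finally show ?thesis by (rule that)
    qed
    then have "c = 1 \<or> c = -1" using reduced assms by auto
    then show False using c assms by auto
  qed
  have "\<bar>\<alpha> \<bullet> \<beta>\<bar> < norm \<alpha> * norm \<beta>" using le ne by simp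
  then have "\<bar>\<alpha> \<bullet> \<beta>\<bar>^2 < (norm \<alpha> * norm \<beta>)^2"
    by (intro power_strict_mono) auto
  then show ?thesis by (simp add: power_mult_distrib power2_norm_eq_inner)
qed

lemma rank2_diff:
  assumes "\<alpha> \<in> \<Phi>" "\<beta> \<in> \<Phi>" "\<beta> \<noteq> \<alpha>" "\<beta> \<noteq> - \<alpha>" "\<alpha> \<bullet> \<beta> > 0"
  shows "\<alpha> - \<beta> \<in> \<Phi>"
proof -
  obtain n where n: "\<alpha> \<bullet> coroot \<beta> = of_int n" using int_inner assms by blast
  obtain m where m: "\<beta> \<bullet> coroot \<alpha> = of_int m" using int_inner assms by blast
  have aa: "\<alpha> \<bullet> \<alpha> > 0" "\<beta> \<bullet> \<beta> > 0" using nz assms by auto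
  have "real_of_int n > 0" unfolding n[symmetric] using aa assms(5) by (simp add: coroot_inner)
  then have npos: "n > 0" by simp
  have "real_of_int m > 0" unfolding m[symmetric] using aa assms(5) by (simp add: coroot_inner inner_commute)
  then have mpos: "m > 0" by simp
  have "real_of_int (n * m) = (\<alpha> \<bullet> coroot \<beta>) * (\<beta> \<bullet> coroot \<alpha>)" using n m by simp
  also have "\<dots> = 4 * (\<alpha> \<bullet> \<beta>)^2 / ((\<alpha> \<bullet> \<alpha>) * (\<beta> \<bullet> \<beta>))"
    using aa by (simp add: coroot_inner inner_commute power2_eq_square field_simps)
  also have "\<dots> < 4" using strict_cs[OF assms(1-4)] aa by (simp add: field_simps)
  finally have "real_of_int (n * m) < of_int 4" by simp
  then have "n * m < 4" by (simp only: of_int_less_iff)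
  then have "n = 1 \<or> m = 1"
  proof (rule contrapos_pp)
    assume "\<not> (n = 1 \<or> m = 1)"
    then have "n \<ge> 2" "m \<ge> 2" using npos mpos by auto
    then have "2 * 2 \<le> n * m" by (intro mult_mono) auto
    then show "\<not> n * m < 4" by simp
  qed
  then show ?thesis
  proof
    assume "n = 1"
    then have "refl \<beta> \<alpha> = \<alpha> - \<beta>" using n by (simp add: refl_def)
    then show ?thesis using refl_in assms by metis
  next
    assume "m = 1"
    then have "refl \<alpha> \<beta> = \<beta> - \<alpha>" using m by (simp add: refl_def)
    then have "\<beta> - \<alpha> \<in> \<Phi>" using refl_in assms by metis
    from neg_in[OF this] show ?thesis by simp
  qed
qed

lemma rank2_sum:
  assumes "\<alpha> \<in> \<Phi>" "\<beta> \<in> \<Phi>" "\<beta> \<noteq> - \<alpha>" "\<alpha> \<bullet> \<beta> < 0"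
  shows "\<alpha> + \<beta> \<in> \<Phi>"
proof -
  have "\<alpha> \<bullet> \<alpha> > 0" using nz assms by auto
  then have "\<beta> \<noteq> \<alpha>" using assms(4) by (metis inner_ge_zero not_less)
  then have "- \<beta> \<noteq> - \<alpha>" by simp
  moreover have "- \<beta> \<noteq> \<alpha>" using assms(3) by auto
  ultimately have "\<alpha> - (- \<beta>) \<in> \<Phi>"
    using rank2_diff[of \<alpha> "-\<beta>"] assms neg_in by (simp add: inner_minus_right)
  then show ?thesis by simp
qed

definition "Delta = simple_roots P"

lemma Delta_sub: "Delta \<subseteq> P" by (auto simp: Delta_def simple_roots_def)
lemma Delta_fin: "finite Delta" using Delta_sub finP finite_subset by blast
lemma Delta_pos: "\<gamma> \<in> Delta \<Longrightarrow> \<gamma> \<bullet> v > 0" using Delta_sub P_pos by auto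
lemma Delta_Phi: "\<gamma> \<in> Delta \<Longrightarrow> \<gamma> \<in> \<Phi>" using Delta_sub P_sub by auto

definition "mu x = card {\<beta>\<in>P. \<beta> \<bullet> v < x \<bullet> v}"

lemma mu_less: assumes "\<beta> \<in> P" "\<beta> \<bullet> v < \<alpha> \<bullet> v" shows "mu \<beta> < mu \<alpha>"
  unfolding mu_def
  by (rule psubset_card_mono) (use finP assms in auto)

lemma P_nncomb: "\<alpha> \<in> P \<Longrightarrow> \<exists>c::'a\<Rightarrow>nat. \<alpha> = (\<Sum>\<gamma>\<in>Delta. real (c \<gamma>) *\<^sub>R \<gamma>)"
proof (induction "mu \<alpha>" arbitrary: \<alpha> rule: less_induct)
  case less
  show ?case
  proof (cases "\<alpha> \<in> Delta")
    case True
    show ?thesis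
      by (rule exI[of _ "\<lambda>\<gamma>. if \<gamma> = \<alpha> then 1 else 0"])
         (simp add: sum_ind_scale Delta_fin True)
  next
    case False
    then obtain \<beta> \<gamma> where bg: "\<beta> \<in> P" "\<gamma> \<in> P" "\<alpha> = \<beta> + \<gamma>"
      using less.prems by (auto simp: Delta_def simple_roots_def)
    have "\<beta> \<bullet> v < \<alpha> \<bullet> v" "\<gamma> \<bullet> v < \<alpha> \<bullet> v" using bg P_pos by (auto simp: inner_add_left)
    then have "mu \<beta> < mu \<alpha>" "mu \<gamma> < mu \<alpha>" using mu_less bg by auto
    then obtain cb cg where "\<beta> = (\<Sum>\<gamma>\<in>Delta. real (cb \<gamma>) *\<^sub>R \<gamma>)" "\<gamma> = (\<Sum>\<gamma>\<in>Delta. real (cg \<gamma>) *\<^sub>R \<gamma>)"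
      using less.hyps bg by blast
    then show ?thesis
      by (intro exI[of _ "\<lambda>x. cb x + cg x"]) (simp add: bg scaleR_add_left sum.distrib)
  qed
qed

lemma Delta_nonpos:
  assumes "\<gamma> \<in> Delta" "\<delta> \<in> Delta" "\<gamma> \<noteq> \<delta>"
  shows "\<gamma> \<bullet> \<delta> \<le> 0"
proof (rule ccontr)
  assume "\<not> ?thesis"
  then have pos: "\<gamma> \<bullet> \<delta> > 0" by simp
  have gP: "\<gamma> \<in> P" "\<delta> \<in> P" using assms Delta_sub by auto
  have "\<delta> \<noteq> - \<gamma>" using gP neg_notin_P by auto
  then have d: "\<gamma> - \<delta> \<in> \<Phi>" using rank2_diff[of \<gamma> \<delta>] assms pos Delta_Phi by auto
  show False
  proof (cases "\<gamma> - \<delta> \<in> P")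
    case True
    have nd: "\<forall>\<beta>\<in>P. \<forall>\<gamma>'\<in>P. \<gamma> \<noteq> \<beta> + \<gamma>'" using assms(1) by (auto simp: Delta_def simple_roots_def)
    then have "\<gamma> \<noteq> \<delta> + (\<gamma> - \<delta>)" using gP True by blast
    then show False by simp
  next
    case False
    then have "\<delta> - \<gamma> \<in> P" using Phi_cases[OF d] by simp
    have nd: "\<forall>\<beta>\<in>P. \<forall>\<gamma>'\<in>P. \<delta> \<noteq> \<beta> + \<gamma>'" using assms(2) by (auto simp: Delta_def simple_roots_def)
    then have "\<delta> \<noteq> \<gamma> + (\<delta> - \<gamma>)" using gP \<open>\<delta> - \<gamma> \<in> P\<close> by blast
    then show False by simp
  qed
qed

lemma Delta_indep: "independent Delta"
proof
  assume "dependent Delta"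
  then obtain u where u: "\<exists>w\<in>Delta. u w \<noteq> 0" "(\<Sum>w\<in>Delta. u w *\<^sub>R w) = 0"
    using dependent_finite[OF Delta_fin] by auto
  define Dp where "Dp = {\<gamma>\<in>Delta. u \<gamma> > 0}"
  define Dn where "Dn = {\<gamma>\<in>Delta. u \<gamma> < 0}"
  define Dz where "Dz = {\<gamma>\<in>Delta. u \<gamma> = 0}"
  have fins: "finite Dp" "finite Dn" "finite Dz" using Delta_fin by (auto simp: Dp_def Dn_def Dz_def)
  have split: "Delta = Dp \<union> (Dn \<union> Dz)" by (auto simp: Dp_def Dn_def Dz_def)
  have "(\<Sum>w\<in>Delta. u w *\<^sub>R w) = (\<Sum>w\<in>Dp. u w *\<^sub>R w) + ((\<Sum>w\<in>Dn. u w *\<^sub>R w) + (\<Sum>w\<in>Dz. u w *\<^sub>R w))"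
    unfolding split
    by (subst sum.union_disjoint, use fins in \<open>auto simp: Dp_def Dn_def Dz_def\<close>)
       (subst sum.union_disjoint, use fins in \<open>auto simp: Dp_def Dn_def Dz_def\<close>)
  moreover have "(\<Sum>w\<in>Dz. u w *\<^sub>R w) = 0" by (simp add: Dz_def)
  ultimately have eq: "(\<Sum>w\<in>Dp. u w *\<^sub>R w) = (\<Sum>w\<in>Dn. (- u w) *\<^sub>R w)"
    using u(2) by (simp add: sum_negf eq_neg_iff_add_eq_0)
  define x where "x = (\<Sum>w\<in>Dp. u w *\<^sub>R w)"
  have "x \<bullet> x = (\<Sum>w\<in>Dp. u w *\<^sub>R w) \<bullet> (\<Sum>w\<in>Dn. (- u w) *\<^sub>R w)"
    using eq by (simp add: x_def)
  also have "\<dots> = (\<Sum>a\<in>Dp. \<Sum>b\<in>Dn. (u a * (- u b)) * (a \<bullet> b))"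
    by (subst inner_sum_left) (simp add: inner_sum_right sum_distrib_left mult_ac)
  also have "\<dots> \<le> 0"
  proof (intro sum_nonpos)
    fix a b assume ab: "a \<in> Dp" "b \<in> Dn"
    then have "a \<noteq> b" "a \<in> Delta" "b \<in> Delta" "u a > 0" "- u b > 0" by (auto simp: Dp_def Dn_def)
    moreover have "u a * (- u b) > 0" using calculation(4,5) by (rule mult_pos_pos)
    ultimately show "u a * (- u b) * (a \<bullet> b) \<le> 0"
      using Delta_nonpos[of a b] by (intro mult_nonneg_nonpos) auto
  qed
  finally have x0: "x = 0" by (metis inner_eq_zero_iff order_antisym inner_ge_zero)
  have "Dp = {}"
  proof (rule ccontr)
    assume "Dp \<noteq> {}"
    then have "(\<Sum>w\<in>Dp. u w * (w \<bullet> v)) > 0"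
      using fins by (intro sum_pos) (auto simp: Dp_def Delta_pos)
    moreover have "(\<Sum>w\<in>Dp. u w * (w \<bullet> v)) = x \<bullet> v" by (simp add: x_def inner_sum_left)
    ultimately show False using x0 by simp
  qed
  moreover have "Dn = {}"
  proof (rule ccontr)
    assume "Dn \<noteq> {}"
    then have "(\<Sum>w\<in>Dn. (- u w) * (w \<bullet> v)) > 0"
      using fins by (intro sum_pos) (auto simp: Dn_def intro!: mult_neg_pos Delta_pos)
    moreover have "(\<Sum>w\<in>Dn. (- u w) * (w \<bullet> v)) = x \<bullet> v" by (simp add: eq x_def inner_sum_left)
    ultimately show False using x0 by simp
  qed
  moreover obtain w where w: "w \<in> Delta" "u w \<noteq> 0" using u(1) by blast
  moreover have "u w > 0 \<or> u w < 0" using w by linarith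
  ultimately show False by (auto simp: Dp_def Dn_def)
qed

lemma P_span: "\<alpha> \<in> P \<Longrightarrow> \<alpha> \<in> span Delta"
  using P_nncomb by (metis (no_types, lifting) span_base span_scale span_sum)

lemma Phi_span: "\<alpha> \<in> \<Phi> \<Longrightarrow> \<alpha> \<in> span Delta"
  using Phi_cases P_span span_neg by fastforce

lemma Delta_span: "span Delta = UNIV"
proof -
  have "\<Phi> \<subseteq> span Delta" using Phi_span by auto
  then have "span \<Phi> \<subseteq> span Delta" by (simp add: span_minimal)
  then show ?thesis using spanP by auto
qed

lemma Delta_card: "card Delta = DIM('a)"
  using basis_card_eq_dim[of Delta UNIV] Delta_indep Delta_span by (simp add: dim_UNIV)

lemma indep_coeffs:
  assumes "independent S" "finite S" "(\<Sum>\<gamma>\<in>S. a \<gamma> *\<^sub>R \<gamma>) = (\<Sum>\<gamma>\<in>S. b \<gamma> *\<^sub>R \<gamma>)" "\<gamma> \<in> S"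
  shows "a \<gamma> = b \<gamma>"
proof (rule ccontr)
  assume ne: "a \<gamma> \<noteq> b \<gamma>"
  have "(\<Sum>w\<in>S. (a w - b w) *\<^sub>R w) = 0" using assms(3)
    by (simp add: scaleR_diff_left sum_subtractf)
  then have "dependent S" unfolding dependent_finite[OF assms(2)]
    using ne assms(4) by (intro exI[of _ "\<lambda>w. a w - b w"]) auto
  then show False using assms(1) by simp
qed

lemma Delta_coeffs:
  "(\<Sum>\<gamma>\<in>Delta. a \<gamma> *\<^sub>R \<gamma>) = (\<Sum>\<gamma>\<in>Delta. b \<gamma> *\<^sub>R \<gamma>) \<Longrightarrow> \<gamma> \<in> Delta \<Longrightarrow> a \<gamma> = b \<gamma>"
  using indep_coeffs[OF Delta_indep Delta_fin] by blast

lemma pos_coeff_P: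
  assumes "\<alpha> \<in> \<Phi>" "\<alpha> = (\<Sum>\<gamma>\<in>Delta. a \<gamma> *\<^sub>R \<gamma>)" "\<gamma>0 \<in> Delta" "a \<gamma>0 > 0"
  shows "\<alpha> \<in> P"
proof (rule ccontr)
  assume "\<alpha> \<notin> P"
  then have "- \<alpha> \<in> P" using Phi_cases assms by auto
  then obtain c where c: "- \<alpha> = (\<Sum>\<gamma>\<in>Delta. real (c \<gamma>) *\<^sub>R \<gamma>)" using P_nncomb by blast
  then have "\<alpha> = - (\<Sum>\<gamma>\<in>Delta. real (c \<gamma>) *\<^sub>R \<gamma>)" by (metis minus_minus)
  then have "\<alpha> = (\<Sum>\<gamma>\<in>Delta. (- real (c \<gamma>)) *\<^sub>R \<gamma>)" by (simp add: sum_negf)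
  then have "(\<Sum>\<gamma>\<in>Delta. a \<gamma> *\<^sub>R \<gamma>) = (\<Sum>\<gamma>\<in>Delta. (- real (c \<gamma>)) *\<^sub>R \<gamma>)" using assms(2) by simp
  from Delta_coeffs[OF this assms(3)] have "a \<gamma>0 = - real (c \<gamma>0)" .
  then show False using assms by simp
qed

lemma refl_simple_P:
  assumes "\<alpha>i \<in> Delta" "\<beta> \<in> P" "\<beta> \<noteq> \<alpha>i"
  shows "refl \<alpha>i \<beta> \<in> P"
proof -
  obtain c where c: "\<beta> = (\<Sum>\<gamma>\<in>Delta. real (c \<gamma>) *\<^sub>R \<gamma>)" using P_nncomb assms by blast
  have "\<exists>j\<in>Delta. j \<noteq> \<alpha>i \<and> c j > 0"
  proof (rule ccontr)
    assume "\<not> ?thesis"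
    then have "\<forall>j\<in>Delta. j \<noteq> \<alpha>i \<longrightarrow> c j = 0" by auto
    then have bc: "\<beta> = real (c \<alpha>i) *\<^sub>R \<alpha>i" using c assms(1)
      by (simp add: sum.remove[OF Delta_fin assms(1)])
    moreover have "\<beta> \<in> \<Phi>" using assms P_sub by auto
    ultimately have "real (c \<alpha>i) = 1 \<or> real (c \<alpha>i) = -1" using reduced Delta_Phi assms by metis
    then have "real (c \<alpha>i) = 1" by auto
    then show False using bc assms by simp
  qed
  then obtain j where j: "j \<in> Delta" "j \<noteq> \<alpha>i" "c j > 0" by blast
  define n where "n = \<beta> \<bullet> coroot \<alpha>i"
  have eqr: "refl \<alpha>i \<beta> = (\<Sum>\<gamma>\<in>Delta. (real (c \<gamma>) - (if \<gamma> = \<alpha>i then n else 0)) *\<^sub>R \<gamma>)"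
    using assms(1) Delta_fin
    by (simp only: refl_def n_def[symmetric] scaleR_diff_left sum_subtractf sum_ind_scale_k'[OF Delta_fin assms(1)] c[symmetric])
  have inr: "refl \<alpha>i \<beta> \<in> \<Phi>" using refl_in Delta_Phi assms P_sub by auto
  show ?thesis by (rule pos_coeff_P[OF inr eqr j(1)]) (use j in simp)
qed

lemma exists_simple_pos:
  assumes "\<beta> \<in> P" shows "\<exists>\<alpha>i\<in>Delta. \<beta> \<bullet> \<alpha>i > 0"
proof (rule ccontr)
  assume "\<not> ?thesis"
  then have le: "\<forall>\<alpha>i\<in>Delta. \<beta> \<bullet> \<alpha>i \<le> 0" by auto
  obtain c where c: "\<beta> = (\<Sum>\<gamma>\<in>Delta. real (c \<gamma>) *\<^sub>R \<gamma>)" using P_nncomb assms by blast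
  have "\<beta> \<bullet> \<beta> = (\<Sum>\<gamma>\<in>Delta. real (c \<gamma>) * (\<beta> \<bullet> \<gamma>))"
    by (subst (2) c) (simp add: inner_sum_right)
  also have "\<dots> \<le> 0" using le by (intro sum_nonpos) (simp add: mult_nonneg_nonpos)
  finally have "\<beta> \<bullet> \<beta> = 0" using inner_ge_zero[of \<beta>] by linarith
  then show False using nz assms P_sub by auto
qed

lemma coroot_P_nncomb:
  "\<beta> \<in> P \<Longrightarrow> \<exists>c::'a\<Rightarrow>nat. coroot \<beta> = (\<Sum>\<gamma>\<in>Delta. real (c \<gamma>) *\<^sub>R coroot \<gamma>)"
proof (induction "mu \<beta>" arbitrary: \<beta> rule: less_induct)
  case less
  show ?case
  proof (cases "\<beta> \<in> Delta")
    case True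
    show ?thesis
      by (rule exI[of _ "\<lambda>\<gamma>. if \<gamma> = \<beta> then 1 else 0"])
         (simp add: sum_ind_scale Delta_fin True)
  next
    case False
    obtain \<alpha>i where ai: "\<alpha>i \<in> Delta" "\<beta> \<bullet> \<alpha>i > 0" using exists_simple_pos less.prems by blast
    have ne: "\<beta> \<noteq> \<alpha>i" using False ai by auto
    have ainz: "\<alpha>i \<noteq> 0" using nz Delta_Phi ai by auto
    have bPhi: "\<beta> \<in> \<Phi>" using less.prems P_sub by auto
    define \<beta>' where "\<beta>' = refl \<alpha>i \<beta>"
    have b'P: "\<beta>' \<in> P" using refl_simple_P ai less.prems ne by (simp add: \<beta>'_def)
    have "\<beta>' \<bullet> v = \<beta> \<bullet> v - (\<beta> \<bullet> coroot \<alpha>i) * (\<alpha>i \<bullet> v)" by (simp add: \<beta>'_def refl_def inner_diff_left)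
    moreover have "\<beta> \<bullet> coroot \<alpha>i > 0" using ai ainz by (simp add: coroot_inner)
    moreover have "\<alpha>i \<bullet> v > 0" using P_pos Delta_sub ai by auto
    ultimately have "\<beta>' \<bullet> v < \<beta> \<bullet> v" by simp
    then have "mu \<beta>' < mu \<beta>" using mu_less b'P by auto
    then obtain c' where c': "coroot \<beta>' = (\<Sum>\<gamma>\<in>Delta. real (c' \<gamma>) *\<^sub>R coroot \<gamma>)" using less.hyps b'P by blast
    have bb: "\<beta> = refl \<alpha>i \<beta>'" using ainz by (simp add: \<beta>'_def)
    obtain k where k: "\<alpha>i \<bullet> coroot \<beta>' = of_int k" using int_inner[of \<beta>' \<alpha>i] b'P P_sub Delta_Phi ai by auto
    have "\<beta>' \<bullet> \<alpha>i = - (\<beta> \<bullet> \<alpha>i)" using ainz by (simp add: \<beta>'_def refl_inner_swap refl_self)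
    moreover have "\<beta>' \<noteq> 0" using b'P P_sub nz by auto
    ultimately have "\<alpha>i \<bullet> coroot \<beta>' < 0" using ai by (simp add: coroot_inner inner_commute divide_neg_pos)
    then have kneg: "k < 0" using k by simp
    have "coroot \<beta> = refl \<alpha>i (coroot \<beta>')" using bb coroot_refl ainz by metis
    also have "\<dots> = coroot \<beta>' - (coroot \<beta>' \<bullet> coroot \<alpha>i) *\<^sub>R \<alpha>i" by (simp add: refl_def)
    also have "(coroot \<beta>' \<bullet> coroot \<alpha>i) *\<^sub>R \<alpha>i = (\<alpha>i \<bullet> coroot \<beta>') *\<^sub>R coroot \<alpha>i"
      using ainz by (simp add: coroot_def inner_commute field_simps)
    finally have "coroot \<beta> = coroot \<beta>' + real (nat (- k)) *\<^sub>R coroot \<alpha>i" using k kneg by simp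
    then show ?thesis using c' ai
      by (intro exI[of _ "\<lambda>\<gamma>. c' \<gamma> + (if \<gamma> = \<alpha>i then nat (-k) else 0)"])
         (simp only: sum_add_ind[OF Delta_fin ai(1)])
  qed
qed

end



lemma lin_inj_surj: "linear (f::'a::euclidean_space \<Rightarrow> 'a) \<Longrightarrow> inj f \<Longrightarrow> surj f"
  using linear_injective_imp_surjective by blast

lemma refl_coroot_eq: "\<alpha> \<noteq> 0 \<Longrightarrow> refl (coroot \<alpha>) = refl \<alpha>"
  by (rule ext) (simp add: refl_def coroot_coroot coroot_def inner_commute field_simps)

context rsys begin

lemma coroot_inj: "\<alpha> \<in> \<Phi> \<Longrightarrow> \<beta> \<in> \<Phi> \<Longrightarrow> coroot \<alpha> = coroot \<beta> \<Longrightarrow> \<alpha> = \<beta>"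
  by (metis coroot_coroot nz)

lemma coroot_v: "\<beta> \<in> \<Phi> \<Longrightarrow> coroot \<beta> \<bullet> v = (2 / (\<beta> \<bullet> \<beta>)) * (\<beta> \<bullet> v)"
  by (simp add: coroot_def)

lemma coroot_v_pos: "\<beta> \<in> P \<Longrightarrow> coroot \<beta> \<bullet> v > 0"
  using coroot_v P_sub P_pos nz by (simp add: coroot_def) (metis divide_pos_pos inner_gt_zero_iff mult_pos_pos zero_less_numeral subsetD)

lemma coroot_v_neg: "\<beta> \<in> \<Phi> \<Longrightarrow> \<beta> \<notin> P \<Longrightarrow> coroot \<beta> \<bullet> v < 0"
proof -
  assume a: "\<beta> \<in> \<Phi>" "\<beta> \<notin> P"
  then have "- \<beta> \<in> P" using Phi_cases by auto
  then have "coroot (- \<beta>) \<bullet> v > 0" by (rule coroot_v_pos)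
  then show ?thesis by simp
qed

lemma rs_coroot: "root_system (coroot ` \<Phi>)"
  unfolding root_system_def
proof (intro conjI ballI allI impI)
  show "finite (coroot ` \<Phi>)" using fin by simp
  show "0 \<notin> coroot ` \<Phi>" using nz by auto
  have "\<Phi> \<subseteq> span (coroot ` \<Phi>)"
  proof
    fix \<alpha> assume a: "\<alpha> \<in> \<Phi>"
    have "\<alpha> = ((\<alpha> \<bullet> \<alpha>) / 2) *\<^sub>R coroot \<alpha>" using nz[OF a] by (simp add: coroot_def)
    then show "\<alpha> \<in> span (coroot ` \<Phi>)" using a by (metis imageI span_base span_scale)
  qed
  then have "span \<Phi> \<subseteq> span (coroot ` \<Phi>)" by (simp add: span_minimal)
  then show "span (coroot ` \<Phi>) = UNIV" using spanP by auto
next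
  fix a b assume "a \<in> coroot ` \<Phi>" "b \<in> coroot ` \<Phi>"
  then obtain \<alpha> \<beta> where ab: "\<alpha> \<in> \<Phi>" "\<beta> \<in> \<Phi>" "a = coroot \<alpha>" "b = coroot \<beta>" by auto
  have "refl a b = coroot (refl \<alpha> \<beta>)" using ab nz by (simp add: refl_coroot_eq coroot_refl)
  then show "refl a b \<in> coroot ` \<Phi>" using refl_in ab by auto
  have "b \<bullet> coroot a = \<alpha> \<bullet> coroot \<beta>" using ab nz by (simp add: coroot_coroot inner_commute)
  then show "b \<bullet> coroot a \<in> \<int>" using integral ab by simp
next
  fix a c assume a: "a \<in> coroot ` \<Phi>" and ca: "c *\<^sub>R a \<in> coroot ` \<Phi>"
  then obtain \<alpha> \<beta> where ab: "\<alpha> \<in> \<Phi>" "\<beta> \<in> \<Phi>" "a = coroot \<alpha>" "c *\<^sub>R a = coroot \<beta>" by auto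
  have bnz: "\<beta> \<bullet> \<beta> \<noteq> 0" "\<alpha> \<bullet> \<alpha> \<noteq> 0" using nz ab by auto
  define d where "d = (\<beta> \<bullet> \<beta>) / 2 * (c * (2 / (\<alpha> \<bullet> \<alpha>)))"
  have "\<beta> = ((\<beta> \<bullet> \<beta>) / 2) *\<^sub>R coroot \<beta>" using bnz by (simp add: coroot_def)
  also have "coroot \<beta> = c *\<^sub>R ((2 / (\<alpha> \<bullet> \<alpha>)) *\<^sub>R \<alpha>)" using ab by (simp add: coroot_def)
  finally have bd: "\<beta> = d *\<^sub>R \<alpha>" by (simp only: scaleR_scaleR d_def)
  then have "d = 1 \<or> d = -1" using reduced ab by metis
  then have "\<beta> = \<alpha> \<or> \<beta> = - \<alpha>" using bd by auto
  then have "coroot \<beta> = a \<or> coroot \<beta> = - a" using ab by auto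
  then have "(c - 1) *\<^sub>R a = 0 \<or> (c + 1) *\<^sub>R a = 0" using ab by (auto simp: algebra_simps)
  moreover have "a \<noteq> 0" using ab nz by simp
  ultimately show "c = 1 \<or> c = -1" by auto
qed

lemma rsys_coroot: "rsys (coroot ` \<Phi>) (coroot ` P) v"
proof
  show "root_system (coroot ` \<Phi>)" by (rule rs_coroot)
  show "\<forall>\<alpha>\<in>coroot ` \<Phi>. \<alpha> \<bullet> v \<noteq> 0"
    using coroot_v reg nz by auto
  show "coroot ` P = {\<alpha> \<in> coroot ` \<Phi>. 0 < \<alpha> \<bullet> v}"
  proof
    show "coroot ` P \<subseteq> {\<alpha> \<in> coroot ` \<Phi>. 0 < \<alpha> \<bullet> v}" using coroot_v_pos P_sub by auto
    show "{\<alpha> \<in> coroot ` \<Phi>. 0 < \<alpha> \<bullet> v} \<subseteq> coroot ` P"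
      using coroot_v_neg by fastforce
  qed
qed

lemma coroot_in_P_iff: "\<beta> \<in> \<Phi> \<Longrightarrow> coroot \<beta> \<in> coroot ` P \<longleftrightarrow> \<beta> \<in> P"
  using coroot_inj P_sub by auto

lemma Deltav_coeffs:
  assumes "(\<Sum>\<gamma>\<in>Delta. a \<gamma> *\<^sub>R coroot \<gamma>) = (\<Sum>\<gamma>\<in>Delta. b \<gamma> *\<^sub>R coroot \<gamma>)" "\<gamma> \<in> Delta"
  shows "a \<gamma> = b \<gamma>"
proof -
  have eq: "\<And>a. (\<Sum>\<gamma>\<in>Delta. a \<gamma> *\<^sub>R coroot \<gamma>) = (\<Sum>\<gamma>\<in>Delta. (a \<gamma> * (2 / (\<gamma> \<bullet> \<gamma>))) *\<^sub>R \<gamma>)"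
    by (simp add: coroot_def)
  have "(a \<gamma> * (2 / (\<gamma> \<bullet> \<gamma>))) = (b \<gamma> * (2 / (\<gamma> \<bullet> \<gamma>)))"
    using Delta_coeffs[of "\<lambda>\<gamma>. a \<gamma> * (2 / (\<gamma> \<bullet> \<gamma>))" "\<lambda>\<gamma>. b \<gamma> * (2 / (\<gamma> \<bullet> \<gamma>))" \<gamma>] assms eq by metis
  moreover have "\<gamma> \<bullet> \<gamma> \<noteq> 0" using assms(2) Delta_Phi nz by auto
  ultimately show ?thesis by simp
qed

lemma orth_Delta_zero:
  assumes "\<forall>\<beta>\<in>Delta. x \<bullet> \<beta> = 0" shows "x = 0"
proof -
  have "orthogonal x x" using orthogonal_to_span[of x Delta x] Delta_span assms
    by (auto simp: orthogonal_def)
  then show ?thesis by (simp add: orthogonal_def)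
qed

lemma orth_Deltav_zero:
  assumes "\<forall>\<beta>\<in>Delta. x \<bullet> coroot \<beta> = 0" shows "x = 0"
  using assms Delta_Phi nz by (intro orth_Delta_zero) (auto simp: coroot_def)

definition "lev x y \<longleftrightarrow> (\<exists>c::'a\<Rightarrow>nat. y - x = (\<Sum>\<gamma>\<in>Delta. real (c \<gamma>) *\<^sub>R coroot \<gamma>))"

lemma lev_refl: "lev x x"
  unfolding lev_def by (rule exI[of _ "\<lambda>_. 0"]) simp

lemma lev_trans: "lev x y \<Longrightarrow> lev y z \<Longrightarrow> lev x z"
  unfolding lev_def
proof (elim exE)
  fix c d assume "y - x = (\<Sum>\<gamma>\<in>Delta. real (c \<gamma>) *\<^sub>R coroot \<gamma>)" "z - y = (\<Sum>\<gamma>\<in>Delta. real (d \<gamma>) *\<^sub>R coroot \<gamma>)"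
  then have "z - x = (\<Sum>\<gamma>\<in>Delta. real (c \<gamma> + d \<gamma>) *\<^sub>R coroot \<gamma>)"
    by (simp add: scaleR_add_left sum.distrib algebra_simps)
  then show "\<exists>c::'a\<Rightarrow>nat. z - x = (\<Sum>\<gamma>\<in>Delta. real (c \<gamma>) *\<^sub>R coroot \<gamma>)" by (rule exI[of _ "\<lambda>\<gamma>. c \<gamma> + d \<gamma>"])
qed

lemma nn_v: "(\<Sum>\<gamma>\<in>Delta. real (c \<gamma>) *\<^sub>R coroot \<gamma>) \<bullet> v = (\<Sum>\<gamma>\<in>Delta. real (c \<gamma>) * (coroot \<gamma> \<bullet> v))"
  by (simp add: inner_sum_left)

lemma Deltav_v: "\<gamma> \<in> Delta \<Longrightarrow> coroot \<gamma> \<bullet> v > 0"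
  using coroot_v_pos Delta_sub by auto

lemma lev_v: "lev x y \<Longrightarrow> x \<bullet> v \<le> y \<bullet> v"
proof -
  assume "lev x y"
  then obtain c where c: "y - x = (\<Sum>\<gamma>\<in>Delta. real (c \<gamma>) *\<^sub>R coroot \<gamma>)" by (auto simp: lev_def)
  have "(y - x) \<bullet> v \<ge> 0" unfolding c nn_v
    by (intro sum_nonneg) (simp add: Deltav_v less_imp_le)
  then show ?thesis by (simp add: inner_diff_left)
qed

lemma nn_zero:
  assumes "(\<Sum>\<gamma>\<in>Delta. real (c \<gamma>) *\<^sub>R coroot \<gamma>) = 0" "\<gamma> \<in> Delta" shows "c \<gamma> = 0"
  using Deltav_coeffs[of "\<lambda>\<gamma>. real (c \<gamma>)" "\<lambda>_. 0" \<gamma>] assms by simp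

lemma nn_pos_v:
  assumes "\<gamma>0 \<in> Delta" "c \<gamma>0 > 0"
  shows "(\<Sum>\<gamma>\<in>Delta. real (c \<gamma>) *\<^sub>R coroot \<gamma>) \<bullet> v > 0"
  unfolding nn_v using assms Delta_fin
  by (intro sum_pos2[of _ \<gamma>0]) (auto simp: Deltav_v less_imp_le)

lemma lev_strict: "lev x y \<Longrightarrow> x \<noteq> y \<Longrightarrow> x \<bullet> v < y \<bullet> v"
proof -
  assume "lev x y" "x \<noteq> y"
  then obtain c where c: "y - x = (\<Sum>\<gamma>\<in>Delta. real (c \<gamma>) *\<^sub>R coroot \<gamma>)" by (auto simp: lev_def)
  have "\<exists>\<gamma>0\<in>Delta. c \<gamma>0 > 0"
  proof (rule ccontr)
    assume "\<not> ?thesis"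
    then have "\<forall>\<gamma>\<in>Delta. c \<gamma> = 0" by auto
    then have "y - x = 0" unfolding c by simp
    then show False using \<open>x \<noteq> y\<close> by simp
  qed
  then have "(y - x) \<bullet> v > 0" unfolding c using nn_pos_v by blast
  then show ?thesis by (simp add: inner_diff_left)
qed

lemma lev_antisym: "lev x y \<Longrightarrow> lev y x \<Longrightarrow> x = y"
  using lev_v lev_strict by fastforce

lemma lev_P: "\<beta> \<in> P \<Longrightarrow> lev 0 (coroot \<beta>)"
  using coroot_P_nncomb by (auto simp: lev_def)

lemma lev_add_simple: "\<alpha>i \<in> Delta \<Longrightarrow> lev x (x + coroot \<alpha>i)"
  unfolding lev_def
  by (rule exI[of _ "\<lambda>\<gamma>. if \<gamma> = \<alpha>i then 1 else 0"]) (simp add: sum_ind_scale Delta_fin)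

end

locale irsys = rsys +
  assumes irr: "\<not> (\<exists>\<Phi>1 \<Phi>2. \<Phi>1 \<noteq> {} \<and> \<Phi>2 \<noteq> {} \<and> \<Phi>1 \<union> \<Phi>2 = \<Phi> \<and> (\<forall>\<alpha>\<in>\<Phi>1. \<forall>\<beta>\<in>\<Phi>2. \<alpha> \<bullet> \<beta> = 0))"
begin

lemma span_orth:
  assumes "x \<in> span S" "\<forall>a\<in>S. a \<bullet> y = 0" shows "x \<bullet> y = 0"
  using orthogonal_to_span[of x S y] assms by (auto simp: orthogonal_def inner_commute)

lemma Delta_connected:
  assumes D1: "D1 \<subseteq> Delta" "D1 \<noteq> {}" "D1 \<noteq> Delta"
  shows "\<exists>a\<in>D1. \<exists>b\<in>Delta - D1. a \<bullet> b \<noteq> 0"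
proof (rule ccontr)
  assume "\<not> ?thesis"
  then have orth: "\<forall>a\<in>D1. \<forall>b\<in>Delta - D1. a \<bullet> b = 0" by auto
  define D2 where "D2 = Delta - D1"
  have o12: "\<forall>a\<in>D1. \<forall>b\<in>D2. a \<bullet> b = 0" using orth by (auto simp: D2_def)
  have o21: "\<forall>a\<in>D2. \<forall>b\<in>D1. a \<bullet> b = 0"
  proof (intro ballI)
    fix a b assume "a \<in> D2" "b \<in> D1"
    then have "b \<bullet> a = 0" using o12 by auto
    then show "a \<bullet> b = 0" by (simp add: inner_commute)
  qed
  have key: "\<beta> \<in> P \<Longrightarrow> \<beta> \<in> span D1 \<or> \<beta> \<in> span D2" for \<beta>
  proof (induction "mu \<beta>" arbitrary: \<beta> rule: less_induct)
    case less
    show ?case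
    proof (cases "\<beta> \<in> Delta")
      case True
      then show ?thesis by (auto simp: D2_def intro: span_base)
    next
      case False
      obtain \<alpha>i where ai: "\<alpha>i \<in> Delta" "\<beta> \<bullet> \<alpha>i > 0" using exists_simple_pos less.prems by blast
      have ne: "\<beta> \<noteq> \<alpha>i" using False ai by auto
      have ainz: "\<alpha>i \<noteq> 0" using nz Delta_Phi ai by auto
      define \<beta>' where "\<beta>' = refl \<alpha>i \<beta>"
      have b'P: "\<beta>' \<in> P" using refl_simple_P ai less.prems ne by (simp add: \<beta>'_def)
      have "\<beta>' \<bullet> v = \<beta> \<bullet> v - (\<beta> \<bullet> coroot \<alpha>i) * (\<alpha>i \<bullet> v)" by (simp add: \<beta>'_def refl_def inner_diff_left)
      moreover have "\<beta> \<bullet> coroot \<alpha>i > 0" using ai ainz by (simp add: coroot_inner)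
      moreover have "\<alpha>i \<bullet> v > 0" using P_pos Delta_sub ai by auto
      ultimately have "\<beta>' \<bullet> v < \<beta> \<bullet> v" by simp
      then have "mu \<beta>' < mu \<beta>" using mu_less b'P by auto
      then have IH: "\<beta>' \<in> span D1 \<or> \<beta>' \<in> span D2" using less.hyps b'P by blast
      have bb: "\<beta> = refl \<alpha>i \<beta>'" using ainz by (simp add: \<beta>'_def)
      have ref: "refl \<alpha>i \<beta>' = \<beta>' - (\<beta>' \<bullet> coroot \<alpha>i) *\<^sub>R \<alpha>i" by (simp add: refl_def)
      show ?thesis
      proof (cases "\<alpha>i \<in> D1")
        case True
        show ?thesis
        proof (cases "\<beta>' \<in> span D1")
          case True
          then have "\<beta> \<in> span D1" unfolding bb ref using span_diff[OF _ span_scale[OF span_base[OF \<open>\<alpha>i \<in> D1\<close>]]] by blast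
          then show ?thesis by simp
        next
          case False
          then have "\<beta>' \<in> span D2" using IH by simp
          then have "\<beta>' \<bullet> \<alpha>i = 0" using span_orth[of \<beta>' D2 \<alpha>i] o21 True by auto
          then have "\<beta> = \<beta>'" using bb by (simp add: refl_fix)
          then show ?thesis using IH by simp
        qed
      next
        case False
        then have ai2: "\<alpha>i \<in> D2" using ai by (simp add: D2_def)
        show ?thesis
        proof (cases "\<beta>' \<in> span D2")
          case True
          then have "\<beta> \<in> span D2" unfolding bb ref using span_diff[OF _ span_scale[OF span_base[OF ai2]]] by blast
          then show ?thesis by simp
        next
          case False
          then have "\<beta>' \<in> span D1" using IH by simp
          then have "\<beta>' \<bullet> \<alpha>i = 0" using span_orth[of \<beta>' D1 \<alpha>i] o12 ai2 by auto
          then have "\<beta> = \<beta>'" using bb by (simp add: refl_fix)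
          then show ?thesis using IH by simp
        qed
      qed
    qed
  qed
  define \<Phi>1 where "\<Phi>1 = {\<beta>\<in>\<Phi>. \<beta> \<in> span D1}"
  define \<Phi>2 where "\<Phi>2 = {\<beta>\<in>\<Phi>. \<beta> \<in> span D2}"
  have "\<Phi>1 \<noteq> {}" using D1 Delta_Phi by (auto simp: \<Phi>1_def intro: span_base)
  moreover have "D2 \<noteq> {}" using D1 by (auto simp: D2_def)
  then have "\<Phi>2 \<noteq> {}" using Delta_Phi by (auto simp: \<Phi>2_def D2_def intro: span_base)
  moreover have "\<Phi>1 \<union> \<Phi>2 = \<Phi>"
  proof
    show "\<Phi> \<subseteq> \<Phi>1 \<union> \<Phi>2"
    proof
      fix \<beta> assume b: "\<beta> \<in> \<Phi>"
      show "\<beta> \<in> \<Phi>1 \<union> \<Phi>2"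
      proof (cases "\<beta> \<in> P")
        case True then show ?thesis using key b by (auto simp: \<Phi>1_def \<Phi>2_def)
      next
        case False
        then have "- \<beta> \<in> P" using Phi_cases b by auto
        then have "- \<beta> \<in> span D1 \<or> - \<beta> \<in> span D2" using key by blast
        then show ?thesis using b by (auto simp: \<Phi>1_def \<Phi>2_def dest: span_neg)
      qed
    qed
  qed (auto simp: \<Phi>1_def \<Phi>2_def)
  moreover have "\<forall>\<alpha>\<in>\<Phi>1. \<forall>\<beta>\<in>\<Phi>2. \<alpha> \<bullet> \<beta> = 0"
  proof (intro ballI)
    fix a b assume ab: "a \<in> \<Phi>1" "b \<in> \<Phi>2"
    have "\<forall>x\<in>D1. x \<bullet> b = 0"
    proof
      fix x assume "x \<in> D1"
      then have "b \<bullet> x = 0" using span_orth[of b D2 x] o21 ab by (auto simp: \<Phi>2_def)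
      then show "x \<bullet> b = 0" by (simp add: inner_commute)
    qed
    then show "a \<bullet> b = 0" using span_orth[of a D1 b] ab by (auto simp: \<Phi>1_def)
  qed
  ultimately show False using irr by blast
qed

end



context rsys begin

lemma Deltav_inner: "\<gamma> \<in> Delta \<Longrightarrow> x \<bullet> coroot \<gamma> = (2 / (\<gamma> \<bullet> \<gamma>)) * (x \<bullet> \<gamma>)"
  by (simp add: coroot_def)

lemma Delta_gg: "\<gamma> \<in> Delta \<Longrightarrow> \<gamma> \<bullet> \<gamma> > 0"
  using Delta_Phi nz by auto

lemma sign_Deltav: "\<gamma> \<in> Delta \<Longrightarrow> (x \<bullet> coroot \<gamma> > 0 \<longleftrightarrow> x \<bullet> \<gamma> > 0) \<and> (x \<bullet> coroot \<gamma> < 0 \<longleftrightarrow> x \<bullet> \<gamma> < 0)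
   \<and> (x \<bullet> coroot \<gamma> \<ge> 0 \<longleftrightarrow> x \<bullet> \<gamma> \<ge> 0) \<and> (x \<bullet> coroot \<gamma> \<le> 0 \<longleftrightarrow> x \<bullet> \<gamma> \<le> 0)"
proof -
  assume g: "\<gamma> \<in> Delta"
  obtain k where k: "k > 0" "x \<bullet> coroot \<gamma> = k * (x \<bullet> \<gamma>)"
    using Delta_gg[OF g] by (intro that[of "2 / (\<gamma> \<bullet> \<gamma>)"]) (auto simp: coroot_def)
  show ?thesis unfolding k(2) using k(1) by (simp add: zero_less_mult_iff mult_less_0_iff zero_le_mult_iff mult_le_0_iff)
qed

lemma cPv_pos: "y \<in> coroot ` \<Phi> \<Longrightarrow> y \<bullet> v > 0 \<Longrightarrow> y \<in> coroot ` P"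
  using coroot_v_neg by fastforce

lemma Delta_nonempty: "Delta \<noteq> {}"
  using Delta_card by auto

lemma P_nonempty: "P \<noteq> {}" using Delta_nonempty Delta_sub by auto

end

context irsys begin

definition "vmax t \<longleftrightarrow> t \<in> coroot ` P \<and> (\<forall>y\<in>coroot ` P. lev t y \<longrightarrow> y = t)"

lemma vmax_max: "vmax t \<Longrightarrow> y \<in> coroot ` P \<Longrightarrow> lev t y \<Longrightarrow> y = t"
  unfolding vmax_def by blast

lemma exists_vmax_above:
  assumes "\<beta> \<in> P" shows "\<exists>t. vmax t \<and> lev (coroot \<beta>) t"
proof -
  define S where "S = {y\<in>coroot ` P. lev (coroot \<beta>) y}"
  have finS: "finite S" using finP by (simp add: S_def)
  have neS: "coroot \<beta> \<in> S" using assms lev_refl by (simp add: S_def)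
  define m where "m = Max ((\<lambda>y. y \<bullet> v) ` S)"
  have "m \<in> (\<lambda>y. y \<bullet> v) ` S" unfolding m_def using finS neS by (intro Max_in) auto
  then obtain t where t: "t \<in> S" "t \<bullet> v = m" by auto
  have mx: "\<forall>y\<in>S. y \<bullet> v \<le> t \<bullet> v" using finS t by (auto simp: m_def)
  have "vmax t"
    unfolding vmax_def
  proof (intro conjI ballI impI)
    show "t \<in> coroot ` P" using t by (simp add: S_def)
    fix y assume y: "y \<in> coroot ` P" "lev t y"
    then have "y \<in> S" using t lev_trans by (auto simp: S_def)
    then have "y \<bullet> v \<le> t \<bullet> v" using mx by auto
    then show "y = t" using lev_strict[OF y(2)] by fastforce
  qed
  then show ?thesis using t by (auto simp: S_def)
qed

lemma vmax_dom:
  assumes "vmax t" "\<alpha>i \<in> Delta" shows "t \<bullet> \<alpha>i \<ge> 0"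
proof (rule ccontr)
  assume "\<not> ?thesis"
  then have neg: "t \<bullet> coroot \<alpha>i < 0" using sign_Deltav[OF assms(2), of t] by simp
  have tP: "t \<in> coroot ` P" using assms by (simp add: vmax_def)
  then have tPhi: "t \<in> coroot ` \<Phi>" using P_sub by auto
  have aPhi: "coroot \<alpha>i \<in> coroot ` \<Phi>" using assms Delta_Phi by auto
  have tv: "t \<bullet> v > 0" using tP coroot_v_pos by auto
  have av: "coroot \<alpha>i \<bullet> v > 0" using Deltav_v assms by auto
  have "coroot \<alpha>i \<noteq> - t" using tv av by (auto simp: inner_minus_left)
  then have "t + coroot \<alpha>i \<in> coroot ` \<Phi>"
    using rsys.rank2_sum[OF rsys_coroot tPhi aPhi _ neg] by simp
  moreover have "(t + coroot \<alpha>i) \<bullet> v > 0" using tv av by (simp add: inner_add_left)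
  ultimately have "t + coroot \<alpha>i \<in> coroot ` P" by (rule cPv_pos)
  moreover have "lev t (t + coroot \<alpha>i)" using assms by (simp add: lev_add_simple)
  ultimately have "t + coroot \<alpha>i = t" using vmax_max[OF assms(1)] by blast
  then show False using av by (auto simp: coroot_def)
qed

lemma vmax_full:
  assumes "vmax t" shows "\<exists>c::'a\<Rightarrow>nat. t = (\<Sum>\<gamma>\<in>Delta. real (c \<gamma>) *\<^sub>R coroot \<gamma>) \<and> (\<forall>\<gamma>\<in>Delta. c \<gamma> \<ge> 1)"
proof -
  obtain \<tau> where tau: "\<tau> \<in> P" "t = coroot \<tau>" using assms by (auto simp: vmax_def)
  obtain c where c: "t = (\<Sum>\<gamma>\<in>Delta. real (c \<gamma>) *\<^sub>R coroot \<gamma>)" using coroot_P_nncomb tau by blast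
  define D1 where "D1 = {\<gamma>\<in>Delta. c \<gamma> > 0}"
  have "D1 \<noteq> {}"
  proof
    assume "D1 = {}"
    then have "\<forall>\<gamma>\<in>Delta. c \<gamma> = 0" by (auto simp: D1_def)
    then have "t = 0" using c by simp
    then show False using tau nz P_sub by auto
  qed
  moreover have "D1 = Delta"
  proof (rule ccontr)
    assume "D1 \<noteq> Delta"
    then obtain a b where ab: "a \<in> D1" "b \<in> Delta - D1" "a \<bullet> b \<noteq> 0"
      using Delta_connected[of D1] \<open>D1 \<noteq> {}\<close> by (auto simp: D1_def)
    have aD: "a \<in> Delta" "c a > 0" and bD: "b \<in> Delta" "c b = 0" using ab by (auto simp: D1_def)
    have "a \<noteq> b" using ab by auto
    then have "a \<bullet> b < 0" using Delta_nonpos aD bD ab by force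
    then have ab': "coroot a \<bullet> b < 0" using sign_Deltav[OF aD(1), of b] by (simp add: inner_commute)
    have "- (t \<bullet> b) = (\<Sum>\<gamma>\<in>Delta. - (real (c \<gamma>) * (coroot \<gamma> \<bullet> b)))"
      by (simp add: c inner_sum_left sum_negf)
    also have "\<dots> > 0"
    proof (rule sum_pos2[OF Delta_fin aD(1)])
      show "0 < - (real (c a) * (coroot a \<bullet> b))" using aD ab' by (simp add: mult_pos_neg)
      fix \<gamma> assume g: "\<gamma> \<in> Delta"
      show "0 \<le> - (real (c \<gamma>) * (coroot \<gamma> \<bullet> b))"
      proof (cases "\<gamma> = b")
        case True then show ?thesis using bD by simp
      next
        case False
        then have "\<gamma> \<bullet> b \<le> 0" using Delta_nonpos g bD by auto
        then have "coroot \<gamma> \<bullet> b \<le> 0" using sign_Deltav[OF g, of b] by (simp add: inner_commute)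
        then show ?thesis by (simp add: mult_nonneg_nonpos)
      qed
    qed
    finally have "t \<bullet> b < 0" by simp
    then show False using vmax_dom[OF assms bD(1)] by simp
  qed
  then have "\<forall>\<gamma>\<in>Delta. c \<gamma> \<ge> 1"
  proof (intro ballI)
    fix \<gamma> assume "\<gamma> \<in> Delta"
    then have "\<gamma> \<in> D1" using \<open>D1 = Delta\<close> by simp
    then show "c \<gamma> \<ge> 1" by (simp add: D1_def)
  qed
  then show ?thesis using c by blast
qed

lemma vmax_dom_v: "vmax t \<Longrightarrow> \<gamma> \<in> Delta \<Longrightarrow> t \<bullet> coroot \<gamma> \<ge> 0"
  using vmax_dom sign_Deltav by blast

lemma vmax_unique:
  assumes "vmax t" "vmax s" shows "t = s"
proof (rule ccontr)
  assume ne: "t \<noteq> s"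
  obtain c where c: "t = (\<Sum>\<gamma>\<in>Delta. real (c \<gamma>) *\<^sub>R coroot \<gamma>)" "\<forall>\<gamma>\<in>Delta. c \<gamma> \<ge> 1" using vmax_full[OF assms(1)] by blast
  obtain m where m: "s = (\<Sum>\<gamma>\<in>Delta. real (m \<gamma>) *\<^sub>R coroot \<gamma>)" "\<forall>\<gamma>\<in>Delta. m \<gamma> \<ge> 1" using vmax_full[OF assms(2)] by blast
  have tP: "t \<in> coroot ` P" and sP: "s \<in> coroot ` P" using assms by (auto simp: vmax_def)
  then have tnz: "t \<noteq> 0" using P_sub nz by auto
  have "\<exists>\<gamma>0\<in>Delta. t \<bullet> coroot \<gamma>0 > 0"
  proof (rule ccontr)
    assume "\<not> ?thesis"
    then have "\<forall>\<gamma>\<in>Delta. t \<bullet> coroot \<gamma> \<le> 0" by auto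
    then have "t \<bullet> t \<le> 0" by (subst (2) c(1)) (auto simp: inner_sum_right intro!: sum_nonpos mult_nonneg_nonpos)
    then show False using tnz by (metis inner_gt_zero_iff not_le)
  qed
  then obtain \<gamma>0 where g0: "\<gamma>0 \<in> Delta" "t \<bullet> coroot \<gamma>0 > 0" by blast
  have "t \<bullet> s = (\<Sum>\<gamma>\<in>Delta. real (m \<gamma>) * (t \<bullet> coroot \<gamma>))" by (simp add: m inner_sum_right)
  also have "\<dots> > 0"
    using g0 m(2) vmax_dom_v[OF assms(1)] by (intro sum_pos2[OF Delta_fin g0(1)]) (auto intro!: mult_pos_pos)
  finally have ts: "t \<bullet> s > 0" .
  have tPhi: "t \<in> coroot ` \<Phi>" and sPhi: "s \<in> coroot ` \<Phi>" using tP sP P_sub by auto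
  have tv: "t \<bullet> v > 0" using tP coroot_v_pos by auto
  have sv: "s \<bullet> v > 0" using sP coroot_v_pos by auto
  have "s \<noteq> - t"
  proof
    assume "s = - t" then have "s \<bullet> v = - (t \<bullet> v)" by simp
    then show False using tv sv by simp
  qed
  then have "t - s \<in> coroot ` \<Phi>" using rsys.rank2_diff[OF rsys_coroot tPhi sPhi _ _ ts] ne by auto
  then obtain \<delta> where d: "\<delta> \<in> \<Phi>" "t - s = coroot \<delta>" by auto
  show False
  proof (cases "\<delta> \<in> P")
    case True
    then have "lev s t" using coroot_P_nncomb[of \<delta>] d unfolding lev_def by simp
    then show False using vmax_max[OF assms(2) tP] ne by auto
  next
    case False
    then have "- \<delta> \<in> P" using Phi_cases d by auto
    moreover have "s - t = coroot (- \<delta>)" using d by (simp add: algebra_simps)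
    ultimately have "lev t s" using coroot_P_nncomb[of "- \<delta>"] unfolding lev_def by simp
    then show False using vmax_max[OF assms(1) sP] ne by auto
  qed
qed

definition "thv = (SOME t. vmax t)"

lemma thv_vmax: "vmax thv"
proof -
  obtain \<beta> where "\<beta> \<in> P" using P_nonempty by auto
  then have "\<exists>t. vmax t" using exists_vmax_above by blast
  then show ?thesis unfolding thv_def by (rule someI_ex)
qed

lemma thv_top: "\<beta> \<in> P \<Longrightarrow> lev (coroot \<beta>) thv"
  using exists_vmax_above vmax_unique thv_vmax by blast

definition "theta = (SOME \<theta>. \<theta> \<in> P \<and> coroot \<theta> = thv)"

lemma theta: "theta \<in> P" "coroot theta = thv"
proof -
  have "\<exists>\<theta>. \<theta> \<in> P \<and> coroot \<theta> = thv" using thv_vmax by (auto simp: vmax_def)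
  then have "theta \<in> P \<and> coroot theta = thv" unfolding theta_def by (rule someI_ex)
  then show "theta \<in> P" "coroot theta = thv" by auto
qed

lemma highest_eq: "highest_coroot \<Phi> P = thv"
  unfolding highest_coroot_def Delta_def[symmetric]
proof (rule the_equality)
  show "thv \<in> coroot ` \<Phi> \<and> (\<forall>\<beta>\<in>P. \<exists>c::'a\<Rightarrow>nat. thv - coroot \<beta> = (\<Sum>\<gamma>\<in>Delta. real (c \<gamma>) *\<^sub>R coroot \<gamma>))"
  proof
    show "thv \<in> coroot ` \<Phi>" using theta P_sub by (metis image_eqI subsetD)
    show "\<forall>\<beta>\<in>P. \<exists>c::'a\<Rightarrow>nat. thv - coroot \<beta> = (\<Sum>\<gamma>\<in>Delta. real (c \<gamma>) *\<^sub>R coroot \<gamma>)"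
      using thv_top by (auto simp: lev_def)
  qed
next
  fix t assume t: "t \<in> coroot ` \<Phi> \<and> (\<forall>\<beta>\<in>P. \<exists>c::'a\<Rightarrow>nat. t - coroot \<beta> = (\<Sum>\<gamma>\<in>Delta. real (c \<gamma>) *\<^sub>R coroot \<gamma>))"
  then have lt: "lev thv t" using theta by (auto simp: lev_def) (metis)
  have "thv \<bullet> v > 0" using theta coroot_v_pos by metis
  then have "t \<bullet> v > 0" using lev_v[OF lt] by simp
  then have "t \<in> coroot ` P" using t cPv_pos by auto
  then have "lev t thv" using thv_top by auto
  then show "t = thv" using lt lev_antisym by auto
qed

lemma thv_full: "\<exists>c::'a\<Rightarrow>nat. thv = (\<Sum>\<gamma>\<in>Delta. real (c \<gamma>) *\<^sub>R coroot \<gamma>) \<and> (\<forall>\<gamma>\<in>Delta. c \<gamma> \<ge> 1)"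
  using vmax_full[OF thv_vmax] .

lemma theta_dom: "\<alpha>i \<in> Delta \<Longrightarrow> theta \<bullet> \<alpha>i \<ge> 0"
proof -
  assume a: "\<alpha>i \<in> Delta"
  have "thv \<bullet> \<alpha>i \<ge> 0" using vmax_dom[OF thv_vmax a] .
  moreover obtain k where k: "k > 0" "thv \<bullet> \<alpha>i = k * (theta \<bullet> \<alpha>i)"
    using theta P_sub nz by (intro that[of "2 / (theta \<bullet> theta)"]) (auto simp: coroot_def theta(2)[symmetric])
  ultimately show ?thesis by (simp add: zero_le_mult_iff)
qed

end

context rsys begin

lemma fw_exists:
  assumes "\<alpha> \<in> Delta" shows "\<exists>w. \<forall>\<beta>\<in>Delta. w \<bullet> coroot \<beta> = (if \<beta> = \<alpha> then 1 else 0)"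
proof -
  define L where "L x = (\<Sum>\<beta>\<in>Delta. (x \<bullet> coroot \<beta>) *\<^sub>R \<beta>)" for x
  have lin: "linear L"
    by (rule linearI) (simp_all add: L_def inner_add_left scaleR_add_left sum.distrib scaleR_sum_right)
  have "inj L"
  proof (rule injI)
    fix x y assume "L x = L y"
    then have "(\<Sum>\<beta>\<in>Delta. (x \<bullet> coroot \<beta>) *\<^sub>R \<beta>) = (\<Sum>\<beta>\<in>Delta. (y \<bullet> coroot \<beta>) *\<^sub>R \<beta>)" by (simp add: L_def)
    then have "\<forall>\<beta>\<in>Delta. (x - y) \<bullet> coroot \<beta> = 0"
      using Delta_coeffs[of "\<lambda>\<beta>. x \<bullet> coroot \<beta>" "\<lambda>\<beta>. y \<bullet> coroot \<beta>"] by (simp add: inner_diff_left)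
    then have "x - y = 0" by (rule orth_Deltav_zero)
    then show "x = y" by simp
  qed
  then have "surj L" using lin_inj_surj lin by blast
  then obtain w where w: "L w = \<alpha>" by (metis surjD)
  have "\<alpha> = (\<Sum>\<beta>\<in>Delta. (if \<beta> = \<alpha> then 1 else 0) *\<^sub>R \<beta>)" using sum_ind_scale_k'[OF Delta_fin assms, of 1 "\<lambda>x. x"] by simp
  then have "(\<Sum>\<beta>\<in>Delta. (w \<bullet> coroot \<beta>) *\<^sub>R \<beta>) = (\<Sum>\<beta>\<in>Delta. (if \<beta> = \<alpha> then 1 else 0) *\<^sub>R \<beta>)"
    using w by (simp add: L_def)
  from Delta_coeffs[OF this] show ?thesis by blast
qed

lemma fw_prop:
  assumes "\<alpha> \<in> Delta" "\<beta> \<in> Delta"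
  shows "fund_weight P \<alpha> \<bullet> coroot \<beta> = (if \<beta> = \<alpha> then 1 else 0)"
proof -
  have "\<exists>!w. \<forall>\<beta>\<in>Delta. w \<bullet> coroot \<beta> = (if \<beta> = \<alpha> then 1 else 0)"
  proof (rule ex_ex1I)
    show "\<exists>w. \<forall>\<beta>\<in>Delta. w \<bullet> coroot \<beta> = (if \<beta> = \<alpha> then 1 else 0)" using fw_exists assms by blast
    fix w1 w2 assume "\<forall>\<beta>\<in>Delta. w1 \<bullet> coroot \<beta> = (if \<beta> = \<alpha> then 1 else 0)" "\<forall>\<beta>\<in>Delta. w2 \<bullet> coroot \<beta> = (if \<beta> = \<alpha> then 1 else 0)"
    then have "\<forall>\<beta>\<in>Delta. (w1 - w2) \<bullet> coroot \<beta> = 0" by (simp add: inner_diff_left)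
    then have "w1 - w2 = 0" by (rule orth_Deltav_zero)
    then show "w1 = w2" by simp
  qed
  then have "\<forall>\<beta>\<in>Delta. fund_weight P \<alpha> \<bullet> coroot \<beta> = (if \<beta> = \<alpha> then 1 else 0)"
    unfolding fund_weight_def Delta_def[symmetric] by (rule theI')
  then show ?thesis using assms by blast
qed

lemma rho_simple: "\<beta> \<in> Delta \<Longrightarrow> rho P \<bullet> coroot \<beta> = 1"
proof -
  assume b: "\<beta> \<in> Delta"
  have "rho P \<bullet> coroot \<beta> = (\<Sum>\<alpha>\<in>Delta. fund_weight P \<alpha> \<bullet> coroot \<beta>)"
    by (simp add: rho_def Delta_def inner_sum_left)
  also have "\<dots> = (\<Sum>\<alpha>\<in>Delta. if \<alpha> = \<beta> then 1 else 0)"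
    by (rule sum.cong) (auto simp: fw_prop b)
  also have "\<dots> = 1" using b Delta_fin by simp
  finally show ?thesis .
qed

lemma rho_nn: "rho P \<bullet> (\<Sum>\<gamma>\<in>Delta. real (c \<gamma>) *\<^sub>R coroot \<gamma>) = real (\<Sum>\<gamma>\<in>Delta. c \<gamma>)"
  by (simp add: inner_sum_right rho_simple)

lemma rho_lev: "lev x y \<Longrightarrow> rho P \<bullet> x \<le> rho P \<bullet> y"
proof -
  assume "lev x y"
  then obtain c where "y - x = (\<Sum>\<gamma>\<in>Delta. real (c \<gamma>) *\<^sub>R coroot \<gamma>)" by (auto simp: lev_def)
  then have "rho P \<bullet> (y - x) \<ge> 0" by (simp add: rho_nn sum_nonneg)
  then show ?thesis by (simp add: inner_diff_right)
qed

lemma rho_P: "\<beta> \<in> P \<Longrightarrow> \<exists>n::nat. rho P \<bullet> coroot \<beta> = real n \<and> n \<ge> 1"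
proof -
  assume b: "\<beta> \<in> P"
  obtain c where c: "coroot \<beta> = (\<Sum>\<gamma>\<in>Delta. real (c \<gamma>) *\<^sub>R coroot \<gamma>)" using coroot_P_nncomb b by blast
  have "\<exists>\<gamma>\<in>Delta. c \<gamma> > 0"
  proof (rule ccontr)
    assume "\<not> ?thesis"
    then have "coroot \<beta> = 0" using c by simp
    then show False using b P_sub nz by auto
  qed
  then obtain \<gamma> where "\<gamma> \<in> Delta" "c \<gamma> > 0" by blast
  then have "(\<Sum>\<gamma>\<in>Delta. c \<gamma>) \<ge> 1" using Delta_fin
    by (metis One_nat_def Suc_leI le_trans member_le_sum zero_le)
  then show ?thesis using c rho_nn by metis
qed

lemma rho_Phi_int: "\<beta> \<in> \<Phi> \<Longrightarrow> \<exists>n::int. rho P \<bullet> coroot \<beta> = of_int n"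
proof -
  assume b: "\<beta> \<in> \<Phi>"
  show ?thesis
  proof (cases "\<beta> \<in> P")
    case True then show ?thesis using rho_P by (metis of_int_of_nat_eq)
  next
    case False
    then have "- \<beta> \<in> P" using Phi_cases b by auto
    then obtain n::nat where "rho P \<bullet> coroot (- \<beta>) = real n" using rho_P by blast
    then have "rho P \<bullet> coroot \<beta> = of_int (- int n)" by simp
    then show ?thesis by blast
  qed
qed

end

context irsys begin

abbreviation "hh \<equiv> coxeter_number \<Phi> P"

lemma hh_eq: "hh = rho P \<bullet> thv + 1"
  by (simp add: coxeter_number_def highest_eq)

lemma hh_nat: "\<exists>N::nat. hh = real N \<and> N \<ge> 2"
proof -
  obtain n::nat where "rho P \<bullet> coroot theta = real n" "n \<ge> 1" using rho_P theta by blast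
  then show ?thesis using hh_eq theta by (intro exI[of _ "n + 1"]) auto
qed

lemma hh_ge2: "hh \<ge> 2" using hh_nat by auto
lemma hh_pos: "hh > 0" using hh_ge2 by simp
lemma hh_int: "hh \<in> \<int>" using hh_nat by (metis Ints_of_nat)

lemma rho_P_bounds: "\<beta> \<in> P \<Longrightarrow> 1 \<le> rho P \<bullet> coroot \<beta> \<and> rho P \<bullet> coroot \<beta> \<le> hh - 1"
  using rho_P[of \<beta>] rho_lev[OF thv_top[of \<beta>]] hh_eq by auto

lemma thv_ht: "rho P \<bullet> thv = hh - 1" using hh_eq by simp

end



lemma closed_le': "closed {x. x \<bullet> c \<le> (k::real)}"
  using closed_halfspace_le[of c k] by (simp add: inner_commute)
lemma closed_ge': "closed {x. x \<bullet> c \<ge> (k::real)}"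
  using closed_halfspace_ge[of k c] by (simp add: inner_commute)

lemma closure_lt: "A \<subseteq> {x. x \<bullet> c < k} \<Longrightarrow> closure A \<subseteq> {x. x \<bullet> c \<le> k}"
  by (rule closure_minimal) (auto simp: closed_le')
lemma closure_gt: "A \<subseteq> {x. x \<bullet> c > k} \<Longrightarrow> closure A \<subseteq> {x. x \<bullet> c \<ge> k}"
  by (rule closure_minimal) (auto simp: closed_ge')

lemma aff_dim_two_hyp:
  fixes u w :: "'a::euclidean_space"
  assumes ind: "independent {u, w}" "u \<noteq> w"
    and S: "S \<subseteq> {x. x \<bullet> u = a \<and> x \<bullet> w = b}"
  shows "aff_dim S \<le> int DIM('a) - 2"
proof (cases "S = {}")
  case True then show ?thesis using DIM_positive[where 'a='a] by simp
next
  case False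
  then obtain s where s: "s \<in> S" by auto
  define V where "V = {y. \<forall>x\<in>span {u, w}. orthogonal x y}"
  have subV: "subspace V" unfolding V_def by (rule subspace_orthogonal_to_vectors)
  have dV: "dim V + dim (span {u, w}) = dim (UNIV::'a set)"
    unfolding V_def using dim_subspace_orthogonal_to_vectors[of "span {u,w}" UNIV] by simp
  have "dim (span {u, w}) = 2" using ind by (simp add: dim_eq_card_independent)
  then have dimV: "int (dim V) = int DIM('a) - 2" using dV by simp
  have "(\<lambda>x. x - s) ` S \<subseteq> V"
  proof
    fix y assume "y \<in> (\<lambda>x. x - s) ` S"
    then obtain x where x: "x \<in> S" "y = x - s" by auto
    then have "y \<bullet> u = 0" "y \<bullet> w = 0" using S s by (auto simp: inner_diff_left)
    then have "\<forall>z\<in>{u, w}. orthogonal y z" by (auto simp: orthogonal_def)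
    then have "\<forall>z\<in>span {u, w}. orthogonal y z"
      using orthogonal_to_span orthogonal_commute by metis
    then show "y \<in> V" by (auto simp: V_def orthogonal_commute)
  qed
  then have "aff_dim ((\<lambda>x. x - s) ` S) \<le> aff_dim V" by (rule aff_dim_subset)
  also have "\<dots> = int (dim V)" using subV by (simp add: aff_dim_subspace)
  finally show ?thesis using dimV by (simp add: aff_dim_translation_eq_subtract)
qed

context rsys begin

definition "UU = UNIV - \<Union>{hyp \<alpha> k | \<alpha> k. \<alpha> \<in> \<Phi>}"

lemma alcoves_eq: "alcoves \<Phi> = components UU"
  by (simp add: alcoves_def UU_def)

lemma in_UU: "x \<in> UU \<longleftrightarrow> (\<forall>\<alpha>\<in>\<Phi>. \<forall>k::int. x \<bullet> coroot \<alpha> \<noteq> of_int k)"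
  by (auto simp: UU_def hyp_def)

lemma in_UU_Ints: "x \<in> UU \<longleftrightarrow> (\<forall>\<alpha>\<in>\<Phi>. x \<bullet> coroot \<alpha> \<notin> \<int>)"
  unfolding in_UU by (auto elim: Ints_cases)

definition "same p x \<longleftrightarrow> (\<forall>\<alpha>\<in>\<Phi>. \<forall>k::int. (x \<bullet> coroot \<alpha> < of_int k \<longleftrightarrow> p \<bullet> coroot \<alpha> < of_int k))"

lemma cc_char:
  assumes p: "p \<in> UU"
  shows "connected_component_set UU p = {x \<in> UU. same p x}"
proof
  show "connected_component_set UU p \<subseteq> {x \<in> UU. same p x}"
  proof
    fix x assume x: "x \<in> connected_component_set UU p"
    have xU: "x \<in> UU" using x connected_component_subset by blast
    have pC: "p \<in> connected_component_set UU p" using p by simp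
    have "same p x" unfolding same_def
    proof (intro ballI allI)
      fix \<alpha> k assume a: "\<alpha> \<in> \<Phi>"
      have nx: "x \<bullet> coroot \<alpha> \<noteq> of_int k" and np: "p \<bullet> coroot \<alpha> \<noteq> of_int k" using xU p a by (auto simp: in_UU)
      show "x \<bullet> coroot \<alpha> < of_int k \<longleftrightarrow> p \<bullet> coroot \<alpha> < of_int k"
      proof (rule ccontr)
        assume "\<not> ?thesis"
        then have "(x \<bullet> coroot \<alpha> < of_int k \<and> of_int k < p \<bullet> coroot \<alpha>) \<or> (p \<bullet> coroot \<alpha> < of_int k \<and> of_int k < x \<bullet> coroot \<alpha>)"
          using nx np by linarith
        then have "\<exists>z\<in>connected_component_set UU p. coroot \<alpha> \<bullet> z = of_int k"
        proof
          assume h: "x \<bullet> coroot \<alpha> < of_int k \<and> of_int k < p \<bullet> coroot \<alpha>"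
          show ?thesis
            by (rule connected_ivt_hyperplane[OF connected_connected_component x pC]) (use h in \<open>auto simp: inner_commute\<close>)
        next
          assume h: "p \<bullet> coroot \<alpha> < of_int k \<and> of_int k < x \<bullet> coroot \<alpha>"
          show ?thesis
            by (rule connected_ivt_hyperplane[OF connected_connected_component pC x]) (use h in \<open>auto simp: inner_commute\<close>)
        qed
        then obtain z where z: "z \<in> connected_component_set UU p" "z \<bullet> coroot \<alpha> = of_int k" by (auto simp: inner_commute)
        have "z \<in> UU" using z(1) connected_component_subset by blast
        then show False using z(2) a by (auto simp: in_UU)
      qed
    qed
    then show "x \<in> {x \<in> UU. same p x}" using xU by simp
  qed
next
  show "{x \<in> UU. same p x} \<subseteq> connected_component_set UU p"
  proof
    fix x assume x: "x \<in> {x \<in> UU. same p x}"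
    have "closed_segment p x \<subseteq> UU"
    proof
      fix z assume "z \<in> closed_segment p x"
      then obtain u where u: "0 \<le> u" "u \<le> 1" "z = (1 - u) *\<^sub>R p + u *\<^sub>R x" by (auto simp: closed_segment_def)
      show "z \<in> UU" unfolding in_UU
      proof (intro ballI allI)
        fix \<alpha> k assume a: "\<alpha> \<in> \<Phi>"
        have zc: "z \<bullet> coroot \<alpha> = (1 - u) * (p \<bullet> coroot \<alpha>) + u * (x \<bullet> coroot \<alpha>)" by (simp add: u inner_add_left)
        have np: "p \<bullet> coroot \<alpha> \<noteq> of_int k" using p a by (auto simp: in_UU)
        have nx: "x \<bullet> coroot \<alpha> \<noteq> of_int k" using x a by (auto simp: in_UU)
        have sm: "x \<bullet> coroot \<alpha> < of_int k \<longleftrightarrow> p \<bullet> coroot \<alpha> < of_int k" using x a by (auto simp: same_def)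
        show "z \<bullet> coroot \<alpha> \<noteq> of_int k"
        proof (cases "p \<bullet> coroot \<alpha> < of_int k")
          case True
          then have "x \<bullet> coroot \<alpha> < of_int k" using sm by simp
          then have "(1 - u) * (p \<bullet> coroot \<alpha>) + u * (x \<bullet> coroot \<alpha>) < (1 - u) * of_int k + u * of_int k"
            using True u by (cases "u = 0") (auto intro!: add_le_less_mono mult_left_mono mult_strict_left_mono)
          then show ?thesis using zc by (simp add: algebra_simps)
        next
          case False
          then have g1: "p \<bullet> coroot \<alpha> > of_int k" using np by simp
          then have "x \<bullet> coroot \<alpha> > of_int k" using sm nx by auto
          then have "(1 - u) * (p \<bullet> coroot \<alpha>) + u * (x \<bullet> coroot \<alpha>) > (1 - u) * of_int k + u * of_int k"
            using g1 u by (cases "u = 0") (auto intro!: add_le_less_mono mult_left_mono mult_strict_left_mono)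
          then show ?thesis using zc by (simp add: algebra_simps)
        qed
      qed
    qed
    then have "closed_segment p x \<subseteq> connected_component_set UU p"
      by (intro connected_component_maximal) auto
    then show "x \<in> connected_component_set UU p" by auto
  qed
qed

lemma alc_cc: "A \<in> alcoves \<Phi> \<Longrightarrow> x \<in> A \<Longrightarrow> A = connected_component_set UU x"
  unfolding alcoves_eq components_iff by (metis connected_component_eq)

lemma alc_sub: "A \<in> alcoves \<Phi> \<Longrightarrow> A \<subseteq> UU"
  unfolding alcoves_eq components_iff using connected_component_subset by blast

lemma alc_ne: "A \<in> alcoves \<Phi> \<Longrightarrow> A \<noteq> {}"
  unfolding alcoves_eq by (rule in_components_nonempty)

lemma alc_of: "x \<in> UU \<Longrightarrow> connected_component_set UU x \<in> alcoves \<Phi>"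
  unfolding alcoves_eq by (rule componentsI)

lemma alc_eq: "A \<in> alcoves \<Phi> \<Longrightarrow> B \<in> alcoves \<Phi> \<Longrightarrow> x \<in> A \<Longrightarrow> x \<in> B \<Longrightarrow> A = B"
  using alc_cc by metis

lemma alc_same:
  assumes "A \<in> alcoves \<Phi>" "x \<in> A" "y \<in> A" shows "same x y"
proof -
  have xU: "x \<in> UU" using assms alc_sub by auto
  have "y \<in> connected_component_set UU x" using alc_cc[OF assms(1,2)] assms(3) by simp
  then show ?thesis using cc_char[OF xU] by simp
qed

lemma alc_side:
  assumes "A \<in> alcoves \<Phi>" "\<alpha> \<in> \<Phi>"
  shows "(\<forall>x\<in>A. x \<bullet> coroot \<alpha> < of_int k) \<or> (\<forall>x\<in>A. x \<bullet> coroot \<alpha> > of_int k)"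
proof -
  obtain p where p: "p \<in> A" using alc_ne assms by auto
  have pU: "p \<in> UU" using p alc_sub assms by auto
  show ?thesis
  proof (cases "p \<bullet> coroot \<alpha> < of_int k")
    case True
    then show ?thesis using alc_same[OF assms(1) p] assms(2) by (auto simp: same_def)
  next
    case False
    have "\<forall>x\<in>A. x \<bullet> coroot \<alpha> > of_int k"
    proof
      fix x assume x: "x \<in> A"
      then have "\<not> x \<bullet> coroot \<alpha> < of_int k" using alc_same[OF assms(1) p x] assms(2) False by (auto simp: same_def)
      moreover have "x \<in> UU" using x alc_sub[OF assms(1)] by blast
      then have "x \<bullet> coroot \<alpha> \<noteq> of_int k" using assms(2) by (auto simp: in_UU)
      ultimately show "x \<bullet> coroot \<alpha> > of_int k" by simp
    qed
    then show ?thesis by simp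
  qed
qed

lemma alc_sep:
  assumes A: "A \<in> alcoves \<Phi>" and B: "B \<in> alcoves \<Phi>" and ne: "A \<noteq> B"
  shows "\<exists>\<beta>\<in>\<Phi>. \<exists>m::int. (\<forall>x\<in>A. x \<bullet> coroot \<beta> < of_int m) \<and> (\<forall>x\<in>B. x \<bullet> coroot \<beta> > of_int m)"
proof -
  obtain p where p: "p \<in> A" using alc_ne A by auto
  obtain q where q: "q \<in> B" using alc_ne B by auto
  have pU: "p \<in> UU" and qU: "q \<in> UU" using p q alc_sub A B by auto
  have "\<not> same p q"
  proof
    assume "same p q"
    then have "q \<in> connected_component_set UU p" using cc_char[OF pU] qU by simp
    then have "q \<in> A" using alc_cc[OF A p] by simp
    then show False using alc_eq[OF A B _ q] ne by simp
  qed
  then obtain \<beta> k where bk: "\<beta> \<in> \<Phi>" "\<not> (q \<bullet> coroot \<beta> < of_int k \<longleftrightarrow> p \<bullet> coroot \<beta> < of_int k)"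
    unfolding same_def by blast
  show ?thesis
  proof (cases "p \<bullet> coroot \<beta> < of_int k")
    case True
    then have "\<not> q \<bullet> coroot \<beta> < of_int k" using bk by simp
    moreover have "q \<bullet> coroot \<beta> \<noteq> of_int k" using qU bk(1) by (auto simp: in_UU)
    ultimately have "q \<bullet> coroot \<beta> > of_int k" by linarith
    then have "\<forall>x\<in>B. x \<bullet> coroot \<beta> > of_int k" using alc_side[OF B bk(1), of k] q by auto
    moreover have "\<forall>x\<in>A. x \<bullet> coroot \<beta> < of_int k" using alc_side[OF A bk(1), of k] p True by auto
    ultimately show ?thesis using bk by blast
  next
    case False
    then have "q \<bullet> coroot \<beta> < of_int k" using bk by simp
    then have "\<forall>x\<in>B. x \<bullet> coroot \<beta> < of_int k" using alc_side[OF B bk(1), of k] q by auto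
    moreover have "p \<bullet> coroot \<beta> \<noteq> of_int k" using pU bk(1) by (auto simp: in_UU)
    then have "p \<bullet> coroot \<beta> > of_int k" using False by linarith
    then have "\<forall>x\<in>A. x \<bullet> coroot \<beta> > of_int k" using alc_side[OF A bk(1), of k] p by auto
    ultimately have "(\<forall>x\<in>A. x \<bullet> coroot (- \<beta>) < of_int (- k)) \<and> (\<forall>x\<in>B. x \<bullet> coroot (- \<beta>) > of_int (- k))"
      by auto
    then show ?thesis using neg_in[OF bk(1)] by blast
  qed
qed

lemma coroot_indep:
  assumes "\<alpha> \<in> \<Phi>" "\<beta> \<in> \<Phi>" "\<beta> \<noteq> \<alpha>" "\<beta> \<noteq> - \<alpha>"
  shows "independent {coroot \<alpha>, coroot \<beta>}" "coroot \<alpha> \<noteq> coroot \<beta>"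
proof -
  show ne: "coroot \<alpha> \<noteq> coroot \<beta>" using coroot_inj assms by metis
  have "coroot \<beta> \<notin> span {coroot \<alpha>}"
  proof
    assume "coroot \<beta> \<in> span {coroot \<alpha>}"
    then obtain c where c: "coroot \<beta> = c *\<^sub>R coroot \<alpha>" by (auto simp: span_singleton)
    have "coroot \<beta> \<in> coroot ` \<Phi>" using assms(2) by blast
    then have "c *\<^sub>R coroot \<alpha> \<in> coroot ` \<Phi>" using c by simp
    then have "c = 1 \<or> c = -1" using rs_coroot assms unfolding root_system_def by blast
    then have "coroot \<beta> = coroot \<alpha> \<or> coroot \<beta> = coroot (- \<alpha>)" using c by auto
    then show False using coroot_inj neg_in assms by metis
  qed
  moreover have "independent {coroot \<alpha>}" using nz assms by (simp add: independent_insert)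
  ultimately have "independent (insert (coroot \<beta>) {coroot \<alpha>})" using ne by (simp add: independent_insert)
  moreover have "insert (coroot \<beta>) {coroot \<alpha>} = {coroot \<alpha>, coroot \<beta>}" by auto
  ultimately show "independent {coroot \<alpha>, coroot \<beta>}" by simp
qed

lemma aff_dim_two_roots:
  assumes "\<alpha> \<in> \<Phi>" "\<beta> \<in> \<Phi>" "\<beta> \<noteq> \<alpha>" "\<beta> \<noteq> - \<alpha>"
    "S \<subseteq> {x. x \<bullet> coroot \<alpha> = a \<and> x \<bullet> coroot \<beta> = b}"
  shows "aff_dim S \<le> int DIM('a) - 2"
  using aff_dim_two_hyp[OF coroot_indep(1,2)[OF assms(1-4)] assms(5)] .

lemma wall_unique:
  assumes A1: "A1 \<in> alcoves \<Phi>" and A2: "A2 \<in> alcoves \<Phi>" and a: "\<alpha> \<in> \<Phi>"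
    and W: "W \<subseteq> closure A1" "W \<subseteq> closure A2" "W \<subseteq> hyp \<alpha> k" "aff_dim W = int DIM('a) - 1"
    and s1: "\<forall>x\<in>A1. x \<bullet> coroot \<alpha> > of_int k" and s2: "\<forall>x\<in>A2. x \<bullet> coroot \<alpha> > of_int k"
  shows "A1 = A2"
proof (rule ccontr)
  assume ne: "A1 \<noteq> A2"
  have Wne: "W \<noteq> {}" using W(4) DIM_positive[where 'a='a] by (auto simp: aff_dim_empty[symmetric])
  then obtain w where w: "w \<in> W" by auto
  have wk: "w \<bullet> coroot \<alpha> = of_int k" using w W(3) by (auto simp: hyp_def)
  have gen: "False" if sep: "\<beta> \<in> \<Phi>" "\<forall>x\<in>B1. x \<bullet> coroot \<beta> < of_int m" "\<forall>x\<in>B2. x \<bullet> coroot \<beta> > of_int m"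
    and B: "B1 \<in> alcoves \<Phi>" "B2 \<in> alcoves \<Phi>" "W \<subseteq> closure B1" "W \<subseteq> closure B2"
    and sb: "\<forall>x\<in>B1. x \<bullet> coroot \<alpha> > of_int k" "\<forall>x\<in>B2. x \<bullet> coroot \<alpha> > of_int k" for \<beta> m B1 B2
  proof -
    have "closure B1 \<subseteq> {x. x \<bullet> coroot \<beta> \<le> of_int m}" using sep(2) by (intro closure_lt) auto
    moreover have "closure B2 \<subseteq> {x. x \<bullet> coroot \<beta> \<ge> of_int m}" using sep(3) by (intro closure_gt) auto
    ultimately have Wm: "W \<subseteq> {x. x \<bullet> coroot \<beta> = of_int m}" using B by fastforce
    have wm: "w \<bullet> coroot \<beta> = of_int m" using Wm w by auto
    show False
    proof (cases "\<beta> = \<alpha>")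
      case True
      then have "m = k" using wm wk by simp
      then show False using sep(2) sb(1) alc_ne[OF B(1)] True by fastforce
    next
      case False
      show False
      proof (cases "\<beta> = - \<alpha>")
        case True
        then have "m = - k" using wm wk by simp
        then have "\<forall>x\<in>B2. x \<bullet> coroot \<alpha> < of_int k" using sep(3) True by auto
        then show False using sb(2) alc_ne[OF B(2)] by fastforce
      next
        case False2: False
        have "W \<subseteq> {x. x \<bullet> coroot \<alpha> = of_int k \<and> x \<bullet> coroot \<beta> = of_int m}" using Wm W(3) by (auto simp: hyp_def)
        then have "aff_dim W \<le> int DIM('a) - 2" using aff_dim_two_roots[OF a sep(1) False False2] by blast
        then show False using W(4) by simp
      qed
    qed
  qed
  obtain \<beta> m where "\<beta> \<in> \<Phi>" "\<forall>x\<in>A1. x \<bullet> coroot \<beta> < of_int m" "\<forall>x\<in>A2. x \<bullet> coroot \<beta> > of_int m"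
    using alc_sep[OF A1 A2 ne] by blast
  then show False using gen[of \<beta> A1 m A2] A1 A2 W s1 s2 by blast
qed

end



definition sr :: "'a::euclidean_space \<Rightarrow> int \<Rightarrow> 'a \<Rightarrow> 'a" where
  "sr \<alpha> k x = refl \<alpha> x + of_int k *\<^sub>R \<alpha>"

lemma sr_sr: "\<alpha> \<noteq> 0 \<Longrightarrow> sr \<alpha> k (sr \<alpha> k x) = x"
  by (simp add: sr_def refl_add refl_scaleR refl_self)

lemma sr_alt: "sr \<alpha> k x = x - (x \<bullet> coroot \<alpha> - of_int k) *\<^sub>R \<alpha>"
  by (simp add: sr_def refl_def algebra_simps)

lemma sr_fix: "x \<in> hyp \<alpha> k \<Longrightarrow> sr \<alpha> k x = x"
  by (simp add: sr_alt hyp_def)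

definition tau :: "('a::real_vector \<Rightarrow> 'a) \<Rightarrow> 'a \<Rightarrow> 'a" where
  "tau f x = f x - f 0"

lemma f_tau: "f x = tau f x + f 0" by (simp add: tau_def)

context rsys begin

inductive goodf :: "('a \<Rightarrow> 'a) \<Rightarrow> bool" where
  goodf_id: "goodf id"
| goodf_step: "goodf f \<Longrightarrow> \<alpha> \<in> \<Phi> \<Longrightarrow> goodf (sr \<alpha> k \<circ> f)"

lemma goodf_sr: "\<alpha> \<in> \<Phi> \<Longrightarrow> goodf (sr \<alpha> k)"
  using goodf_step[OF goodf_id] by simp

lemma goodf_comp: "goodf f \<Longrightarrow> goodf g \<Longrightarrow> goodf (f \<circ> g)"
proof (induction rule: goodf.induct)
  case goodf_id then show ?case by simp
next
  case (goodf_step f \<alpha> k)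
  then have "goodf (f \<circ> g)" by blast
  then have "goodf (sr \<alpha> k \<circ> (f \<circ> g))" using goodf_step(2) by (rule goodf.goodf_step)
  then show ?case by (simp only: comp_assoc)
qed

lemma goodf_inv: "goodf f \<Longrightarrow> \<exists>g. goodf g \<and> (\<forall>x. g (f x) = x) \<and> (\<forall>x. f (g x) = x)"
proof (induction rule: goodf.induct)
  case goodf_id then show ?case by (intro exI[of _ id] conjI goodf.goodf_id) simp_all
next
  case (goodf_step f \<alpha> k)
  then obtain g where g: "goodf g" "\<forall>x. g (f x) = x" "\<forall>x. f (g x) = x" by blast
  have anz: "\<alpha> \<noteq> 0" using nz goodf_step by auto
  have "goodf (g \<circ> sr \<alpha> k)" using goodf_comp[OF g(1) goodf_sr[OF goodf_step(2)]] .
  moreover have "\<forall>x. (g \<circ> sr \<alpha> k) ((sr \<alpha> k \<circ> f) x) = x" using g anz by (simp add: sr_sr)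
  moreover have "\<forall>x. (sr \<alpha> k \<circ> f) ((g \<circ> sr \<alpha> k) x) = x" using g anz by (simp add: sr_sr)
  ultimately show ?case by blast
qed

lemma goodf_struct:
  "goodf f \<Longrightarrow> linear (tau f) \<and> (\<forall>x y. tau f x \<bullet> tau f y = x \<bullet> y) \<and> (\<forall>\<beta>\<in>\<Phi>. tau f \<beta> \<in> \<Phi>)
     \<and> (\<forall>\<beta>\<in>\<Phi>. f 0 \<bullet> coroot \<beta> \<in> \<int>)"
proof (induction rule: goodf.induct)
  case goodf_id
  have t: "tau id = (\<lambda>x. x)" by (auto simp: tau_def)
  show ?case unfolding t by (simp add: linear_ident)
next
  case (goodf_step f \<alpha> k)
  have anz: "\<alpha> \<noteq> 0" using nz goodf_step by auto
  have teq: "tau (sr \<alpha> k \<circ> f) = refl \<alpha> \<circ> tau f"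
    by (rule ext) (simp add: tau_def sr_def refl_diff)
  have lin: "linear (tau (sr \<alpha> k \<circ> f))" unfolding teq
    using goodf_step linear_refl by (intro linear_compose) auto
  have orth: "\<forall>x y. tau (sr \<alpha> k \<circ> f) x \<bullet> tau (sr \<alpha> k \<circ> f) y = x \<bullet> y"
    unfolding teq using goodf_step anz by (simp add: refl_inner)
  have ph: "\<forall>\<beta>\<in>\<Phi>. tau (sr \<alpha> k \<circ> f) \<beta> \<in> \<Phi>"
    unfolding teq using goodf_step refl_in by auto
  have "\<forall>\<beta>\<in>\<Phi>. (sr \<alpha> k \<circ> f) 0 \<bullet> coroot \<beta> \<in> \<int>"
  proof
    fix \<beta> assume b: "\<beta> \<in> \<Phi>"
    have "(sr \<alpha> k \<circ> f) 0 \<bullet> coroot \<beta> = refl \<alpha> (f 0) \<bullet> coroot \<beta> + of_int k * (\<alpha> \<bullet> coroot \<beta>)"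
      by (simp add: sr_def inner_add_left)
    also have "refl \<alpha> (f 0) \<bullet> coroot \<beta> = f 0 \<bullet> coroot (refl \<alpha> \<beta>)"
      using anz by (simp add: refl_inner_swap coroot_refl)
    finally have eq: "(sr \<alpha> k \<circ> f) 0 \<bullet> coroot \<beta> = f 0 \<bullet> coroot (refl \<alpha> \<beta>) + of_int k * (\<alpha> \<bullet> coroot \<beta>)" .
    have "f 0 \<bullet> coroot (refl \<alpha> \<beta>) \<in> \<int>" using goodf_step refl_in b by auto
    moreover have "\<alpha> \<bullet> coroot \<beta> \<in> \<int>" using integral goodf_step b by auto
    ultimately show "(sr \<alpha> k \<circ> f) 0 \<bullet> coroot \<beta> \<in> \<int>" unfolding eq by (intro Ints_add Ints_mult) auto
  qed
  then show ?case using lin orth ph by blast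
qed

context
  fixes f assumes gf: "goodf f"
begin

lemma tau_lin: "linear (tau f)" using goodf_struct[OF gf] by blast
lemma tau_orth: "tau f x \<bullet> tau f y = x \<bullet> y" using goodf_struct[OF gf] by blast
lemma tau_Phi: "\<beta> \<in> \<Phi> \<Longrightarrow> tau f \<beta> \<in> \<Phi>" using goodf_struct[OF gf] by blast
lemma f0_int: "\<beta> \<in> \<Phi> \<Longrightarrow> f 0 \<bullet> coroot \<beta> \<in> \<int>" using goodf_struct[OF gf] by blast

lemma tau_inj: "inj (tau f)"
proof (rule injI)
  fix x y assume "tau f x = tau f y"
  then have "tau f (x - y) = 0" using tau_lin by (simp add: linear_diff)
  then have "(x - y) \<bullet> (x - y) = 0" using tau_orth[of "x - y" "x - y"] by simp
  then show "x = y" by simp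
qed

lemma tau_Phi_eq: "tau f ` \<Phi> = \<Phi>"
proof -
  have sub: "tau f ` \<Phi> \<subseteq> \<Phi>" using tau_Phi by auto
  have "card (tau f ` \<Phi>) = card \<Phi>" using tau_inj by (simp add: card_image inj_on_subset)
  then show ?thesis using card_subset_eq[OF fin sub] by simp
qed

lemma coroot_tau: "coroot (tau f \<beta>) = tau f (coroot \<beta>)"
  using coroot_orth[OF tau_lin] tau_orth by blast

lemma f_inner: "f x \<bullet> coroot (tau f \<beta>) = x \<bullet> coroot \<beta> + f 0 \<bullet> coroot (tau f \<beta>)"
  by (subst f_tau[of f x]) (simp add: inner_add_left coroot_tau tau_orth)

lemma f_hyp:
  assumes "\<gamma> \<in> \<Phi>" shows "\<exists>\<beta>\<in>\<Phi>. tau f \<beta> = \<gamma> \<and> (\<exists>j::int. f 0 \<bullet> coroot \<gamma> = of_int j \<and> (\<forall>x. f x \<bullet> coroot \<gamma> = x \<bullet> coroot \<beta> + of_int j))"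
proof -
  obtain \<beta> where b: "\<beta> \<in> \<Phi>" "tau f \<beta> = \<gamma>" using assms tau_Phi_eq by (metis imageE)
  obtain j where j: "f 0 \<bullet> coroot \<gamma> = of_int j" using f0_int assms by (metis Ints_cases)
  have "\<forall>x. f x \<bullet> coroot \<gamma> = x \<bullet> coroot \<beta> + of_int j"
  proof
    fix x
    have "f x \<bullet> coroot (tau f \<beta>) = x \<bullet> coroot \<beta> + f 0 \<bullet> coroot (tau f \<beta>)" by (rule f_inner)
    then show "f x \<bullet> coroot \<gamma> = x \<bullet> coroot \<beta> + of_int j" using b j by simp
  qed
  then show ?thesis using b j by blast
qed

lemma f_UU: "f x \<in> UU \<longleftrightarrow> x \<in> UU"
proof
  assume fx: "f x \<in> UU"
  show "x \<in> UU" unfolding in_UU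
  proof (intro ballI allI notI)
    fix \<beta> k assume b: "\<beta> \<in> \<Phi>" and e: "x \<bullet> coroot \<beta> = of_int k"
    obtain j where j: "f 0 \<bullet> coroot (tau f \<beta>) = of_int j" using f0_int tau_Phi b by (metis Ints_cases)
    have "f x \<bullet> coroot (tau f \<beta>) = x \<bullet> coroot \<beta> + f 0 \<bullet> coroot (tau f \<beta>)" by (rule f_inner)
    then have "f x \<bullet> coroot (tau f \<beta>) = of_int (k + j)" using e j by simp
    moreover have "f x \<bullet> coroot (tau f \<beta>) \<noteq> of_int (k + j)" using fx tau_Phi[OF b] unfolding in_UU by blast
    ultimately show False by simp
  qed
next
  assume x: "x \<in> UU"
  show "f x \<in> UU" unfolding in_UU
  proof (intro ballI allI notI)
    fix \<gamma> k assume g: "\<gamma> \<in> \<Phi>" and e: "f x \<bullet> coroot \<gamma> = of_int k"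
    obtain \<beta> j where bj: "\<beta> \<in> \<Phi>" "\<forall>x. f x \<bullet> coroot \<gamma> = x \<bullet> coroot \<beta> + of_int j" using f_hyp[OF g] by blast
    have "x \<bullet> coroot \<beta> = of_int (k - j)" using bj e by (metis add_diff_cancel_right' of_int_diff)
    moreover have "x \<bullet> coroot \<beta> \<noteq> of_int (k - j)" using x bj(1) unfolding in_UU by blast
    ultimately show False by simp
  qed
qed

lemma f_cont: "continuous_on S f"
proof -
  have "bounded_linear (tau f)" using tau_lin linear_conv_bounded_linear by blast
  then have "continuous_on S (\<lambda>x. tau f x + f 0)" by (intro continuous_intros linear_continuous_on)
  then show ?thesis by (simp add: f_tau[symmetric])
qed

lemma f_inj: "inj f"
  by (rule injI) (metis f_tau add_right_cancel tau_inj injD)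

end

lemma goodf_inv':
  assumes "goodf f" obtains g where "goodf g" "\<And>x. g (f x) = x" "\<And>x. f (g x) = x"
  using goodf_inv[OF assms] by blast

lemma f_cc:
  assumes gf: "goodf f" and a: "a \<in> UU"
  shows "f ` connected_component_set UU a = connected_component_set UU (f a)"
proof -
  have gen: "h ` connected_component_set UU b \<subseteq> connected_component_set UU (h b)"
    if "goodf h" "b \<in> UU" for h b
  proof (rule connected_component_maximal)
    show "h b \<in> h ` connected_component_set UU b" using that by simp
    show "connected (h ` connected_component_set UU b)"
      by (rule connected_continuous_image[OF f_cont[OF that(1)]]) simp
    show "h ` connected_component_set UU b \<subseteq> UU"
      using connected_component_subset f_UU[OF that(1)] by blast
  qed
  obtain g where g: "goodf g" "\<And>x. g (f x) = x" "\<And>x. f (g x) = x" using goodf_inv'[OF gf] by blast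
  have fa: "f a \<in> UU" using f_UU[OF gf] a by simp
  have "g ` connected_component_set UU (f a) \<subseteq> connected_component_set UU a"
    using gen[OF g(1) fa] g(2) by simp
  then have "f ` (g ` connected_component_set UU (f a)) \<subseteq> f ` connected_component_set UU a" by blast
  moreover have "f ` (g ` X) = X" for X using g(3) by (force simp: image_image)
  ultimately show ?thesis using gen[OF gf a] by auto
qed

lemma f_alc: "goodf f \<Longrightarrow> A \<in> alcoves \<Phi> \<Longrightarrow> f ` A \<in> alcoves \<Phi>"
proof -
  assume gf: "goodf f" and A: "A \<in> alcoves \<Phi>"
  obtain a where a: "a \<in> A" using alc_ne A by auto
  have aU: "a \<in> UU" using a alc_sub A by auto
  have "f ` A = connected_component_set UU (f a)" using alc_cc[OF A a] f_cc[OF gf aU] by simp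
  then show ?thesis using alc_of f_UU[OF gf] aU by simp
qed

lemma f_closure:
  assumes gf: "goodf f" shows "f ` closure A = closure (f ` A)"
proof -
  have gen: "h ` closure B \<subseteq> closure (h ` B)" if "goodf h" for h B
    by (rule image_closure_subset[OF f_cont[OF that]]) (auto intro: closure_subset[THEN subsetD])
  obtain g where g: "goodf g" "\<And>x. g (f x) = x" "\<And>x. f (g x) = x" using goodf_inv'[OF gf] by blast
  have "g ` closure (f ` A) \<subseteq> closure (g ` f ` A)" by (rule gen[OF g(1)])
  also have "g ` f ` A = A" using g(2) by (force simp: image_image)
  finally have "f ` g ` closure (f ` A) \<subseteq> f ` closure A" by blast
  moreover have "f ` g ` closure (f ` A) = closure (f ` A)" using g(3) by (force simp: image_image)
  ultimately have c1: "closure (f ` A) \<subseteq> f ` closure A" by simp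
  show ?thesis using gen[OF gf, of A] c1 by (rule equalityI)
qed

lemma f_aff_dim:
  assumes gf: "goodf f" shows "aff_dim (f ` W) = aff_dim W"
proof -
  have "f ` W = (+) (f 0) ` (tau f ` W)" by (simp add: image_image tau_def)
  moreover have "aff_dim ((+) (f 0) ` (tau f ` W)) = aff_dim (tau f ` W)" by (rule aff_dim_translation_eq)
  moreover have "aff_dim (tau f ` W) = aff_dim W" by (rule aff_dim_injective_linear_image[OF tau_lin[OF gf] tau_inj[OF gf]])
  ultimately show ?thesis by simp
qed

lemma f_hyp_img:
  assumes gf: "goodf f" and b: "\<beta> \<in> \<Phi>" and j: "f 0 \<bullet> coroot (tau f \<beta>) = of_int j"
  shows "f ` hyp \<beta> k = hyp (tau f \<beta>) (k + j)"
proof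
  show "f ` hyp \<beta> k \<subseteq> hyp (tau f \<beta>) (k + j)"
  proof
    fix y assume "y \<in> f ` hyp \<beta> k"
    then obtain x where x: "x \<in> hyp \<beta> k" "y = f x" by auto
    have "f x \<bullet> coroot (tau f \<beta>) = x \<bullet> coroot \<beta> + f 0 \<bullet> coroot (tau f \<beta>)" by (rule f_inner[OF gf])
    then show "y \<in> hyp (tau f \<beta>) (k + j)" using x j by (simp add: hyp_def)
  qed
  show "hyp (tau f \<beta>) (k + j) \<subseteq> f ` hyp \<beta> k"
  proof
    fix y assume y: "y \<in> hyp (tau f \<beta>) (k + j)"
    obtain g where g: "goodf g" "\<And>x. g (f x) = x" "\<And>x. f (g x) = x" using goodf_inv'[OF gf] by blast
    have "f (g y) \<bullet> coroot (tau f \<beta>) = of_int (k + j)" using y g(3) by (simp add: hyp_def)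
    moreover have "f (g y) \<bullet> coroot (tau f \<beta>) = g y \<bullet> coroot \<beta> + f 0 \<bullet> coroot (tau f \<beta>)" by (rule f_inner[OF gf])
    ultimately have "g y \<bullet> coroot \<beta> = of_int k" using j by simp
    then have "g y \<in> hyp \<beta> k" by (simp add: hyp_def)
    moreover have "y = f (g y)" using g(3) by simp
    ultimately show "y \<in> f ` hyp \<beta> k" by blast
  qed
qed

end



lemma inner_sub_scale: "((a::'a::real_inner) - u *\<^sub>R b) \<bullet> (a - u *\<^sub>R b) = a \<bullet> a - 2 * u * (a \<bullet> b) + u * u * (b \<bullet> b)"
  by (simp add: inner_diff_left inner_diff_right inner_commute algebra_simps)

lemma unit_int_same:
  fixes t s :: real
  assumes "0 < t" "t < 1" "0 < s" "s < 1"
  shows "t < of_int k \<longleftrightarrow> s < of_int k"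
proof -
  have "t < of_int k \<longleftrightarrow> k \<ge> 1"
  proof
    assume "t < of_int k" then have "(0::real) < of_int k" using assms by simp
    then show "k \<ge> 1" by simp
  next
    assume "k \<ge> 1" then have "(1::real) \<le> of_int k" by simp
    then show "t < of_int k" using assms by simp
  qed
  moreover have "s < of_int k \<longleftrightarrow> k \<ge> 1"
  proof
    assume "s < of_int k" then have "(0::real) < of_int k" using assms by simp
    then show "k \<ge> 1" by simp
  next
    assume "k \<ge> 1" then have "(1::real) \<le> of_int k" by simp
    then show "s < of_int k" using assms by simp
  qed
  ultimately show ?thesis by simp
qed

lemma unit_not_int: "0 < (t::real) \<Longrightarrow> t < 1 \<Longrightarrow> t \<noteq> of_int k"
proof
  assume "0 < t" "t < 1" "t = of_int k"
  then have "0 < k" "k < 1" by linarith+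
  then show False by simp
qed

lemma nonint_gap:
  fixes t :: real assumes "t \<notin> \<int>"
  shows "\<bar>t - of_int m\<bar> \<ge> min (t - of_int \<lfloor>t\<rfloor>) (of_int \<lfloor>t\<rfloor> + 1 - t)"
proof (cases "m \<le> \<lfloor>t\<rfloor>")
  case True
  then have "of_int m \<le> (of_int \<lfloor>t\<rfloor> :: real)" by simp
  then have "t - of_int m \<ge> t - of_int \<lfloor>t\<rfloor>" by simp
  moreover have "t - of_int \<lfloor>t\<rfloor> \<ge> 0" by simp
  ultimately show ?thesis by simp
next
  case False
  then have "of_int m \<ge> (of_int \<lfloor>t\<rfloor> + 1 :: real)" by simp
  moreover have "t < of_int \<lfloor>t\<rfloor> + 1" by linarith
  ultimately show ?thesis by simp
qed

lemma nonint_gap_pos: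
  fixes t :: real assumes "t \<notin> \<int>"
  shows "min (t - of_int \<lfloor>t\<rfloor>) (of_int \<lfloor>t\<rfloor> + 1 - t) > 0"
proof -
  have "t \<noteq> of_int \<lfloor>t\<rfloor>" using assms by (metis Ints_of_int)
  then have "t - of_int \<lfloor>t\<rfloor> > 0" by linarith
  moreover have "of_int \<lfloor>t\<rfloor> + 1 - t > 0" by linarith
  ultimately show ?thesis by simp
qed

context rsys begin

lemma eps_exists:
  assumes "x \<in> UU" shows "\<exists>e>0. \<forall>\<beta>\<in>\<Phi>. \<forall>m::int. \<bar>x \<bullet> coroot \<beta> - of_int m\<bar> \<ge> e"
proof -
  define g where "g \<beta> = min (x \<bullet> coroot \<beta> - of_int \<lfloor>x \<bullet> coroot \<beta>\<rfloor>) (of_int \<lfloor>x \<bullet> coroot \<beta>\<rfloor> + 1 - x \<bullet> coroot \<beta>)" for \<beta>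
  have ni: "\<beta> \<in> \<Phi> \<Longrightarrow> x \<bullet> coroot \<beta> \<notin> \<int>" for \<beta> using assms by (simp add: in_UU_Ints)
  have ne: "\<Phi> \<noteq> {}" using Delta_nonempty Delta_Phi by auto
  define e where "e = Min (g ` \<Phi>)"
  have "e \<in> g ` \<Phi>" unfolding e_def using fin ne by (intro Min_in) auto
  then have epos: "e > 0" using nonint_gap_pos ni by (auto simp: g_def)
  have "\<forall>\<beta>\<in>\<Phi>. \<forall>m::int. \<bar>x \<bullet> coroot \<beta> - of_int m\<bar> \<ge> e"
  proof (intro ballI allI)
    fix \<beta> m assume b: "\<beta> \<in> \<Phi>"
    have "e \<le> g \<beta>" unfolding e_def using fin b by (intro Min_le) auto
    also have "g \<beta> \<le> \<bar>x \<bullet> coroot \<beta> - of_int m\<bar>" unfolding g_def by (rule nonint_gap[OF ni[OF b]])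
    finally show "\<bar>x \<bullet> coroot \<beta> - of_int m\<bar> \<ge> e" .
  qed
  then show ?thesis using epos by blast
qed

lemma sr_dist:
  assumes b: "\<beta> \<in> \<Phi>"
  shows "(sr \<beta> m y - p) \<bullet> (sr \<beta> m y - p) = (y - p) \<bullet> (y - p) + (y \<bullet> coroot \<beta> - of_int m) * (p \<bullet> coroot \<beta> - of_int m) * (\<beta> \<bullet> \<beta>)"
proof -
  have bb: "\<beta> \<bullet> \<beta> \<noteq> 0" using nz b by simp
  define u where "u = y \<bullet> coroot \<beta> - of_int m"
  define w where "w = p \<bullet> coroot \<beta> - of_int m"
  have yb: "(y - p) \<bullet> \<beta> = (u - w) * (\<beta> \<bullet> \<beta>) / 2"
    using bb by (simp add: u_def w_def coroot_def inner_diff_left field_simps)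
  have e: "sr \<beta> m y - p = (y - p) - u *\<^sub>R \<beta>" by (simp add: sr_alt u_def)
  have "(sr \<beta> m y - p) \<bullet> (sr \<beta> m y - p) = (y - p) \<bullet> (y - p) - 2 * u * ((y - p) \<bullet> \<beta>) + u * u * (\<beta> \<bullet> \<beta>)"
    unfolding e by (rule inner_sub_scale)
  also have "\<dots> = (y - p) \<bullet> (y - p) + u * w * (\<beta> \<bullet> \<beta>)" unfolding yb by (simp add: field_simps)
  finally show ?thesis by (simp add: u_def w_def)
qed

end

context irsys begin

definition "p0 = (1 / hh) *\<^sub>R rho P"
definition "A0 = connected_component_set UU p0"

lemma p0_inner: "p0 \<bullet> coroot \<beta> = (rho P \<bullet> coroot \<beta>) / hh"
  by (simp add: p0_def)

lemma p0_P: "\<beta> \<in> P \<Longrightarrow> 0 < p0 \<bullet> coroot \<beta> \<and> p0 \<bullet> coroot \<beta> < 1"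
  using rho_P_bounds[of \<beta>] hh_pos by (auto simp: p0_inner field_simps)

lemma p0_UU: "p0 \<in> UU"
  unfolding in_UU
proof (intro ballI allI)
  fix \<beta> k assume b: "\<beta> \<in> \<Phi>"
  show "p0 \<bullet> coroot \<beta> \<noteq> of_int k"
  proof (cases "\<beta> \<in> P")
    case True then show ?thesis using p0_P unit_not_int by blast
  next
    case False
    then have "- \<beta> \<in> P" using Phi_cases b by auto
    then have "p0 \<bullet> coroot (- \<beta>) \<noteq> of_int (- k)" using p0_P unit_not_int by blast
    then show ?thesis by simp
  qed
qed

lemma A0_char: "x \<in> A0 \<longleftrightarrow> x \<in> UU \<and> (\<forall>\<beta>\<in>P. 0 < x \<bullet> coroot \<beta> \<and> x \<bullet> coroot \<beta> < 1)"
proof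
  assume x: "x \<in> A0"
  then have xU: "x \<in> UU" and s: "same p0 x" using cc_char[OF p0_UU] by (auto simp: A0_def)
  have "\<forall>\<beta>\<in>P. 0 < x \<bullet> coroot \<beta> \<and> x \<bullet> coroot \<beta> < 1"
  proof
    fix \<beta> assume b: "\<beta> \<in> P"
    have bP: "\<beta> \<in> \<Phi>" using b P_sub by auto
    have "\<not> x \<bullet> coroot \<beta> < of_int 0" using s bP p0_P[OF b] unfolding same_def by (metis of_int_0 not_less_iff_gr_or_eq)
    moreover have "x \<bullet> coroot \<beta> \<noteq> of_int 0" using xU bP unfolding in_UU by blast
    moreover have "x \<bullet> coroot \<beta> < of_int 1" using s bP p0_P[OF b] unfolding same_def by (metis of_int_1)
    ultimately show "0 < x \<bullet> coroot \<beta> \<and> x \<bullet> coroot \<beta> < 1" by simp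
  qed
  then show "x \<in> UU \<and> (\<forall>\<beta>\<in>P. 0 < x \<bullet> coroot \<beta> \<and> x \<bullet> coroot \<beta> < 1)" using xU by simp
next
  assume a: "x \<in> UU \<and> (\<forall>\<beta>\<in>P. 0 < x \<bullet> coroot \<beta> \<and> x \<bullet> coroot \<beta> < 1)"
  have "same p0 x" unfolding same_def
  proof (intro ballI allI)
    fix \<alpha> k assume al: "\<alpha> \<in> \<Phi>"
    show "x \<bullet> coroot \<alpha> < of_int k \<longleftrightarrow> p0 \<bullet> coroot \<alpha> < of_int k"
    proof (cases "\<alpha> \<in> P")
      case True then show ?thesis using a p0_P[OF True] unit_int_same by blast
    next
      case False
      then have m: "- \<alpha> \<in> P" using Phi_cases al by auto
      have "x \<bullet> coroot (- \<alpha>) < of_int (- k) \<longleftrightarrow> p0 \<bullet> coroot (- \<alpha>) < of_int (- k)"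
        using a p0_P[OF m] m unit_int_same by blast
      moreover have "y \<bullet> coroot \<alpha> < of_int k \<longleftrightarrow> \<not> y \<bullet> coroot (- \<alpha>) < of_int (- k)"
        if "y \<bullet> coroot (- \<alpha>) > 0" "y \<bullet> coroot (- \<alpha>) < 1" for y
      proof -
        have ne: "y \<bullet> coroot (- \<alpha>) \<noteq> of_int (- k)" using unit_not_int that by blast
        define s where "s = y \<bullet> coroot (- \<alpha>)"
        have t: "y \<bullet> coroot \<alpha> = - s" by (simp add: s_def)
        have "s \<noteq> - of_int k" using ne by (simp add: s_def)
        then show ?thesis unfolding t s_def[symmetric] by auto
      qed
      moreover have "x \<bullet> coroot (- \<alpha>) > 0" "x \<bullet> coroot (- \<alpha>) < 1" using a m by auto
      moreover have "p0 \<bullet> coroot (- \<alpha>) > 0" "p0 \<bullet> coroot (- \<alpha>) < 1" using p0_P[OF m] by auto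
      ultimately show ?thesis by simp
    qed
  qed
  then show "x \<in> A0" using cc_char[OF p0_UU] a by (auto simp: A0_def)
qed

lemma A0_alc: "A0 \<in> alcoves \<Phi>" unfolding A0_def by (rule alc_of[OF p0_UU])
lemma p0_A0: "p0 \<in> A0" using p0_UU by (simp add: A0_def)

lemma Zset_iff: "z \<in> Zset \<Phi> P \<longleftrightarrow> (\<exists>l\<in>weight_lattice \<Phi>. z = (1 / hh) *\<^sub>R l) \<and> z \<in> UU"
  by (simp add: Zset_def in_UU_Ints)

lemma rho_wl: "rho P \<in> weight_lattice \<Phi>"
  unfolding weight_lattice_def
proof (intro CollectI ballI)
  fix \<alpha> assume "\<alpha> \<in> \<Phi>"
  then obtain n where "rho P \<bullet> coroot \<alpha> = of_int n" using rho_Phi_int by blast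
  then show "rho P \<bullet> coroot \<alpha> \<in> \<int>" by simp
qed

lemma p0_Z: "p0 \<in> Zset \<Phi> P"
  using Zset_iff rho_wl p0_UU p0_def by blast

lemma kostant:
  assumes z: "z \<in> A0" "z \<in> Zset \<Phi> P" shows "z = p0"
proof -
  obtain l where l: "l \<in> weight_lattice \<Phi>" "z = (1 / hh) *\<^sub>R l" using z Zset_iff by blast
  have hz: "l = hh *\<^sub>R z" using l hh_pos by simp
  obtain c where c: "thv = (\<Sum>\<gamma>\<in>Delta. real (c \<gamma>) *\<^sub>R coroot \<gamma>)" "\<forall>\<gamma>\<in>Delta. c \<gamma> \<ge> 1" using thv_full by blast
  have nint: "\<gamma> \<in> Delta \<Longrightarrow> l \<bullet> coroot \<gamma> \<in> \<int>" for \<gamma> using l Delta_Phi by (auto simp: weight_lattice_def)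
  have npos: "\<gamma> \<in> Delta \<Longrightarrow> l \<bullet> coroot \<gamma> > 0" for \<gamma>
    using z(1) A0_char Delta_sub hz hh_pos by auto
  have nge1: "\<gamma> \<in> Delta \<Longrightarrow> l \<bullet> coroot \<gamma> \<ge> 1" for \<gamma>
    using nint npos by (metis Ints_cases of_int_0_less_iff of_int_1_le_iff zero_less_iff_neq_zero int_one_le_iff_zero_less)
  have "z \<bullet> thv < 1" using z(1) A0_char theta by auto
  then have lt: "l \<bullet> thv < hh" using hz hh_pos by simp
  have "l \<bullet> thv = (\<Sum>\<gamma>\<in>Delta. real (c \<gamma>) * (l \<bullet> coroot \<gamma>))" by (simp add: c inner_sum_right)
  moreover have "hh = (\<Sum>\<gamma>\<in>Delta. real (c \<gamma>)) + 1" using hh_eq c rho_nn by simp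
  ultimately have "(\<Sum>\<gamma>\<in>Delta. real (c \<gamma>) * (l \<bullet> coroot \<gamma> - 1)) < 1"
    using lt by (simp add: algebra_simps sum_subtractf)
  have all1: "\<forall>\<gamma>\<in>Delta. l \<bullet> coroot \<gamma> = 1"
  proof (rule ccontr)
    assume "\<not> ?thesis"
    then obtain \<gamma>0 where g0: "\<gamma>0 \<in> Delta" "l \<bullet> coroot \<gamma>0 \<noteq> 1" by blast
    obtain n where n: "l \<bullet> coroot \<gamma>0 = of_int n" using nint[OF g0(1)] by (metis Ints_cases)
    then have "n \<ge> 1" "n \<noteq> 1" using nge1[OF g0(1)] g0(2) by auto
    then have "n \<ge> 2" by simp
    then have "l \<bullet> coroot \<gamma>0 \<ge> 2" using n by simp
    then have "1 * 1 \<le> real (c \<gamma>0) * (l \<bullet> coroot \<gamma>0 - 1)" using c(2) g0 by (intro mult_mono) auto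
    then have "real (c \<gamma>0) * (l \<bullet> coroot \<gamma>0 - 1) \<ge> 1" by simp
    moreover have "real (c \<gamma>0) * (l \<bullet> coroot \<gamma>0 - 1) \<le> (\<Sum>\<gamma>\<in>Delta. real (c \<gamma>) * (l \<bullet> coroot \<gamma> - 1))"
      using nge1 g0 Delta_fin by (intro member_le_sum) auto
    ultimately show False using \<open>(\<Sum>\<gamma>\<in>Delta. _) < 1\<close> by simp
  qed
  have "\<forall>\<gamma>\<in>Delta. (l - rho P) \<bullet> coroot \<gamma> = 0" using all1 rho_simple by (simp add: inner_diff_left)
  then have "l - rho P = 0" by (rule orth_Deltav_zero)
  then have "l = rho P" by simp
  then show ?thesis using l by (simp add: p0_def)
qed

lemma f_Z:
  assumes gf: "goodf f" and z: "z \<in> Zset \<Phi> P" shows "f z \<in> Zset \<Phi> P"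
proof -
  obtain l where l: "l \<in> weight_lattice \<Phi>" "z = (1 / hh) *\<^sub>R l" using z Zset_iff by blast
  define l' where "l' = tau f l + hh *\<^sub>R f 0"
  have "f z = (1 / hh) *\<^sub>R l'"
  proof -
    have "f z = tau f z + f 0" by (rule f_tau)
    also have "tau f z = (1 / hh) *\<^sub>R tau f l" using l tau_lin[OF gf] by (simp add: linear_scale)
    finally show ?thesis using hh_pos by (simp add: l'_def scaleR_add_right)
  qed
  moreover have "l' \<in> weight_lattice \<Phi>"
    unfolding weight_lattice_def
  proof (intro CollectI ballI)
    fix \<gamma> assume g: "\<gamma> \<in> \<Phi>"
    obtain \<beta> where b: "\<beta> \<in> \<Phi>" "tau f \<beta> = \<gamma>" using g tau_Phi_eq[OF gf] by (metis imageE)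
    have "tau f l \<bullet> coroot \<gamma> = l \<bullet> coroot \<beta>" using b coroot_tau[OF gf] tau_orth[OF gf] by metis
    then have "tau f l \<bullet> coroot \<gamma> \<in> \<int>" using l b by (simp add: weight_lattice_def)
    moreover have "(hh *\<^sub>R f 0) \<bullet> coroot \<gamma> \<in> \<int>" using f0_int[OF gf g] hh_int by simp
    ultimately show "l' \<bullet> coroot \<gamma> \<in> \<int>" by (simp add: l'_def inner_add_left)
  qed
  moreover have "f z \<in> UU" using f_UU[OF gf] z Zset_iff by blast
  ultimately show ?thesis using Zset_iff by blast
qed

lemma to_A0:
  assumes a: "a \<in> UU" shows "\<exists>f. goodf f \<and> f a \<in> A0"
proof -
  obtain ea where ea: "ea > 0" "\<forall>\<beta>\<in>\<Phi>. \<forall>m::int. \<bar>a \<bullet> coroot \<beta> - of_int m\<bar> \<ge> ea" using eps_exists a by blast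
  obtain ep where ep: "ep > 0" "\<forall>\<beta>\<in>\<Phi>. \<forall>m::int. \<bar>p0 \<bullet> coroot \<beta> - of_int m\<bar> \<ge> ep" using eps_exists p0_UU by blast
  have ne: "\<Phi> \<noteq> {}" using Delta_nonempty Delta_Phi by auto
  define mu0 where "mu0 = Min ((\<lambda>\<beta>. \<beta> \<bullet> \<beta>) ` \<Phi>)"
  have "mu0 \<in> (\<lambda>\<beta>. \<beta> \<bullet> \<beta>) ` \<Phi>" unfolding mu0_def using fin ne by (intro Min_in) auto
  then have mu0pos: "mu0 > 0" using nz by auto
  have mu0le: "\<beta> \<in> \<Phi> \<Longrightarrow> mu0 \<le> \<beta> \<bullet> \<beta>" for \<beta> unfolding mu0_def using fin by (intro Min_le) auto
  define d where "d = ea * ep * mu0"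
  have dpos: "d > 0" using ea ep mu0pos by (simp add: d_def)
  define D where "D f = (f a - p0) \<bullet> (f a - p0)" for f :: "'a \<Rightarrow> 'a"
  have step: "\<exists>f'. goodf f' \<and> D f' \<le> D f - d" if gf: "goodf f" and nA: "f a \<notin> A0" for f
  proof -
    have faU: "f a \<in> UU" using f_UU[OF gf] a by simp
    then have "\<not> same p0 (f a)" using nA cc_char[OF p0_UU] by (auto simp: A0_def)
    then obtain \<beta> k where bk: "\<beta> \<in> \<Phi>" "\<not> (f a \<bullet> coroot \<beta> < of_int k \<longleftrightarrow> p0 \<bullet> coroot \<beta> < of_int k)"
      unfolding same_def by blast
    define u where "u = f a \<bullet> coroot \<beta> - of_int k"
    define w where "w = p0 \<bullet> coroot \<beta> - of_int k"
    have un: "u \<noteq> 0" using faU bk(1) unfolding in_UU u_def by auto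
    have wn: "w \<noteq> 0" using p0_UU bk(1) unfolding in_UU w_def by auto
    have uw: "u * w < 0" using bk(2) un wn unfolding u_def w_def
      by (auto simp: mult_less_0_iff)
    obtain \<beta>' j where bj: "\<beta>' \<in> \<Phi>" "\<forall>x. f x \<bullet> coroot \<beta> = x \<bullet> coroot \<beta>' + of_int j" using f_hyp[OF gf bk(1)] by blast
    have ueq: "u = a \<bullet> coroot \<beta>' - of_int (k - j)" using bj by (simp add: u_def)
    have ua0: "ea \<le> \<bar>a \<bullet> coroot \<beta>' - of_int (k - j)\<bar>" using ea(2) bj(1) by blast
    have ua: "\<bar>u\<bar> \<ge> ea" using ua0 ueq by simp
    have wp: "\<bar>w\<bar> \<ge> ep" using ep bk(1) by (simp add: w_def)
    have "\<bar>u\<bar> * \<bar>w\<bar> \<ge> ea * ep" using ua wp ea ep by (intro mult_mono) auto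
    then have "- (u * w) \<ge> ea * ep" using uw by (simp add: abs_mult)
    then have "- (u * w) * (\<beta> \<bullet> \<beta>) \<ge> ea * ep * mu0"
      using mu0le[OF bk(1)] mu0pos ea ep uw by (intro mult_mono) (auto simp: mult_nonneg_nonneg)
    then have dd: "u * w * (\<beta> \<bullet> \<beta>) \<le> - d" by (simp add: d_def)
    have "D (sr \<beta> k \<circ> f) = D f + u * w * (\<beta> \<bullet> \<beta>)"
      using sr_dist[OF bk(1), of k "f a" p0] by (simp add: D_def u_def w_def)
    then have "D (sr \<beta> k \<circ> f) \<le> D f - d" using dd by simp
    moreover have "goodf (sr \<beta> k \<circ> f)" using gf bk(1) by (rule goodf.goodf_step)
    ultimately show ?thesis by blast
  qed
  have main: "\<forall>f. goodf f \<and> nat \<lfloor>D f / d\<rfloor> = n \<longrightarrow> (\<exists>g. goodf g \<and> g a \<in> A0)" for n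
  proof (induction n rule: less_induct)
    case (less n)
    show ?case
    proof (intro allI impI)
      fix f assume f: "goodf f \<and> nat \<lfloor>D f / d\<rfloor> = n"
      show "\<exists>g. goodf g \<and> g a \<in> A0"
      proof (cases "f a \<in> A0")
        case True then show ?thesis using f by blast
      next
        case False
        then obtain f' where f': "goodf f'" "D f' \<le> D f - d" using step f by blast
        have D0: "D f' \<ge> 0" by (simp add: D_def)
        have "D f' / d \<le> D f / d - 1" using f' dpos by (simp add: field_simps)
        then have fl: "\<lfloor>D f' / d\<rfloor> \<le> \<lfloor>D f / d\<rfloor> - 1" by linarith
        have "\<lfloor>D f' / d\<rfloor> \<ge> 0" using D0 dpos by simp
        then have "nat \<lfloor>D f' / d\<rfloor> < n" using fl f by linarith
        then show ?thesis using less.IH f' by blast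
      qed
    qed
  qed
  show ?thesis using main[of "nat \<lfloor>D id / d\<rfloor>"] goodf.goodf_id by auto
qed

lemma alc_to_A0:
  assumes A: "A \<in> alcoves \<Phi>" shows "\<exists>f. goodf f \<and> f ` A = A0"
proof -
  obtain a where a: "a \<in> A" using alc_ne A by auto
  have aU: "a \<in> UU" using a alc_sub A by auto
  obtain f where f: "goodf f" "f a \<in> A0" using to_A0 aU by blast
  have "f ` A = connected_component_set UU (f a)" using alc_cc[OF A a] f_cc[OF f(1) aU] by simp
  also have "\<dots> = A0" using f(2) unfolding A0_def by (rule connected_component_eq)
  finally show ?thesis using f by blast
qed

lemma zeta_unique:
  assumes A: "A \<in> alcoves \<Phi>" and z1: "z1 \<in> A" "z1 \<in> Zset \<Phi> P" and z2: "z2 \<in> A" "z2 \<in> Zset \<Phi> P"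
  shows "z1 = z2"
proof -
  obtain f where f: "goodf f" "f ` A = A0" using alc_to_A0 A by blast
  have "f z1 = p0" using kostant f_Z[OF f(1) z1(2)] f z1 by blast
  moreover have "f z2 = p0" using kostant f_Z[OF f(1) z2(2)] f z2 by blast
  ultimately show ?thesis using f_inj[OF f(1)] by (metis injD)
qed

lemma zeta_exists:
  assumes A: "A \<in> alcoves \<Phi>" shows "\<exists>z. z \<in> A \<and> z \<in> Zset \<Phi> P"
proof -
  obtain f where f: "goodf f" "f ` A = A0" using alc_to_A0 A by blast
  obtain g where g: "goodf g" "\<And>x. g (f x) = x" "\<And>x. f (g x) = x" using goodf_inv'[OF f(1)] by blast
  have "g p0 \<in> g ` A0" using p0_A0 by simp
  also have "g ` A0 = g ` f ` A" using f(2) by simp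
  also have "\<dots> = A" using g(2) by (simp add: image_image)
  finally show ?thesis using f_Z[OF g(1) p0_Z] by blast
qed

lemma zeta_eq:
  assumes A: "A \<in> alcoves \<Phi>" and z: "z \<in> A" "z \<in> Zset \<Phi> P" shows "zeta \<Phi> P A = z"
  unfolding zeta_def using zeta_unique[OF A] z by (intro the_equality) auto

lemma zeta_in:
  assumes A: "A \<in> alcoves \<Phi>" shows "zeta \<Phi> P A \<in> A" "zeta \<Phi> P A \<in> Zset \<Phi> P"
  using zeta_exists[OF A] zeta_eq[OF A] by auto

lemma zeta_f:
  assumes gf: "goodf f" and A: "A \<in> alcoves \<Phi>" shows "zeta \<Phi> P (f ` A) = f (zeta \<Phi> P A)"
  using zeta_eq[OF f_alc[OF gf A]] zeta_in[OF A] f_Z[OF gf] by blast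

end



context irsys begin

lemma closure_A0: "closure A0 \<subseteq> {x. \<forall>\<beta>\<in>P. 0 \<le> x \<bullet> coroot \<beta> \<and> x \<bullet> coroot \<beta> \<le> 1}"
proof (rule closure_minimal)
  show "A0 \<subseteq> {x. \<forall>\<beta>\<in>P. 0 \<le> x \<bullet> coroot \<beta> \<and> x \<bullet> coroot \<beta> \<le> 1}" using A0_char by fastforce
  have "{x. \<forall>\<beta>\<in>P. 0 \<le> x \<bullet> coroot \<beta> \<and> x \<bullet> coroot \<beta> \<le> 1} = (\<Inter>\<beta>\<in>P. {x. x \<bullet> coroot \<beta> \<ge> 0} \<inter> {x. x \<bullet> coroot \<beta> \<le> 1})"
    by auto
  moreover have "closed (\<Inter>\<beta>\<in>P. {x. x \<bullet> coroot \<beta> \<ge> 0} \<inter> {x. x \<bullet> coroot \<beta> \<le> 1})"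
    by (intro closed_INT ballI closed_Int closed_ge' closed_le')
  ultimately show "closed {x. \<forall>\<beta>\<in>P. 0 \<le> x \<bullet> coroot \<beta> \<and> x \<bullet> coroot \<beta> \<le> 1}" by simp
qed

lemma clA0_nonneg: "x \<in> closure A0 \<Longrightarrow> \<beta> \<in> P \<Longrightarrow> 0 \<le> x \<bullet> coroot \<beta> \<and> x \<bullet> coroot \<beta> \<le> 1"
  using closure_A0 by blast

lemma aff_dim_wall_ne: "aff_dim W = int DIM('a) - 1 \<Longrightarrow> W \<noteq> {}"
  using DIM_positive[where 'a='a] by (auto simp: aff_dim_empty[symmetric])

lemma simple_distinct_indep:
  assumes "\<delta>1 \<in> P" "\<delta>2 \<in> P" "\<delta>1 \<noteq> \<delta>2"
    "W \<subseteq> {x. x \<bullet> coroot \<delta>1 = a \<and> x \<bullet> coroot \<delta>2 = b}"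
  shows "aff_dim W \<le> int DIM('a) - 2"
proof -
  have "\<delta>2 \<noteq> - \<delta>1" using assms neg_notin_P by auto
  then show ?thesis using aff_dim_two_roots[of \<delta>1 \<delta>2 W a b] assms P_sub by auto
qed

lemma A0_wall_pos:
  assumes g: "\<gamma> \<in> P" and W: "W \<subseteq> closure A0" "W \<subseteq> hyp \<gamma> m" "aff_dim W = int DIM('a) - 1"
  shows "(\<gamma> \<in> Delta \<and> m = 0) \<or> (\<gamma> = theta \<and> m = 1)"
proof -
  obtain w where w: "w \<in> W" using aff_dim_wall_ne[OF W(3)] by auto
  have "0 \<le> w \<bullet> coroot \<gamma>" "w \<bullet> coroot \<gamma> \<le> 1" using clA0_nonneg w W g by auto
  moreover have "w \<bullet> coroot \<gamma> = of_int m" using w W by (auto simp: hyp_def)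
  ultimately have m01: "m = 0 \<or> m = 1" by auto
  have dimbad: "\<And>\<delta>1 \<delta>2 a b. \<delta>1 \<in> P \<Longrightarrow> \<delta>2 \<in> P \<Longrightarrow> \<delta>1 \<noteq> \<delta>2 \<Longrightarrow> W \<subseteq> {x. x \<bullet> coroot \<delta>1 = a \<and> x \<bullet> coroot \<delta>2 = b} \<Longrightarrow> False"
  proof -
    fix \<delta>1 \<delta>2 a b assume h: "\<delta>1 \<in> P" "\<delta>2 \<in> P" "\<delta>1 \<noteq> \<delta>2" "W \<subseteq> {x. x \<bullet> coroot \<delta>1 = a \<and> x \<bullet> coroot \<delta>2 = b}"
    have "aff_dim W \<le> int DIM('a) - 2" by (rule simple_distinct_indep[OF h])
    then show False using W(3) by simp
  qed
  show ?thesis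
  proof (cases "m = 0")
    case True
    obtain c where c: "coroot \<gamma> = (\<Sum>\<delta>\<in>Delta. real (c \<delta>) *\<^sub>R coroot \<delta>)" using coroot_P_nncomb g by blast
    have zero: "x \<bullet> coroot \<delta> = 0" if x: "x \<in> W" and d: "\<delta> \<in> Delta" "c \<delta> > 0" for x \<delta>
    proof -
      have "x \<bullet> coroot \<gamma> = 0" using x W True by (auto simp: hyp_def)
      then have s0: "(\<Sum>\<delta>\<in>Delta. real (c \<delta>) * (x \<bullet> coroot \<delta>)) = 0" by (simp add: c inner_sum_right)
      have xc: "x \<in> closure A0" using x W(1) by blast
      have nn: "\<forall>\<delta>\<in>Delta. 0 \<le> real (c \<delta>) * (x \<bullet> coroot \<delta>)"
        using clA0_nonneg[OF xc] Delta_sub by (auto intro!: mult_nonneg_nonneg)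
      have "\<forall>\<delta>\<in>Delta. real (c \<delta>) * (x \<bullet> coroot \<delta>) = 0"
        using sum_nonneg_eq_0_iff[OF Delta_fin, of "\<lambda>\<delta>. real (c \<delta>) * (x \<bullet> coroot \<delta>)"] nn s0 by simp
      then have "real (c \<delta>) * (x \<bullet> coroot \<delta>) = 0" using d by blast
      then show ?thesis using d by simp
    qed
    have "\<exists>\<delta>\<in>Delta. c \<delta> > 0"
    proof (rule ccontr)
      assume "\<not> ?thesis" then have "coroot \<gamma> = 0" using c by simp
      then show False using g P_sub nz by auto
    qed
    then obtain \<delta> where d: "\<delta> \<in> Delta" "c \<delta> > 0" by blast
    have only: "\<forall>\<delta>'\<in>Delta. \<delta>' \<noteq> \<delta> \<longrightarrow> c \<delta>' = 0"
    proof (intro ballI impI)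
      fix \<delta>' assume d': "\<delta>' \<in> Delta" "\<delta>' \<noteq> \<delta>"
      show "c \<delta>' = 0"
      proof (rule ccontr)
        assume "c \<delta>' \<noteq> 0"
        then have "W \<subseteq> {x. x \<bullet> coroot \<delta> = 0 \<and> x \<bullet> coroot \<delta>' = 0}" using zero d d' by auto
        then show False using dimbad[of \<delta> \<delta>'] d d' Delta_sub by auto
      qed
    qed
    then have cg: "coroot \<gamma> = real (c \<delta>) *\<^sub>R coroot \<delta>" using c d
      by (simp add: sum.remove[OF Delta_fin d(1)])
    moreover have "coroot \<gamma> \<in> coroot ` \<Phi>" using g P_sub by auto
    ultimately have "real (c \<delta>) = 1 \<or> real (c \<delta>) = -1"
      using rs_coroot d Delta_Phi unfolding root_system_def by (metis imageI)
    then have "coroot \<gamma> = coroot \<delta>" using cg by auto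
    then have "\<gamma> = \<delta>" using coroot_inj g P_sub d Delta_Phi by auto
    then show ?thesis using d True by simp
  next
    case False
    then have m1: "m = 1" using m01 by simp
    obtain d where d: "thv - coroot \<gamma> = (\<Sum>\<delta>\<in>Delta. real (d \<delta>) *\<^sub>R coroot \<delta>)" using thv_top[OF g] by (auto simp: lev_def)
    have zero: "x \<bullet> coroot \<delta> = 0" if x: "x \<in> W" and dd: "\<delta> \<in> Delta" "d \<delta> > 0" for x \<delta>
    proof -
      have x1: "x \<bullet> coroot \<gamma> = 1" using x W m1 by (auto simp: hyp_def)
      have "x \<bullet> thv \<le> 1" using clA0_nonneg[of x theta] x W theta by auto
      then have "x \<bullet> (thv - coroot \<gamma>) \<le> 0" using x1 by (simp add: inner_diff_right)
      then have s0: "(\<Sum>\<delta>\<in>Delta. real (d \<delta>) * (x \<bullet> coroot \<delta>)) \<le> 0" by (simp add: d inner_sum_right)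
      have xc: "x \<in> closure A0" using x W(1) by blast
      have nn: "\<forall>\<delta>\<in>Delta. 0 \<le> real (d \<delta>) * (x \<bullet> coroot \<delta>)"
        using clA0_nonneg[OF xc] Delta_sub by (auto intro!: mult_nonneg_nonneg)
      then have "(\<Sum>\<delta>\<in>Delta. real (d \<delta>) * (x \<bullet> coroot \<delta>)) = 0" using s0 by (meson antisym sum_nonneg)
      then have "\<forall>\<delta>\<in>Delta. real (d \<delta>) * (x \<bullet> coroot \<delta>) = 0"
        using sum_nonneg_eq_0_iff[OF Delta_fin, of "\<lambda>\<delta>. real (d \<delta>) * (x \<bullet> coroot \<delta>)"] nn by simp
      then have "real (d \<delta>) * (x \<bullet> coroot \<delta>) = 0" using dd by blast
      then show ?thesis using dd by simp
    qed
    have "\<forall>\<delta>\<in>Delta. d \<delta> = 0"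
    proof (rule ccontr)
      assume "\<not> ?thesis"
      then obtain \<delta> where dl: "\<delta> \<in> Delta" "d \<delta> > 0" by auto
      have "theta \<noteq> \<delta>"
      proof
        assume td: "theta = \<delta>"
        obtain c where c: "coroot \<gamma> = (\<Sum>\<delta>\<in>Delta. real (c \<delta>) *\<^sub>R coroot \<delta>)" using coroot_P_nncomb g by blast
        have "(\<Sum>\<delta>'\<in>Delta. real (c \<delta>' + d \<delta>') *\<^sub>R coroot \<delta>') = coroot \<delta>"
          using c d theta td by (simp add: scaleR_add_left sum.distrib algebra_simps)
        also have "coroot \<delta> = (\<Sum>\<delta>'\<in>Delta. real (if \<delta>' = \<delta> then 1 else 0) *\<^sub>R coroot \<delta>')"
          using sum_ind_scale[OF Delta_fin dl(1), of coroot] by simp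
        finally have eqs0: "(\<Sum>\<delta>'\<in>Delta. real (c \<delta>' + d \<delta>') *\<^sub>R coroot \<delta>') = (\<Sum>\<delta>'\<in>Delta. real (if \<delta>' = \<delta> then 1 else 0) *\<^sub>R coroot \<delta>')" .
        have eqs: "\<And>\<delta>'. \<delta>' \<in> Delta \<Longrightarrow> real (c \<delta>' + d \<delta>') = real (if \<delta>' = \<delta> then 1 else 0)"
          using Deltav_coeffs[OF eqs0] .
        have "real (c \<delta> + d \<delta>) = 1" using eqs[OF dl(1)] by simp
        then have "c \<delta> + d \<delta> = 1" by (simp only: of_nat_eq_1_iff)
        then have "c \<delta> = 0" using dl by linarith
        moreover have "\<forall>\<delta>'\<in>Delta. \<delta>' \<noteq> \<delta> \<longrightarrow> c \<delta>' = 0" using eqs by fastforce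
        ultimately have "\<forall>\<delta>'\<in>Delta. c \<delta>' = 0" by auto
        then have "coroot \<gamma> = 0" using c by simp
        then show False using g P_sub nz by auto
      qed
      have th1: "\<forall>x\<in>W. x \<bullet> coroot theta = 1"
      proof
        fix x assume x: "x \<in> W"
        have x1: "x \<bullet> coroot \<gamma> = 1" using x W m1 by (auto simp: hyp_def)
        have "x \<bullet> (thv - coroot \<gamma>) = (\<Sum>\<delta>'\<in>Delta. real (d \<delta>') * (x \<bullet> coroot \<delta>'))" by (simp add: d inner_sum_right)
        also have "\<dots> = 0"
        proof (rule sum.neutral, rule ballI)
          fix \<delta>' assume "\<delta>' \<in> Delta"
          then show "real (d \<delta>') * (x \<bullet> coroot \<delta>') = 0" using zero[OF x] by (cases "d \<delta>' > 0") auto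
        qed
        finally show "x \<bullet> coroot theta = 1" using x1 theta(2) by (simp add: inner_diff_right)
      qed
      then have "W \<subseteq> {x. x \<bullet> coroot \<delta> = 0 \<and> x \<bullet> coroot theta = 1}"
        using zero dl by auto
      then show False
      proof -
        assume Wsub: "W \<subseteq> {x. x \<bullet> coroot \<delta> = 0 \<and> x \<bullet> coroot theta = 1}"
        show False using dimbad[OF _ theta(1) _ Wsub] dl Delta_sub \<open>theta \<noteq> \<delta>\<close> by auto
      qed
    qed
    then have "thv - coroot \<gamma> = 0" using d by simp
    then have "coroot \<gamma> = coroot theta" using theta by simp
    moreover have "\<gamma> \<in> \<Phi>" "theta \<in> \<Phi>" using g theta(1) P_sub by auto
    ultimately have "\<gamma> = theta" using coroot_inj by blast
    then show ?thesis using m1 by simp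
  qed
qed

lemma A0_wall_val_pos:
  assumes g: "\<gamma> \<in> P" and W: "W \<subseteq> closure A0" "W \<subseteq> hyp \<gamma> m" "aff_dim W = int DIM('a) - 1"
  shows "\<bar>p0 \<bullet> coroot \<gamma> - of_int m\<bar> = 1 / hh"
proof -
  have "(\<gamma> \<in> Delta \<and> m = 0) \<or> (\<gamma> = theta \<and> m = 1)" by (rule A0_wall_pos[OF assms])
  then show ?thesis
  proof
    assume "\<gamma> \<in> Delta \<and> m = 0"
    then show ?thesis using rho_simple hh_pos by (simp add: p0_inner)
  next
    assume tm: "\<gamma> = theta \<and> m = 1"
    moreover have "p0 \<bullet> coroot theta = (rho P \<bullet> coroot theta) / hh" by (rule p0_inner)
    ultimately have "p0 \<bullet> coroot \<gamma> = (hh - 1) / hh" using theta thv_ht by simp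
    then have "p0 \<bullet> coroot \<gamma> - of_int m = - (1 / hh)" using tm hh_pos by (simp add: field_simps)
    then show ?thesis using hh_pos by simp
  qed
qed

lemma hyp_neg: "hyp (- \<gamma>) (- m) = hyp \<gamma> m"
  by (auto simp: hyp_def)

lemma A0_wall_val:
  assumes g: "\<gamma> \<in> \<Phi>" and W: "W \<subseteq> closure A0" "W \<subseteq> hyp \<gamma> m" "aff_dim W = int DIM('a) - 1"
  shows "\<bar>p0 \<bullet> coroot \<gamma> - of_int m\<bar> = 1 / hh"
proof (cases "\<gamma> \<in> P")
  case True then show ?thesis using A0_wall_val_pos W by blast
next
  case False
  then have "- \<gamma> \<in> P" using Phi_cases g by auto
  moreover have "W \<subseteq> hyp (- \<gamma>) (- m)" using W(2) hyp_neg[of \<gamma> m] by simp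
  ultimately have "\<bar>p0 \<bullet> coroot (- \<gamma>) - of_int (- m)\<bar> = 1 / hh" using A0_wall_val_pos W by blast
  then show ?thesis by (simp add: abs_minus_commute)
qed

lemma zeta_A0: "zeta \<Phi> P A0 = p0"
  using zeta_eq[OF A0_alc p0_A0 p0_Z] .

lemma sr_side: "\<alpha> \<noteq> 0 \<Longrightarrow> sr \<alpha> k y \<bullet> coroot \<alpha> = 2 * of_int k - y \<bullet> coroot \<alpha>"
  by (simp add: sr_alt inner_diff_left coroot_inner_self)

lemma zeta_wall:
  assumes A: "A \<in> alcoves \<Phi>" and a: "\<alpha> \<in> \<Phi>" and W: "wall_in \<Phi> A \<alpha> k W"
  shows "\<bar>zeta \<Phi> P A \<bullet> coroot \<alpha> - of_int k\<bar> = 1 / hh"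
proof -
  obtain f where f: "goodf f" "f ` A = A0" using alc_to_A0 A by blast
  have fz: "f (zeta \<Phi> P A) = p0" using zeta_f[OF f(1) A] f(2) zeta_A0 by simp
  have ta: "tau f \<alpha> \<in> \<Phi>" using tau_Phi[OF f(1) a] .
  obtain j where j: "f 0 \<bullet> coroot (tau f \<alpha>) = of_int j" using f0_int[OF f(1) ta] by (metis Ints_cases)
  have Weq: "W = closure A \<inter> hyp \<alpha> k" "aff_dim W = int DIM('a) - 1" using W by (auto simp: wall_in_def)
  have "f ` W = f ` closure A \<inter> f ` hyp \<alpha> k" using Weq(1) f_inj[OF f(1)] by (simp add: image_Int)
  also have "\<dots> = closure A0 \<inter> hyp (tau f \<alpha>) (k + j)"
    using f_closure[OF f(1)] f(2) f_hyp_img[OF f(1) a j] by simp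
  finally have fW: "f ` W = closure A0 \<inter> hyp (tau f \<alpha>) (k + j)" .
  have "aff_dim (f ` W) = int DIM('a) - 1" using f_aff_dim[OF f(1)] Weq(2) by simp
  then have "\<bar>p0 \<bullet> coroot (tau f \<alpha>) - of_int (k + j)\<bar> = 1 / hh"
    using A0_wall_val[OF ta] fW by blast
  moreover have "p0 \<bullet> coroot (tau f \<alpha>) = zeta \<Phi> P A \<bullet> coroot \<alpha> + f 0 \<bullet> coroot (tau f \<alpha>)"
    using f_inner[OF f(1), of "zeta \<Phi> P A" \<alpha>] fz by simp
  ultimately show ?thesis using j by simp
qed

lemma part1:
  assumes arr: "alcove_arrow \<Phi> A \<alpha> B"
  shows "zeta \<Phi> P B - zeta \<Phi> P A = (1 / hh) *\<^sub>R \<alpha>"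
proof -
  obtain k W where A: "A \<in> alcoves \<Phi>" and B: "B \<in> alcoves \<Phi>" and a: "\<alpha> \<in> \<Phi>"
    and WA: "wall_in \<Phi> A \<alpha> k W" and WB: "wall_in \<Phi> B \<alpha> k W"
    and sA: "\<forall>x\<in>A. x \<bullet> coroot \<alpha> < of_int k" and sB: "\<forall>x\<in>B. x \<bullet> coroot \<alpha> > of_int k"
    using arr unfolding alcove_arrow_def by blast
  have anz: "\<alpha> \<noteq> 0" using nz a by simp
  define z where "z = zeta \<Phi> P A"
  have zA: "z \<in> A" using zeta_in[OF A] by (simp add: z_def)
  have "\<bar>z \<bullet> coroot \<alpha> - of_int k\<bar> = 1 / hh" using zeta_wall[OF A a WA] by (simp add: z_def)
  moreover have "z \<bullet> coroot \<alpha> < of_int k" using sA zA by blast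
  ultimately have zk: "z \<bullet> coroot \<alpha> - of_int k = - (1 / hh)" by linarith
  define A' where "A' = sr \<alpha> k ` A"
  have gs: "goodf (sr \<alpha> k)" using goodf_sr[OF a] .
  have A': "A' \<in> alcoves \<Phi>" using f_alc[OF gs A] by (simp add: A'_def)
  have zA': "zeta \<Phi> P A' = sr \<alpha> k z" using zeta_f[OF gs A] by (simp add: A'_def z_def)
  also have "\<dots> = z + (1 / hh) *\<^sub>R \<alpha>" using zk by (simp add: sr_alt)
  finally have zA'': "zeta \<Phi> P A' = z + (1 / hh) *\<^sub>R \<alpha>" .
  have Wd: "W = closure A \<inter> hyp \<alpha> k" "aff_dim W = int DIM('a) - 1" using WA by (auto simp: wall_in_def)
  have WBd: "W = closure B \<inter> hyp \<alpha> k" using WB by (auto simp: wall_in_def)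
  have W1: "W \<subseteq> closure A'"
  proof
    fix w assume w: "w \<in> W"
    then have "w \<in> hyp \<alpha> k" using Wd(1) by blast
    then have "w = sr \<alpha> k w" using sr_fix by metis
    moreover have "w \<in> closure A" using w Wd by auto
    ultimately have "w \<in> sr \<alpha> k ` closure A" by blast
    then show "w \<in> closure A'" using f_closure[OF gs] by (simp add: A'_def)
  qed
  have s': "\<forall>x\<in>A'. x \<bullet> coroot \<alpha> > of_int k"
  proof
    fix x assume "x \<in> A'"
    then obtain y where y: "y \<in> A" "x = sr \<alpha> k y" by (auto simp: A'_def)
    then show "x \<bullet> coroot \<alpha> > of_int k" using sr_side[OF anz] sA by auto
  qed
  have W2: "W \<subseteq> closure B" using WBd by blast
  have W3: "W \<subseteq> hyp \<alpha> k" using Wd by blast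
  have "A' = B" by (rule wall_unique[OF A' B a W1 W2 W3 Wd(2) s' sB])
  then show ?thesis using zA'' by (simp add: z_def)
qed

end



context rsys begin

lemma f_add:
  assumes gf: "goodf f" shows "f (x + y) = f x + tau f y"
proof -
  have l: "tau f (x + y) = tau f x + tau f y" using tau_lin[OF gf] by (simp add: linear_add)
  have "f (x + y) = tau f (x + y) + f 0" by (rule f_tau)
  also have "\<dots> = (tau f x + f 0) + tau f y" using l by (simp add: algebra_simps)
  also have "tau f x + f 0 = f x" by (rule f_tau[symmetric])
  finally show ?thesis .
qed

lemma tau_inv:
  assumes gf: "goodf f" and gg: "goodf g" and inv: "\<And>x. g (f x) = x"
  shows "tau g (tau f x) = x"
proof -
  have "g (f x) = g (tau f x + f 0)" by (simp add: tau_def)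
  also have "\<dots> = g (f 0) + tau g (tau f x)" using f_add[OF gg, of "f 0" "tau f x"] by (simp add: add.commute)
  finally show ?thesis using inv[of x] inv[of 0] by simp
qed

lemma arrow_transport:
  assumes gg: "goodf g" and arr: "alcove_arrow \<Phi> A \<gamma> B"
  shows "alcove_arrow \<Phi> (g ` A) (tau g \<gamma>) (g ` B)"
proof -
  obtain k W where A: "A \<in> alcoves \<Phi>" and B: "B \<in> alcoves \<Phi>" and ne: "A \<noteq> B" and c: "\<gamma> \<in> \<Phi>"
    and WA: "wall_in \<Phi> A \<gamma> k W" and WB: "wall_in \<Phi> B \<gamma> k W"
    and sA: "\<forall>x\<in>A. x \<bullet> coroot \<gamma> < of_int k" and sB: "\<forall>x\<in>B. x \<bullet> coroot \<gamma> > of_int k"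
    using arr unfolding alcove_arrow_def by blast
  have tg: "tau g \<gamma> \<in> \<Phi>" using tau_Phi[OF gg c] .
  obtain j where j: "g 0 \<bullet> coroot (tau g \<gamma>) = of_int j" using f0_int[OF gg tg] by (metis Ints_cases)
  have inner: "g x \<bullet> coroot (tau g \<gamma>) = x \<bullet> coroot \<gamma> + of_int j" for x
    using f_inner[OF gg, of x \<gamma>] j by simp
  have wall: "wall_in \<Phi> (g ` C) (tau g \<gamma>) (k + j) (g ` W)" if WC: "wall_in \<Phi> C \<gamma> k W" for C
  proof -
    have Wd: "W = closure C \<inter> hyp \<gamma> k" "aff_dim W = int DIM('a) - 1" using WC by (auto simp: wall_in_def)
    have "g ` W = g ` closure C \<inter> g ` hyp \<gamma> k" using Wd(1) f_inj[OF gg] by (simp add: image_Int)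
    also have "\<dots> = closure (g ` C) \<inter> hyp (tau g \<gamma>) (k + j)"
      using f_closure[OF gg] f_hyp_img[OF gg c j] by simp
    finally have eqW: "g ` W = closure (g ` C) \<inter> hyp (tau g \<gamma>) (k + j)" .
    have ad: "aff_dim (g ` W) = int DIM('a) - 1" using f_aff_dim[OF gg, of W] Wd(2) by simp
    show ?thesis unfolding wall_in_def using tg ad eqW by blast
  qed
  have "g ` A \<noteq> g ` B" using ne f_inj[OF gg] by (simp add: inj_image_eq_iff)
  moreover have "\<forall>x\<in>g ` A. x \<bullet> coroot (tau g \<gamma>) < of_int (k + j)" using sA inner by auto
  moreover have "\<forall>x\<in>g ` B. x \<bullet> coroot (tau g \<gamma>) > of_int (k + j)" using sB inner by auto
  ultimately show ?thesis unfolding alcove_arrow_def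
    using f_alc[OF gg A] f_alc[OF gg B] tg wall[OF WA] wall[OF WB] by blast
qed

end

context irsys begin

lemma hyp_alt: "hyp \<gamma> m = {x. coroot \<gamma> \<bullet> x = of_int m}"
  by (auto simp: hyp_def inner_commute)

lemma aff_dim_hyp: "\<gamma> \<in> \<Phi> \<Longrightarrow> aff_dim (hyp \<gamma> m) = int DIM('a) - 1"
  unfolding hyp_alt using nz by simp

lemma simplex_in_A0:
  assumes pos: "\<forall>\<alpha>i\<in>Delta. y \<bullet> coroot \<alpha>i > 0" and th: "y \<bullet> thv < 1"
  shows "y \<in> A0"
proof -
  have Pb: "0 < y \<bullet> coroot \<beta> \<and> y \<bullet> coroot \<beta> < 1" if b: "\<beta> \<in> P" for \<beta>
  proof
    obtain c where c: "coroot \<beta> = (\<Sum>\<delta>\<in>Delta. real (c \<delta>) *\<^sub>R coroot \<delta>)" using coroot_P_nncomb b by blast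
    have "\<exists>\<delta>\<in>Delta. c \<delta> > 0"
    proof (rule ccontr)
      assume "\<not> ?thesis" then have "coroot \<beta> = 0" using c by simp
      then show False using b P_sub nz by auto
    qed
    then obtain \<delta> where d: "\<delta> \<in> Delta" "c \<delta> > 0" by blast
    have "y \<bullet> coroot \<beta> = (\<Sum>\<delta>\<in>Delta. real (c \<delta>) * (y \<bullet> coroot \<delta>))" by (simp add: c inner_sum_right)
    also have "\<dots> > 0"
    proof (rule sum_pos2[OF Delta_fin d(1)])
      show "0 < real (c \<delta>) * (y \<bullet> coroot \<delta>)" using pos d by simp
      fix i assume "i \<in> Delta"
      then show "0 \<le> real (c i) * (y \<bullet> coroot i)" using pos by (simp add: less_imp_le)
    qed
    finally show "0 < y \<bullet> coroot \<beta>" .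
    obtain e where e: "thv - coroot \<beta> = (\<Sum>\<delta>\<in>Delta. real (e \<delta>) *\<^sub>R coroot \<delta>)" using thv_top[OF b] by (auto simp: lev_def)
    have "y \<bullet> (thv - coroot \<beta>) = (\<Sum>\<delta>\<in>Delta. real (e \<delta>) * (y \<bullet> coroot \<delta>))" by (simp add: e inner_sum_right)
    also have "\<dots> \<ge> 0" using pos by (intro sum_nonneg) (simp add: less_imp_le)
    finally show "y \<bullet> coroot \<beta> < 1" using th by (simp add: inner_diff_right)
  qed
  have "y \<in> UU" unfolding in_UU
  proof (intro ballI allI)
    fix \<alpha> k assume a: "\<alpha> \<in> \<Phi>"
    show "y \<bullet> coroot \<alpha> \<noteq> of_int k"
    proof (cases "\<alpha> \<in> P")
      case True then show ?thesis using Pb unit_not_int by blast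
    next
      case False
      then have "- \<alpha> \<in> P" using Phi_cases a by auto
      then have "y \<bullet> coroot (- \<alpha>) \<noteq> of_int (- k)" using Pb unit_not_int by blast
      then show ?thesis by simp
    qed
  qed
  then show ?thesis using A0_char Pb by blast
qed

lemma closed_simplex_cl:
  assumes pos: "\<forall>\<alpha>i\<in>Delta. x \<bullet> coroot \<alpha>i \<ge> 0" and th: "x \<bullet> thv \<le> 1"
  shows "x \<in> closure A0"
proof (cases "x = p0")
  case True then show ?thesis using p0_A0 closure_subset by blast
next
  case False
  have "open_segment x p0 \<subseteq> A0"
  proof
    fix z assume "z \<in> open_segment x p0"
    then obtain u where u: "0 < u" "u < 1" "z = (1 - u) *\<^sub>R x + u *\<^sub>R p0" by (auto simp: in_segment)
    have "\<forall>\<alpha>i\<in>Delta. z \<bullet> coroot \<alpha>i > 0"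
    proof
      fix \<alpha>i assume ai: "\<alpha>i \<in> Delta"
      have "z \<bullet> coroot \<alpha>i = (1 - u) * (x \<bullet> coroot \<alpha>i) + u * (1 / hh)"
        using rho_simple[OF ai] by (simp add: u inner_add_left p0_inner)
      moreover have "(1 - u) * (x \<bullet> coroot \<alpha>i) \<ge> 0" using pos ai u by simp
      moreover have "u * (1 / hh) > 0" using u hh_pos by simp
      ultimately show "z \<bullet> coroot \<alpha>i > 0" by linarith
    qed
    moreover have "z \<bullet> thv < 1"
    proof -
      have p0t: "p0 \<bullet> thv = (hh - 1) / hh" using thv_ht by (simp add: p0_def)
      have "z \<bullet> thv = (1 - u) * (x \<bullet> thv) + u * ((hh - 1) / hh)" using p0t by (simp add: u inner_add_left)
      moreover have "(1 - u) * (x \<bullet> thv) \<le> 1 - u" using th u by (simp add: mult_left_le)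
      moreover have "u * ((hh - 1) / hh) < u" using u hh_pos by (simp add: field_simps)
      ultimately show ?thesis by linarith
    qed
    ultimately show "z \<in> A0" by (rule simplex_in_A0)
  qed
  then have "closure (open_segment x p0) \<subseteq> closure A0" by (rule closure_mono)
  then show ?thesis using False by auto
qed

definition "cth = (SOME c::'a\<Rightarrow>nat. thv = (\<Sum>\<gamma>\<in>Delta. real (c \<gamma>) *\<^sub>R coroot \<gamma>) \<and> (\<forall>\<gamma>\<in>Delta. c \<gamma> \<ge> 1))"

lemma cth: "thv = (\<Sum>\<gamma>\<in>Delta. real (cth \<gamma>) *\<^sub>R coroot \<gamma>)" "\<And>\<gamma>. \<gamma> \<in> Delta \<Longrightarrow> cth \<gamma> \<ge> 1"
proof -
  have "thv = (\<Sum>\<gamma>\<in>Delta. real (cth \<gamma>) *\<^sub>R coroot \<gamma>) \<and> (\<forall>\<gamma>\<in>Delta. cth \<gamma> \<ge> 1)"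
    unfolding cth_def by (fact someI_ex[OF thv_full])
  then show "thv = (\<Sum>\<gamma>\<in>Delta. real (cth \<gamma>) *\<^sub>R coroot \<gamma>)" "\<And>\<gamma>. \<gamma> \<in> Delta \<Longrightarrow> cth \<gamma> \<ge> 1" by auto
qed

definition "vx j = (1 / real (cth j)) *\<^sub>R fund_weight P j"

lemma vx_inner: "j \<in> Delta \<Longrightarrow> i \<in> Delta \<Longrightarrow> vx j \<bullet> coroot i = (if i = j then 1 / real (cth j) else 0)"
  by (simp add: vx_def fw_prop)

lemma vx_thv: "j \<in> Delta \<Longrightarrow> vx j \<bullet> thv = 1"
proof -
  assume j: "j \<in> Delta"
  have "vx j \<bullet> thv = (\<Sum>i\<in>Delta. real (cth i) * (vx j \<bullet> coroot i))" by (subst cth(1)) (simp add: inner_sum_right)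
  also have "\<dots> = (\<Sum>i\<in>Delta. if i = j then 1 else 0)"
  proof (rule sum.cong)
    fix i assume i: "i \<in> Delta"
    show "real (cth i) * (vx j \<bullet> coroot i) = (if i = j then 1 else 0)"
      using vx_inner[OF j i] cth(2)[OF j] by auto
  qed simp
  also have "\<dots> = 1" using j Delta_fin by simp
  finally show ?thesis .
qed

lemma vx_cl: "j \<in> Delta \<Longrightarrow> vx j \<in> closure A0"
  by (rule closed_simplex_cl) (auto simp: vx_inner vx_thv)

lemma zero_cl: "0 \<in> closure A0"
  by (rule closed_simplex_cl) (auto simp: vx_inner vx_thv)

lemma vx_inj: "inj_on vx Delta"
proof (rule inj_onI)
  fix i j assume ij: "i \<in> Delta" "j \<in> Delta" "vx i = vx j"
  show "i = j"
  proof (rule ccontr)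
    assume "i \<noteq> j"
    have e1: "vx i \<bullet> coroot i = 1 / real (cth i)" using vx_inner[OF ij(1) ij(1)] by simp
    have e2: "vx j \<bullet> coroot i = 0" using vx_inner[OF ij(2) ij(1)] \<open>i \<noteq> j\<close> by simp
    have "1 / real (cth i) = 0" using e1 e2 ij(3) by simp
    then show False using cth(2)[OF ij(1)] by simp
  qed
qed

lemma vx_nz: "j \<in> Delta \<Longrightarrow> vx j \<noteq> 0"
proof
  assume j: "j \<in> Delta" and z: "vx j = 0"
  have "vx j \<bullet> coroot j = 1 / real (cth j)" using vx_inner j by simp
  then have "1 / real (cth j) = 0" using z by simp
  then show False using cth(2)[OF j] by simp
qed

lemma vx_indep:
  assumes S: "S \<subseteq> Delta" shows "independent (vx ` S)"
proof
  assume "dependent (vx ` S)"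
  have finS: "finite S" using S Delta_fin finite_subset by blast
  then have finV: "finite (vx ` S)" by simp
  obtain u where u: "\<exists>w\<in>vx ` S. u w \<noteq> 0" "(\<Sum>w\<in>vx ` S. u w *\<^sub>R w) = 0"
    using \<open>dependent (vx ` S)\<close> unfolding dependent_finite[OF finV] by blast
  then obtain j0 where j0: "j0 \<in> S" "u (vx j0) \<noteq> 0" by auto
  have j0D: "j0 \<in> Delta" using j0 S by auto
  have val: "w \<bullet> coroot j0 = (if w = vx j0 then 1 / real (cth j0) else 0)" if w: "w \<in> vx ` S" for w
  proof -
    obtain j where jj: "j \<in> S" "w = vx j" using w by auto
    have jD: "j \<in> Delta" using jj S by auto
    show ?thesis
    proof (cases "j = j0")
      case True then show ?thesis using jj vx_inner[OF jD jD] by simp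
    next
      case False
      then have "vx j \<noteq> vx j0" using vx_inj jD j0D by (meson inj_on_eq_iff)
      then show ?thesis using jj vx_inner[OF jD j0D] False by simp
    qed
  qed
  have "0 = (\<Sum>w\<in>vx ` S. u w *\<^sub>R w) \<bullet> coroot j0" using u(2) by simp
  also have "\<dots> = (\<Sum>w\<in>vx ` S. u w * (if w = vx j0 then 1 / real (cth j0) else 0))"
    by (simp add: inner_sum_left) (rule sum.cong, auto simp: val)
  also have "\<dots> = u (vx j0) * (1 / real (cth j0))"
    using finV j0 by (simp add: if_distrib cong: if_cong)
  finally have "u (vx j0) * (1 / real (cth j0)) = 0" by simp
  moreover have "real (cth j0) \<noteq> 0" using cth(2)[OF j0D] by simp
  ultimately show False using j0 by simp
qed

lemma vx_aff_indep:
  assumes S: "S \<subseteq> Delta" shows "\<not> affine_dependent (insert 0 (vx ` S))"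
proof -
  have "0 \<notin> vx ` S" using vx_nz S by auto
  then show ?thesis using affine_dependent_iff_dependent[of 0 "vx ` S"] vx_indep[OF S] by simp
qed

lemma aff_dim_ge:
  assumes "B \<subseteq> W" "\<not> affine_dependent B" "card B = DIM('a)"
  shows "aff_dim W \<ge> int DIM('a) - 1"
  using aff_dim_affine_independent[OF assms(2)] aff_dim_subset[OF assms(1)] assms(3) by simp

lemma wall_simple:
  assumes ai: "\<alpha>i \<in> Delta"
  shows "aff_dim (closure A0 \<inter> hyp (- \<alpha>i) 0) = int DIM('a) - 1"
proof (rule antisym)
  have "aff_dim (closure A0 \<inter> hyp (- \<alpha>i) 0) \<le> aff_dim (hyp (- \<alpha>i) 0)" by (rule aff_dim_subset) auto
  then show "aff_dim (closure A0 \<inter> hyp (- \<alpha>i) 0) \<le> int DIM('a) - 1"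
    using aff_dim_hyp neg_in Delta_Phi ai by metis
  define B where "B = insert 0 (vx ` (Delta - {\<alpha>i}))"
  have "B \<subseteq> closure A0 \<inter> hyp (- \<alpha>i) 0"
    using zero_cl vx_cl vx_inner ai by (auto simp: B_def hyp_def)
  moreover have "\<not> affine_dependent B" unfolding B_def by (rule vx_aff_indep) auto
  moreover have "card B = DIM('a)"
  proof -
    have "0 \<notin> vx ` (Delta - {\<alpha>i})" using vx_nz by auto
    then have "card B = card (vx ` (Delta - {\<alpha>i})) + 1" using Delta_fin by (simp add: B_def)
    also have "card (vx ` (Delta - {\<alpha>i})) = card (Delta - {\<alpha>i})"
      using vx_inj by (intro card_image) (auto intro: inj_on_subset)
    also have "\<dots> = DIM('a) - 1" using ai Delta_fin Delta_card by simp
    finally show ?thesis using DIM_positive[where 'a='a] by simp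
  qed
  ultimately show "aff_dim (closure A0 \<inter> hyp (- \<alpha>i) 0) \<ge> int DIM('a) - 1" by (rule aff_dim_ge)
qed

lemma wall_theta: "aff_dim (closure A0 \<inter> hyp theta 1) = int DIM('a) - 1"
proof (rule antisym)
  have "aff_dim (closure A0 \<inter> hyp theta 1) \<le> aff_dim (hyp theta 1)" by (rule aff_dim_subset) auto
  then show "aff_dim (closure A0 \<inter> hyp theta 1) \<le> int DIM('a) - 1"
    using aff_dim_hyp theta P_sub by (metis subsetD)
  define B where "B = vx ` Delta"
  have "B \<subseteq> closure A0 \<inter> hyp theta 1"
    using vx_cl vx_thv theta by (auto simp: B_def hyp_def)
  moreover have "\<not> affine_dependent B"
    using affine_independent_subset[OF vx_aff_indep[of Delta]] by (auto simp: B_def)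
  moreover have "card B = DIM('a)" using vx_inj Delta_card by (simp add: B_def card_image)
  ultimately show "aff_dim (closure A0 \<inter> hyp theta 1) \<ge> int DIM('a) - 1" by (rule aff_dim_ge)
qed

lemma arrow_A0:
  assumes g: "\<gamma> \<in> \<Phi>" and W: "aff_dim (closure A0 \<inter> hyp \<gamma> m) = int DIM('a) - 1"
    and s: "\<forall>x\<in>A0. x \<bullet> coroot \<gamma> < of_int m"
  shows "alcove_arrow \<Phi> A0 \<gamma> (sr \<gamma> m ` A0)"
proof -
  have gnz: "\<gamma> \<noteq> 0" using nz g by simp
  have gs: "goodf (sr \<gamma> m)" using goodf_sr[OF g] .
  define A' where "A' = sr \<gamma> m ` A0"
  have A': "A' \<in> alcoves \<Phi>" using f_alc[OF gs A0_alc] by (simp add: A'_def)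
  have s': "\<forall>x\<in>A'. x \<bullet> coroot \<gamma> > of_int m"
  proof
    fix x assume "x \<in> A'"
    then obtain y where y: "y \<in> A0" "x = sr \<gamma> m y" by (auto simp: A'_def)
    then show "x \<bullet> coroot \<gamma> > of_int m" using sr_side[OF gnz] s by auto
  qed
  have ne: "A0 \<noteq> A'" using s s' p0_A0 by fastforce
  define W0 where "W0 = closure A0 \<inter> hyp \<gamma> m"
  have "closure A' \<inter> hyp \<gamma> m = W0"
  proof
    show "closure A' \<inter> hyp \<gamma> m \<subseteq> W0"
    proof
      fix x assume x: "x \<in> closure A' \<inter> hyp \<gamma> m"
      then have "x \<in> sr \<gamma> m ` closure A0" using f_closure[OF gs] by (simp add: A'_def)
      then obtain y where y: "y \<in> closure A0" "x = sr \<gamma> m y" by auto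
      have "y = sr \<gamma> m x" using y sr_sr[OF gnz] by simp
      also have "\<dots> = x" using x sr_fix by blast
      finally show "x \<in> W0" using y x by (simp add: W0_def)
    qed
    show "W0 \<subseteq> closure A' \<inter> hyp \<gamma> m"
    proof
      fix w assume w: "w \<in> W0"
      then have wh: "w \<in> hyp \<gamma> m" by (simp add: W0_def)
      then have "sr \<gamma> m w = w" by (rule sr_fix)
      then have "w \<in> sr \<gamma> m ` closure A0" using w by (metis IntD1 W0_def image_eqI)
      then show "w \<in> closure A' \<inter> hyp \<gamma> m" using f_closure[OF gs] wh by (simp add: A'_def)
    qed
  qed
  then have "wall_in \<Phi> A' \<gamma> m W0" "wall_in \<Phi> A0 \<gamma> m W0" using g W by (auto simp: wall_in_def W0_def)
  then show ?thesis unfolding alcove_arrow_def A'_def[symmetric]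
    using A0_alc A' ne g s s' by blast
qed

lemma sl_norm: "simply_laced \<Phi> \<Longrightarrow> \<alpha> \<in> \<Phi> \<Longrightarrow> \<beta> \<in> \<Phi> \<Longrightarrow> \<alpha> \<bullet> \<alpha> = \<beta> \<bullet> \<beta>"
  unfolding simply_laced_def by (metis power2_norm_eq_inner)

lemma sl_small:
  assumes sl: "simply_laced \<Phi>" and a: "\<alpha> \<in> \<Phi>" "\<beta> \<in> \<Phi>" "\<beta> \<noteq> \<alpha>" "\<beta> \<noteq> - \<alpha>"
  shows "\<beta> \<bullet> coroot \<alpha> = -1 \<or> \<beta> \<bullet> coroot \<alpha> = 0 \<or> \<beta> \<bullet> coroot \<alpha> = 1"
proof -
  obtain n where n: "\<beta> \<bullet> coroot \<alpha> = of_int n" using int_inner a by blast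
  have L: "\<alpha> \<bullet> \<alpha> = \<beta> \<bullet> \<beta>" using sl_norm sl a by blast
  have Lp: "\<alpha> \<bullet> \<alpha> > 0" using nz a by simp
  have "(\<alpha> \<bullet> \<beta>)^2 < (\<alpha> \<bullet> \<alpha>)^2" using strict_cs[OF a] L by (simp add: power2_eq_square)
  then have "\<bar>\<alpha> \<bullet> \<beta>\<bar> < \<alpha> \<bullet> \<alpha>" using Lp by (metis abs_of_pos power2_abs power_less_imp_less_base abs_ge_zero)
  then have "\<bar>\<beta> \<bullet> coroot \<alpha>\<bar> < 2" using Lp by (simp add: coroot_inner inner_commute abs_div abs_mult field_simps)
  then have "\<bar>n\<bar> < 2" using n by linarith
  then have "n = -1 \<or> n = 0 \<or> n = 1" by auto
  then show ?thesis using n by auto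
qed

lemma sl_key:
  assumes sl: "simply_laced \<Phi>" and g: "\<gamma> \<in> \<Phi>" and q: "p0 + (1 / hh) *\<^sub>R \<gamma> \<in> UU"
  shows "(\<exists>\<alpha>i\<in>Delta. \<gamma> = - \<alpha>i) \<or> \<gamma> = theta"
proof -
  have bad: "False" if ai: "\<alpha>i \<in> Delta" and v: "\<gamma> \<bullet> coroot \<alpha>i = -1" for \<alpha>i
  proof -
    have "(p0 + (1 / hh) *\<^sub>R \<gamma>) \<bullet> coroot \<alpha>i = 1 / hh + (1 / hh) * (-1)"
      using rho_simple[OF ai] v by (simp add: inner_add_left p0_inner)
    then have "(p0 + (1 / hh) *\<^sub>R \<gamma>) \<bullet> coroot \<alpha>i = of_int 0" by simp
    then show False using q ai Delta_Phi unfolding in_UU by blast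
  qed
  show ?thesis
  proof (cases "\<gamma> \<in> P")
    case True
    show ?thesis
    proof (rule disjI2, rule ccontr)
      assume nt: "\<gamma> \<noteq> theta"
      show False
      proof (cases "\<exists>\<alpha>i\<in>Delta. \<gamma> \<bullet> \<alpha>i < 0")
        case True
        then obtain \<alpha>i where ai: "\<alpha>i \<in> Delta" "\<gamma> \<bullet> \<alpha>i < 0" by blast
        have aP: "\<alpha>i \<in> \<Phi>" using ai Delta_Phi by auto
        have "\<gamma> \<noteq> - \<alpha>i" using \<open>\<gamma> \<in> P\<close> ai Delta_sub neg_notin_P by auto
        moreover have "\<gamma> \<noteq> \<alpha>i"
        proof
          assume "\<gamma> = \<alpha>i" then have "\<alpha>i \<bullet> \<alpha>i < 0" using ai(2) by simp
          then show False using inner_ge_zero[of \<alpha>i] by linarith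
        qed
        ultimately have "\<gamma> \<bullet> coroot \<alpha>i = -1 \<or> \<gamma> \<bullet> coroot \<alpha>i = 0 \<or> \<gamma> \<bullet> coroot \<alpha>i = 1"
          using sl_small[OF sl aP g] by blast
        moreover have "\<gamma> \<bullet> coroot \<alpha>i < 0" using sign_Deltav[OF ai(1), of \<gamma>] ai by simp
        ultimately show False using bad[OF ai(1)] by auto
      next
        case False
        then have dom: "\<forall>\<alpha>i\<in>Delta. \<gamma> \<bullet> \<alpha>i \<ge> 0" by auto
        obtain d where d: "thv - coroot \<gamma> = (\<Sum>\<delta>\<in>Delta. real (d \<delta>) *\<^sub>R coroot \<delta>)" using thv_top[OF True] by (auto simp: lev_def)
        have "(thv - coroot \<gamma>) \<bullet> \<gamma> = (\<Sum>\<delta>\<in>Delta. real (d \<delta>) * (coroot \<delta> \<bullet> \<gamma>))" by (simp add: d inner_sum_left)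
        also have "\<dots> \<ge> 0"
        proof (intro sum_nonneg mult_nonneg_nonneg)
          fix \<delta> assume "\<delta> \<in> Delta"
          then show "coroot \<delta> \<bullet> \<gamma> \<ge> 0" using dom sign_Deltav[of \<delta> \<gamma>] by (simp add: inner_commute)
        qed simp
        finally have "thv \<bullet> \<gamma> \<ge> coroot \<gamma> \<bullet> \<gamma>" by (simp add: inner_diff_left)
        moreover have "coroot \<gamma> \<bullet> \<gamma> = 2" using coroot_inner_self' nz g by blast
        moreover have "thv \<bullet> \<gamma> = 2 * (theta \<bullet> \<gamma>) / (theta \<bullet> theta)" using theta(2)[symmetric] by (simp add: coroot_def)
        moreover have tt: "theta \<bullet> theta > 0" using theta P_sub nz by auto
        ultimately have ge: "theta \<bullet> \<gamma> \<ge> theta \<bullet> theta" by (simp add: field_simps)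
        have tP: "theta \<in> \<Phi>" using theta P_sub by auto
        have "\<gamma> \<noteq> - theta" using True theta neg_notin_P by auto
        then have "(theta \<bullet> \<gamma>)^2 < (theta \<bullet> theta) * (\<gamma> \<bullet> \<gamma>)" using strict_cs[OF tP g] nt by auto
        moreover have "\<gamma> \<bullet> \<gamma> = theta \<bullet> theta" using sl_norm sl g tP by blast
        ultimately have "(theta \<bullet> \<gamma>)^2 < (theta \<bullet> theta)^2" by (simp add: power2_eq_square)
        moreover have "(theta \<bullet> theta)^2 \<le> (theta \<bullet> \<gamma>)^2" using ge tt by (intro power_mono) auto
        ultimately show False by simp
      qed
    qed
  next
    case False
    then have d: "- \<gamma> \<in> P" using Phi_cases g by auto
    show ?thesis
    proof (cases "- \<gamma> \<in> Delta")
      case True then show ?thesis by (intro disjI1 bexI[of _ "- \<gamma>"]) auto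
    next
      case nD: False
      obtain \<alpha>i where ai: "\<alpha>i \<in> Delta" "- \<gamma> \<bullet> \<alpha>i > 0" using exists_simple_pos d by blast
      have aP: "\<alpha>i \<in> \<Phi>" using ai Delta_Phi by auto
      have "- \<gamma> \<noteq> \<alpha>i" using nD ai by auto
      moreover have "- \<gamma> \<noteq> - \<alpha>i" using False ai Delta_sub by auto
      ultimately have "- \<gamma> \<bullet> coroot \<alpha>i = -1 \<or> - \<gamma> \<bullet> coroot \<alpha>i = 0 \<or> - \<gamma> \<bullet> coroot \<alpha>i = 1"
        using sl_small[OF sl aP neg_in[OF g]] by blast
      moreover have "- \<gamma> \<bullet> coroot \<alpha>i > 0" using sign_Deltav[OF ai(1), of "- \<gamma>"] ai by simp
      ultimately have "\<gamma> \<bullet> coroot \<alpha>i = -1" by (auto simp: inner_minus_left)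
      then show ?thesis using bad[OF ai(1)] by blast
    qed
  qed
qed

lemma part2:
  assumes sl: "simply_laced \<Phi>" and A: "A \<in> alcoves \<Phi>" and B: "B \<in> alcoves \<Phi>" and a: "\<alpha> \<in> \<Phi>"
    and eq: "zeta \<Phi> P B - zeta \<Phi> P A = (1 / hh) *\<^sub>R \<alpha>"
  shows "alcove_arrow \<Phi> A \<alpha> B"
proof -
  obtain f where f: "goodf f" "f ` A = A0" using alc_to_A0 A by blast
  obtain g where g: "goodf g" "\<And>x. g (f x) = x" "\<And>x. f (g x) = x" using goodf_inv'[OF f(1)] by blast
  define \<gamma> where "\<gamma> = tau f \<alpha>"
  have gP: "\<gamma> \<in> \<Phi>" using tau_Phi[OF f(1) a] by (simp add: \<gamma>_def)
  have fzA: "f (zeta \<Phi> P A) = p0" using zeta_f[OF f(1) A] f(2) zeta_A0 by simp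
  have "zeta \<Phi> P B = zeta \<Phi> P A + (1 / hh) *\<^sub>R \<alpha>" using eq by (simp add: algebra_simps)
  then have fzB: "f (zeta \<Phi> P B) = p0 + (1 / hh) *\<^sub>R \<gamma>"
    using f_add[OF f(1)] fzA tau_lin[OF f(1)] by (simp add: \<gamma>_def linear_scale)
  have qZ: "p0 + (1 / hh) *\<^sub>R \<gamma> \<in> Zset \<Phi> P" using f_Z[OF f(1) zeta_in(2)[OF B]] fzB by simp
  then have qU: "p0 + (1 / hh) *\<^sub>R \<gamma> \<in> UU" using Zset_iff by blast
  have qB: "p0 + (1 / hh) *\<^sub>R \<gamma> \<in> f ` B" using zeta_in(1)[OF B] fzB by (metis imageI)
  have fB: "f ` B \<in> alcoves \<Phi>" using f_alc[OF f(1) B] .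
  obtain m where m: "aff_dim (closure A0 \<inter> hyp \<gamma> m) = int DIM('a) - 1"
      "\<forall>x\<in>A0. x \<bullet> coroot \<gamma> < of_int m" "p0 \<bullet> coroot \<gamma> - of_int m = - (1 / hh)"
  proof -
    have "(\<exists>\<alpha>i\<in>Delta. \<gamma> = - \<alpha>i) \<or> \<gamma> = theta" using sl_key[OF sl gP qU] .
    then show ?thesis
    proof
      assume "\<exists>\<alpha>i\<in>Delta. \<gamma> = - \<alpha>i"
      then obtain \<alpha>i where ai: "\<alpha>i \<in> Delta" "\<gamma> = - \<alpha>i" by blast
      have "\<forall>x\<in>A0. x \<bullet> coroot \<gamma> < of_int 0" using A0_char ai Delta_sub by auto
      moreover have "p0 \<bullet> coroot \<gamma> - of_int 0 = - (1 / hh)" using ai rho_simple by (simp add: p0_inner)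
      ultimately show ?thesis using that[of 0] wall_simple[OF ai(1)] ai by blast
    next
      assume t: "\<gamma> = theta"
      have "\<forall>x\<in>A0. x \<bullet> coroot \<gamma> < of_int 1"
      proof
        fix x assume "x \<in> A0"
        then have "\<forall>\<beta>\<in>P. 0 < x \<bullet> coroot \<beta> \<and> x \<bullet> coroot \<beta> < 1" using A0_char by blast
        then show "x \<bullet> coroot \<gamma> < of_int 1" using t theta(1) by simp
      qed
      moreover have "p0 \<bullet> coroot theta = (rho P \<bullet> coroot theta) / hh" by (rule p0_inner)
      then have "p0 \<bullet> coroot \<gamma> - of_int 1 = - (1 / hh)" using t theta thv_ht hh_pos by (simp add: field_simps)
      ultimately show ?thesis using that[of 1] wall_theta t by blast
    qed
  qed
  have arr0: "alcove_arrow \<Phi> A0 \<gamma> (sr \<gamma> m ` A0)" using arrow_A0[OF gP m(1,2)] .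
  have "sr \<gamma> m p0 = p0 + (1 / hh) *\<^sub>R \<gamma>" using m(3) by (simp add: sr_alt)
  then have "p0 + (1 / hh) *\<^sub>R \<gamma> \<in> sr \<gamma> m ` A0" using p0_A0 by (metis imageI)
  moreover have "sr \<gamma> m ` A0 \<in> alcoves \<Phi>" using f_alc[OF goodf_sr[OF gP] A0_alc] .
  ultimately have fBeq: "f ` B = sr \<gamma> m ` A0" using alc_eq fB qB by blast
  have arr1: "alcove_arrow \<Phi> (g ` A0) (tau g \<gamma>) (g ` (sr \<gamma> m ` A0))" using arrow_transport[OF g(1) arr0] .
  have "g ` A0 = g ` f ` A" using f(2) by simp
  also have "\<dots> = A" using g(2) by (simp add: image_image)
  finally have gA: "g ` A0 = A" .
  have "g ` (sr \<gamma> m ` A0) = g ` f ` B" using fBeq by simp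
  also have "\<dots> = B" using g(2) by (simp add: image_image)
  finally have gB: "g ` (sr \<gamma> m ` A0) = B" .
  note gA gB
  moreover have "tau g \<gamma> = \<alpha>" using tau_inv[OF f(1) g(1) g(2)] by (simp add: \<gamma>_def)
  ultimately show ?thesis using arr1 by simp
qed

end

theorem lemma14p3:
  fixes \<Phi> P :: "'a::euclidean_space set"
  assumes "irreducible_root_system \<Phi>"
    and "positive_system \<Phi> P"
  shows "(\<forall>A B \<alpha>. alcove_arrow \<Phi> A \<alpha> B \<longrightarrow>
            zeta \<Phi> P B - zeta \<Phi> P A = (1 / coxeter_number \<Phi> P) *\<^sub>R \<alpha>)
       \<and> (simply_laced \<Phi> \<longrightarrow>
            (\<forall>A B \<alpha>. A \<in> alcoves \<Phi> \<and> B \<in> alcoves \<Phi> \<and> \<alpha> \<in> \<Phi> \<and>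
               zeta \<Phi> P B - zeta \<Phi> P A = (1 / coxeter_number \<Phi> P) *\<^sub>R \<alpha>
               \<longrightarrow> alcove_arrow \<Phi> A \<alpha> B))"
proof -
  obtain v where v: "\<forall>\<alpha>\<in>\<Phi>. \<alpha> \<bullet> v \<noteq> 0" "P = {\<alpha>\<in>\<Phi>. \<alpha> \<bullet> v > 0}"
    using assms(2) unfolding positive_system_def by blast
  have rs: "root_system \<Phi>" and irr: "\<not> (\<exists>\<Phi>1 \<Phi>2. \<Phi>1 \<noteq> {} \<and> \<Phi>2 \<noteq> {} \<and> \<Phi>1 \<union> \<Phi>2 = \<Phi> \<and> (\<forall>\<alpha>\<in>\<Phi>1. \<forall>\<beta>\<in>\<Phi>2. \<alpha> \<bullet> \<beta> = 0))"
    using assms(1) unfolding irreducible_root_system_def by blast+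
  interpret irsys \<Phi> P v
    by (unfold_locales) (use rs v irr in auto)
  show ?thesis
  proof (intro conjI allI impI)
    fix A B \<alpha> assume "alcove_arrow \<Phi> A \<alpha> B"
    then show "zeta \<Phi> P B - zeta \<Phi> P A = (1 / coxeter_number \<Phi> P) *\<^sub>R \<alpha>" by (rule part1)
  next
    fix A B \<alpha>
    assume sl: "simply_laced \<Phi>"
      and h: "A \<in> alcoves \<Phi> \<and> B \<in> alcoves \<Phi> \<and> \<alpha> \<in> \<Phi> \<and>
               zeta \<Phi> P B - zeta \<Phi> P A = (1 / coxeter_number \<Phi> P) *\<^sub>R \<alpha>"
    then show "alcove_arrow \<Phi> A \<alpha> B" using part2[OF sl] by blast
  qed
qed

end
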